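(* Let $\Gamma$ be a tropical curve, $\Gamma_\infty$ its set of points at infinity, and $f_1,\ldots,f_n\in\operatorname{Rat}(\Gamma)\setminus\{-\infty\}$. Let $\psi:\overline{\boldsymbol{T}(X_1,\ldots,X_n)}\to\operatorname{Rat}(\Gamma)$ be the $\boldsymbol{T}$-algebra homomorphism induced by $X_i\mapsto f_i$, let $\theta:\Gamma\setminus\Gamma_\infty\to\mathbb{R}^n$, $x\mapsto(f_1(x),\ldots,f_n(x))$, and let $V:=\boldsymbol{V}(\operatorname{Ker}(\psi))$. Then: (1) for every $f\in\overline{\boldsymbol{T}(X_1,\ldots,X_n)}$ and $x\in\Gamma\setminus\Gamma_\infty$, $\psi(f)(x)=f(\theta(x))$; (2) $\operatorname{Im}(\theta)\subset V$; (3) $\theta$ is continuous; (4) $\operatorname{Ker}(\psi)=\boldsymbol{E}(V)$; (5) if $\psi$ is surjective, i.e. $\operatorname{Rat}(\Gamma)=\boldsymbol{T}(f_1,\ldots,f_n)$, then $\operatorname{Im}(\theta)\supset V$ and $\theta$ is an injective local isometry for the lattice length.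
   Context: $\boldsymbol{T}=\mathbb{R}\cup\{-\infty\}$ with $a\oplus b=\max\{a,b\}$, $a\odot b=a+b$. Semirings are commutative with $0,1$; a semifield is a semiring with $0\ne1$ whose nonzero elements are invertible. A $\boldsymbol{T}$-algebra is a semiring with a semiring homomorphism from $\boldsymbol{T}$; $\boldsymbol{T}$-algebra homomorphisms are compatible semiring homomorphisms. $\overline{\boldsymbol{T}[X_1,\ldots,X_n]}$ is the tropical polynomial semiring modulo identifying polynomials defining the same function $\boldsymbol{T}^n\to\boldsymbol{T}$; it is cancellative and $\overline{\boldsymbol{T}(X_1,\ldots,X_n)}$ is its semifield of fractions ($X_i$ denoting the image of the variable). Each element defines a function $\mathbb{R}^n\to\boldsymbol{T}$ (quotients evaluated as differences); non-$(-\infty)$ elements are real valued on $\mathbb{R}^n$. A congruence on a semiring $S$ is an equivalence relation on $S$ compatible with addition and multiplication; $\operatorname{Ker}(\psi)=\{(f,g)\mid\psi(f)=\psi(g)\}$. For a congruence $E$ on $\overline{\boldsymbol{T}(X_1,\ldots,X_n)}$, $\boldsymbol{V}(E)=\{x\in\mathbb{R}^n\mid f(x)=g(x)\ \forall(f,g)\in E\}$; for $V\subset\mathbb{R}^n$, $\boldsymbol{E}(V)=\{(f,g)\mid f(x)=g(x)\ \forall x\in V\}$. A tropical curve is the metric space obtained from a finite connected multigraph $G$ with edge lengths $l:E(G)\to\mathbb{R}_{>0}\cup\{\infty\}$ ($\infty$ allowed only on leaf edges) by identifying each edge $e$ with $[0,l(e)]$; for $l(e)=\infty$ the leaf end is identified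 with $\infty\in[0,\infty]$ and is a point at infinity (at infinite distance from everything). A rational function on $\Gamma$ is either the constant $-\infty$ or a continuous piecewise affine function $\Gamma\to\mathbb{R}\cup\{\pm\infty\}$ with integer slopes and finitely many pieces, taking values $\pm\infty$ only at points at infinity. $\operatorname{Rat}(\Gamma)$ is the set of rational functions with pointwise $\max$ and $+$ (extended continuously to points at infinity); it is a semifield and a $\boldsymbol{T}$-algebra via constants. $\operatorname{Rat}(\Gamma)=\boldsymbol{T}(f_1,\ldots,f_n)$ means $f_1,\ldots,f_n$ generate $\operatorname{Rat}(\Gamma)$ as a semifield over $\boldsymbol{T}$. The homomorphism $\psi$ is the one with $\psi(X_i)=f_i$ and $\psi(t)=t$ for $t\in\boldsymbol{T}$. A vector in $\mathbb{R}^n$ is primitive if its entries are integers with gcd one; for primitive $v$ and $\lambda\ge0$, the lattice length of $\lambda v$ is $\lambda$; $\operatorname{Im}(\theta)$ (a union of segments with integer direction vectors) is given the metric induced by lattice length. *)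

theory Defs
  imports "HOL-Analysis.Analysis" "HOL-Library.Extended_Real"
begin

text \<open>A tropical curve is given by a finite connected multigraph (vertex set, edge set,
  endpoint maps) with edge lengths in (0, infinity]. Convention: an edge of infinite length
  is a leaf edge whose target vertex has degree one and is not equal to its source;
  that target vertex is the point at infinity of the edge.\<close>

record ('v, 'e) tcurve =
  verts :: "'v set"
  edges :: "'e set"
  src   :: "'e \<Rightarrow> 'v"
  tgt   :: "'e \<Rightarrow> 'v"
  len   :: "'e \<Rightarrow> ereal"

definition degree :: "('v, 'e) tcurve \<Rightarrow> 'v \<Rightarrow> nat" where
  "degree G v = card {e \<in> edges G. src G e = v} + card {e \<in> edges G. tgt G e = v}"

definition adj :: "('v, 'e) tcurve \<Rightarrow> ('v \<times> 'v) set" where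
  "adj G = {(src G e, tgt G e) | e. e \<in> edges G} \<union> {(tgt G e, src G e) | e. e \<in> edges G}"

definition tropical_curve :: "('v, 'e) tcurve \<Rightarrow> bool" where
  "tropical_curve G \<longleftrightarrow>
     finite (verts G) \<and> finite (edges G) \<and> verts G \<noteq> {} \<and>
     (\<forall>e \<in> edges G. src G e \<in> verts G \<and> tgt G e \<in> verts G \<and> len G e > 0) \<and>
     (\<forall>e \<in> edges G. len G e = \<infinity> \<longrightarrow> src G e \<noteq> tgt G e \<and> degree G (tgt G e) = 1) \<and>
     (\<forall>u \<in> verts G. \<forall>v \<in> verts G. (u, v) \<in> (adj G)\<^sup>*)"

text \<open>Points of the curve: vertices, and interior points of edges (parameter t with
  0 < t < length, measured from the source).\<close>

datatype ('v, 'e) tpt = Vtx 'v | Ein 'e real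

definition pt :: "('v, 'e) tcurve \<Rightarrow> 'e \<Rightarrow> real \<Rightarrow> ('v, 'e) tpt" where
  "pt G e t = (if t = 0 then Vtx (src G e) else if ereal t = len G e then Vtx (tgt G e) else Ein e t)"

definition inf_verts :: "('v, 'e) tcurve \<Rightarrow> 'v set" where
  "inf_verts G = {tgt G e | e. e \<in> edges G \<and> len G e = \<infinity>}"

definition pts_inf :: "('v, 'e) tcurve \<Rightarrow> ('v, 'e) tpt set" where
  "pts_inf G = Vtx ` inf_verts G"

definition pts_fin :: "('v, 'e) tcurve \<Rightarrow> ('v, 'e) tpt set" where
  "pts_fin G = Vtx ` (verts G - inf_verts G) \<union>
               {Ein e t | e t. e \<in> edges G \<and> 0 < t \<and> ereal t < len G e}"

fun gchain :: "('v, 'e) tcurve \<Rightarrow> ('v, 'e) tpt \<Rightarrow> ('e \<times> real \<times> real) list \<Rightarrow> ('v, 'e) tpt \<Rightarrow> bool" where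
  "gchain G x [] y = (x = y)"
| "gchain G x ((e, s, s') # cs) y =
     (e \<in> edges G \<and> 0 \<le> s \<and> 0 \<le> s' \<and> ereal s \<le> len G e \<and> ereal s' \<le> len G e \<and>
      pt G e s = x \<and> gchain G (pt G e s') cs y)"

definition gdist :: "('v, 'e) tcurve \<Rightarrow> ('v, 'e) tpt \<Rightarrow> ('v, 'e) tpt \<Rightarrow> real" where
  "gdist G x y = Inf {sum_list (map (\<lambda>(e, s, s'). \<bar>s - s'\<bar>) cs) | cs. gchain G x cs y}"

definition pw_affine_int :: "(real \<Rightarrow> real) \<Rightarrow> ereal \<Rightarrow> bool" where
  "pw_affine_int h L \<longleftrightarrow>
     (\<exists>(k::nat) (a::nat \<Rightarrow> real) (m::nat \<Rightarrow> int) (c::nat \<Rightarrow> real).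
        a 0 = 0 \<and> (\<forall>i<k. a i < a (Suc i)) \<and>
        (L \<noteq> \<infinity> \<longrightarrow> ereal (a k) = L) \<and>
        (L = \<infinity> \<longrightarrow> (\<forall>t \<ge> a k. h t = c k + of_int (m k) * t)) \<and>
        (\<forall>i<k. \<forall>t \<in> {a i .. a (Suc i)}. h t = c i + of_int (m i) * t))"

text \<open>Non-(-infinity) rational functions, represented by their (real) values on the finite
  part of the curve (the values at points at infinity are the continuous extensions).\<close>

definition rat_real_fun :: "('v, 'e) tcurve \<Rightarrow> (('v, 'e) tpt \<Rightarrow> real) \<Rightarrow> bool" where
  "rat_real_fun G g \<longleftrightarrow> (\<forall>e \<in> edges G. pw_affine_int (\<lambda>t. g (pt G e t)) (len G e))"

definition RatG :: "('v, 'e) tcurve \<Rightarrow> (('v, 'e) tpt \<Rightarrow> ereal) set" where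
  "RatG G = {h. (\<forall>x \<in> pts_fin G. h x = -\<infinity>) \<or>
                (\<exists>g. rat_real_fun G g \<and> (\<forall>x \<in> pts_fin G. h x = ereal (g x)))}"

text \<open>Tropical polynomials with real coefficients and exponents in N^n, as functions on R^n
  (the empty polynomial is -infinity).\<close>

definition TPoly :: "(real^'n \<Rightarrow> ereal) set" where
  "TPoly = {(\<lambda>x. Sup ((\<lambda>(a, c). ereal (c + (\<Sum>i\<in>UNIV. real (a i) * x $ i))) ` S)) | S :: (('n \<Rightarrow> nat) \<times> real) set. finite S}"

text \<open>The semifield of fractions, realized as functions R^n to T.\<close>

definition TRat :: "(real^'n::finite \<Rightarrow> ereal) set" where
  "TRat = {(\<lambda>x. p x - q x) | p q. p \<in> TPoly \<and> q \<in> TPoly \<and> q \<noteq> (\<lambda>_. -\<infinity>)}"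

definition Vcong :: "((real^'n::finite \<Rightarrow> ereal) \<times> (real^'n \<Rightarrow> ereal)) set \<Rightarrow> (real^'n) set" where
  "Vcong E = {x. \<forall>(f, g) \<in> E. f x = g x}"

definition Econg :: "(real^'n::finite) set \<Rightarrow> ((real^'n \<Rightarrow> ereal) \<times> (real^'n \<Rightarrow> ereal)) set" where
  "Econg V = {(f, g). f \<in> TRat \<and> g \<in> TRat \<and> (\<forall>x \<in> V. f x = g x)}"

definition induced_hom ::
  "('v, 'e) tcurve \<Rightarrow> ('n::finite \<Rightarrow> ('v, 'e) tpt \<Rightarrow> real) \<Rightarrow>
   ((real^'n \<Rightarrow> ereal) \<Rightarrow> ('v, 'e) tpt \<Rightarrow> ereal) \<Rightarrow> bool" where
  "induced_hom G fs psi \<longleftrightarrow>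
     (\<forall>f \<in> TRat. psi f \<in> RatG G) \<and>
     (\<forall>f \<in> TRat. \<forall>g \<in> TRat. \<forall>x \<in> pts_fin G. psi (\<lambda>y. max (f y) (g y)) x = max (psi f x) (psi g x)) \<and>
     (\<forall>f \<in> TRat. \<forall>g \<in> TRat. \<forall>x \<in> pts_fin G. psi (\<lambda>y. f y + g y) x = psi f x + psi g x) \<and>
     (\<forall>t::ereal. t \<noteq> \<infinity> \<longrightarrow> (\<forall>x \<in> pts_fin G. psi (\<lambda>_. t) x = t)) \<and>
     (\<forall>i. \<forall>x \<in> pts_fin G. psi (\<lambda>y. ereal (y $ i)) x = ereal (fs i x))"

definition kerpsi ::
  "('v, 'e) tcurve \<Rightarrow> ((real^'n::finite \<Rightarrow> ereal) \<Rightarrow> ('v, 'e) tpt \<Rightarrow> ereal) \<Rightarrow>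
   ((real^'n \<Rightarrow> ereal) \<times> (real^'n \<Rightarrow> ereal)) set" where
  "kerpsi G psi = {(f, g). f \<in> TRat \<and> g \<in> TRat \<and> (\<forall>x \<in> pts_fin G. psi f x = psi g x)}"

definition hom_surj ::
  "('v, 'e) tcurve \<Rightarrow> ((real^'n::finite \<Rightarrow> ereal) \<Rightarrow> ('v, 'e) tpt \<Rightarrow> ereal) \<Rightarrow> bool" where
  "hom_surj G psi \<longleftrightarrow> (\<forall>h \<in> RatG G. \<exists>f \<in> TRat. \<forall>x \<in> pts_fin G. psi f x = h x)"

definition primitive :: "real^'n::finite \<Rightarrow> bool" where
  "primitive v \<longleftrightarrow> (\<exists>z :: 'n \<Rightarrow> int. v = (\<chi> i. real_of_int (z i)) \<and> Gcd (range z) = 1)"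

text \<open>lat_dir w lam: w = lam * v with v primitive and lam \<ge> 0, i.e. w has lattice length lam.\<close>

definition lat_dir :: "real^'n::finite \<Rightarrow> real \<Rightarrow> bool" where
  "lat_dir w lam \<longleftrightarrow> lam \<ge> 0 \<and> (\<exists>v. primitive v \<and> w = lam *\<^sub>R v)"

fun ichain :: "(real^'n::finite) set \<Rightarrow> real^'n \<Rightarrow> ((real^'n) \<times> real) list \<Rightarrow> real^'n \<Rightarrow> bool" where
  "ichain S p [] q = (p = q)"
| "ichain S p ((r, lam) # cs) q = (closed_segment p r \<subseteq> S \<and> lat_dir (r - p) lam \<and> ichain S r cs q)"

definition latdist :: "(real^'n::finite) set \<Rightarrow> real^'n \<Rightarrow> real^'n \<Rightarrow> real" where
  "latdist S p q = Inf {sum_list (map snd cs) | cs. ichain S p cs q}"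

end

theory Submission
  imports Defs
begin


definition tp :: "(('n::finite \<Rightarrow> nat) \<times> real) set \<Rightarrow> real^'n \<Rightarrow> ereal" where
  "tp S = (\<lambda>x. Sup ((\<lambda>(a, c). ereal (c + (\<Sum>i\<in>UNIV. real (a i) * x $ i))) ` S))"

lemma TPoly_tp: "TPoly = {tp S | S. finite S}"
  unfolding TPoly_def tp_def by blast

lemma tp_in_TPoly: "finite S \<Longrightarrow> tp S \<in> TPoly"
  unfolding TPoly_tp by blast

lemma tp_empty: "tp {} = (\<lambda>_. -\<infinity>)"
  unfolding tp_def by (simp add: bot_ereal_def)

lemma tp_insert: "tp (insert s S) x = max (ereal (snd s + (\<Sum>i\<in>UNIV. real (fst s i) * x $ i))) (tp S x)"
  unfolding tp_def by (cases s) (simp add: sup_max)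

lemma tp_single: "tp {(a,c)} x = ereal (c + (\<Sum>i\<in>UNIV. real (a i) * x $ i))"
  using tp_insert[of "(a,c)" "{}" x] by (simp add: tp_empty)

lemma tp_finite_val:
  assumes "finite S" "S \<noteq> {}"
  shows "\<exists>r. tp S x = ereal r"
  using assms
proof (induction S rule: finite_ne_induct)
  case (singleton s) then show ?case by (cases s) (simp add: tp_single)
next
  case (insert s S)
  then obtain r where "tp S x = ereal r" by blast
  then show ?case by (simp add: tp_insert max_def)
qed

lemma tp_ge:
  assumes "finite S" "(a,c) \<in> S"
  shows "ereal (c + (\<Sum>i\<in>UNIV. real (a i) * x $ i)) \<le> tp S x"
  unfolding tp_def using assms by (auto intro!: Sup_upper)

lemma tp_le:
  assumes "\<And>a c. (a,c) \<in> S \<Longrightarrow> ereal (c + (\<Sum>i\<in>UNIV. real (a i) * x $ i)) \<le> b"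
  shows "tp S x \<le> b"
  unfolding tp_def using assms by (auto intro!: Sup_least)

lemma tp_attained:
  assumes "finite S" "S \<noteq> {}"
  shows "\<exists>(a,c)\<in>S. tp S x = ereal (c + (\<Sum>i\<in>UNIV. real (a i) * x $ i))"
  using assms
proof (induction S rule: finite_ne_induct)
  case (singleton s) then show ?case by (cases s) (simp add: tp_single)
next
  case (insert s S)
  then obtain a c where ac: "(a,c) \<in> S" "tp S x = ereal (c + (\<Sum>i\<in>UNIV. real (a i) * x $ i))" by blast
  show ?case
  proof (cases "ereal (snd s + (\<Sum>i\<in>UNIV. real (fst s i) * x $ i)) \<ge> tp S x")
    case True then show ?thesis by (cases s) (auto simp: tp_insert max_def)
  next
    case False then show ?thesis using ac by (auto simp: tp_insert max_def)
  qed
qed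

lemma tp_nonneginf:
  assumes "tp S \<noteq> (\<lambda>_. -\<infinity>)" "finite S"
  shows "\<exists>r. tp S x = ereal r"
proof -
  have "S \<noteq> {}" using assms tp_empty by metis
  then show ?thesis using tp_finite_val assms by blast
qed

lemma TPoly_finite_val:
  assumes "q \<in> TPoly" "q \<noteq> (\<lambda>_. -\<infinity>)"
  shows "\<exists>r. q x = ereal r"
  using assms tp_nonneginf unfolding TPoly_tp by blast

lemma zero_tp: "tp {(\<lambda>_. 0, 0)} = (\<lambda>_. ereal 0)"
  by (rule ext) (simp add: tp_single)

lemma TPoly_TRat: assumes "p \<in> TPoly" shows "p \<in> TRat"
proof -
  have "p = (\<lambda>x. p x - tp {(\<lambda>_. 0, 0)} x)" by (simp add: zero_tp)
  moreover have "tp {(\<lambda>_. 0, 0)} \<in> TPoly" by (rule tp_in_TPoly) simp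
  moreover have "tp {(\<lambda>_. 0::nat, 0::real)} \<noteq> (\<lambda>_. -\<infinity>)" by (simp add: zero_tp fun_eq_iff)
  ultimately show ?thesis unfolding TRat_def using assms by blast
qed

lemma mono_TRat: "(\<lambda>x. ereal (c + (\<Sum>i\<in>UNIV. real (a i) * x $ i))) \<in> TRat"
proof -
  have "(\<lambda>x. ereal (c + (\<Sum>i\<in>UNIV. real (a i) * x $ i))) = tp {(a,c)}"
    by (rule ext) (simp add: tp_single)
  then show ?thesis using TPoly_TRat[OF tp_in_TPoly[of "{(a,c)}"]] by simp
qed

lemma tp_TRat: "finite S \<Longrightarrow> tp S \<in> TRat"
  using TPoly_TRat tp_in_TPoly by blast

locale setting =
  fixes G :: "('v, 'e) tcurve"
    and fs :: "'n::finite \<Rightarrow> ('v, 'e) tpt \<Rightarrow> real"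
    and psi :: "(real^'n \<Rightarrow> ereal) \<Rightarrow> ('v, 'e) tpt \<Rightarrow> ereal"
    and theta :: "('v, 'e) tpt \<Rightarrow> real^'n"
  assumes curve: "tropical_curve G"
    and rat: "\<forall>i. rat_real_fun G (fs i)"
    and hom: "induced_hom G fs psi"
    and theta_def: "theta = (\<lambda>x. \<chi> i. fs i x)"
begin

lemma theta_nth[simp]: "theta x $ i = fs i x"
  by (simp add: theta_def)

lemma psi_max: "f \<in> TRat \<Longrightarrow> g \<in> TRat \<Longrightarrow> x \<in> pts_fin G \<Longrightarrow>
    psi (\<lambda>y. max (f y) (g y)) x = max (psi f x) (psi g x)"
  using hom unfolding induced_hom_def by blast

lemma psi_plus: "f \<in> TRat \<Longrightarrow> g \<in> TRat \<Longrightarrow> x \<in> pts_fin G \<Longrightarrow>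
    psi (\<lambda>y. f y + g y) x = psi f x + psi g x"
  using hom unfolding induced_hom_def by blast

lemma psi_const: "t \<noteq> \<infinity> \<Longrightarrow> x \<in> pts_fin G \<Longrightarrow> psi (\<lambda>_. t) x = t"
  using hom unfolding induced_hom_def by blast

lemma psi_var: "x \<in> pts_fin G \<Longrightarrow> psi (\<lambda>y. ereal (y $ i)) x = ereal (fs i x)"
  using hom unfolding induced_hom_def by blast

lemma psi_RatG: "f \<in> TRat \<Longrightarrow> psi f \<in> RatG G"
  using hom unfolding induced_hom_def by blast

lemma psi_mono:
  assumes x: "x \<in> pts_fin G"
  shows "psi (\<lambda>y. ereal (c + (\<Sum>i\<in>UNIV. real (a i) * y $ i))) x
         = ereal (c + (\<Sum>i\<in>UNIV. real (a i) * theta x $ i))"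
proof (induction "sum a UNIV" arbitrary: a)
  case 0
  then have "\<forall>i. a i = 0" by simp
  then show ?case using psi_const[OF _ x, of "ereal c"] by simp
next
  case (Suc n)
  then have "sum a UNIV \<noteq> 0" by (metis nat.distinct(1))
  then obtain j where "a j \<noteq> 0" by (metis sum.neutral)
  then have j: "a j > 0" by simp
  define a' where "a' = a(j := a j - 1)"
  have "sum a' UNIV = n"
  proof -
    have "sum a UNIV = a j + sum a (UNIV - {j})" by (simp add: sum.remove)
    moreover have "sum a' UNIV = a' j + sum a' (UNIV - {j})" by (simp add: sum.remove)
    moreover have "sum a' (UNIV - {j}) = sum a (UNIV - {j})" unfolding a'_def by (rule sum.cong) auto
    ultimately show ?thesis using Suc(2) j unfolding a'_def by simp
  qed
  note IH = Suc(1)[OF this[symmetric]]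
  have split: "\<And>y::real^'n. (\<Sum>i\<in>UNIV. real (a i) * y $ i) = (\<Sum>i\<in>UNIV. real (a' i) * y $ i) + y $ j"
  proof -
    fix y :: "real^'n"
    have "(\<Sum>i\<in>UNIV. real (a i) * y $ i) = real (a j) * y $ j + (\<Sum>i\<in>UNIV-{j}. real (a i) * y $ i)"
      by (simp add: sum.remove)
    moreover have "(\<Sum>i\<in>UNIV. real (a' i) * y $ i) = real (a' j) * y $ j + (\<Sum>i\<in>UNIV-{j}. real (a' i) * y $ i)"
      by (simp add: sum.remove)
    moreover have "(\<Sum>i\<in>UNIV-{j}. real (a' i) * y $ i) = (\<Sum>i\<in>UNIV-{j}. real (a i) * y $ i)"
      unfolding a'_def by (rule sum.cong) auto
    moreover have "real (a j) = real (a' j) + 1" unfolding a'_def using j by simp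
    ultimately show "?thesis y" by (simp add: algebra_simps)
  qed
  have fe: "(\<lambda>y::real^'n. ereal (c + (\<Sum>i\<in>UNIV. real (a i) * y $ i)))
      = (\<lambda>y. ereal (c + (\<Sum>i\<in>UNIV. real (a' i) * y $ i)) + ereal (y $ j))"
    by (rule ext) (simp add: split)
  have var: "(\<lambda>y::real^'n. ereal (y $ j)) \<in> TRat"
  proof -
    have "(\<lambda>y::real^'n. ereal (y $ j)) = (\<lambda>y. ereal (0 + (\<Sum>i\<in>UNIV. real ((\<lambda>i. if i = j then 1 else 0) i) * y $ i)))"
    proof (rule ext)
      fix y :: "real^'n"
      have "(\<Sum>i\<in>UNIV. real ((\<lambda>i. if i = j then 1 else 0) i) * y $ i) = (\<Sum>i\<in>UNIV. if i = j then y $ i else 0)"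
        by (rule sum.cong) auto
      then show "ereal (y $ j) = ereal (0 + (\<Sum>i\<in>UNIV. real ((\<lambda>i. if i = j then 1 else 0) i) * y $ i))"
        by simp
    qed
    then show ?thesis by (rule ssubst) (rule mono_TRat)
  qed
  show ?case
    unfolding fe psi_plus[OF mono_TRat var x] IH psi_var[OF x] using split[of "theta x"] by simp
qed

lemma psi_tp:
  assumes x: "x \<in> pts_fin G" and S: "finite S"
  shows "psi (tp S) x = tp S (theta x)"
  using S
proof (induction S)
  case empty then show ?case by (simp add: tp_empty psi_const[OF _ x])
next
  case (insert s S)
  obtain a c where s: "s = (a,c)" by (cases s)
  have e: "tp (insert s S) = (\<lambda>y. max (ereal (c + (\<Sum>i\<in>UNIV. real (a i) * y $ i))) (tp S y))"
    by (rule ext) (simp add: tp_insert s)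
  show ?case unfolding e psi_max[OF mono_TRat tp_TRat[OF insert(1)] x] psi_mono[OF x] insert(3)
    by simp
qed

lemma psi_TPoly: "p \<in> TPoly \<Longrightarrow> x \<in> pts_fin G \<Longrightarrow> psi p x = p (theta x)"
  unfolding TPoly_tp using psi_tp by blast

lemma part1:
  assumes f: "f \<in> TRat" and x: "x \<in> pts_fin G"
  shows "psi f x = f (theta x)"
proof -
  obtain p q where pq: "f = (\<lambda>x. p x - q x)" "p \<in> TPoly" "q \<in> TPoly" "q \<noteq> (\<lambda>_. -\<infinity>)"
    using f unfolding TRat_def by blast
  have qfin: "\<And>y. \<exists>r. q y = ereal r" using TPoly_finite_val pq by blast
  have "(\<lambda>y. f y + q y) = p"
  proof
    fix y obtain r where "q y = ereal r" using qfin by blast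
    then show "f y + q y = p y" unfolding pq(1) by (cases "p y") auto
  qed
  then have "psi p x = psi f x + psi q x"
    using psi_plus[OF f TPoly_TRat[OF pq(3)] x] by simp
  then have "p (theta x) = psi f x + q (theta x)"
    using psi_TPoly pq x by simp
  moreover obtain r where "q (theta x) = ereal r" using qfin by blast
  moreover have "f (theta x) = p (theta x) - q (theta x)" using pq(1) by simp
  ultimately show ?thesis by (cases "psi f x") auto
qed

end


lemma lip_cover:
  fixes u :: "real \<Rightarrow> real"
  assumes "finite CC" "\<forall>C\<in>CC. closed C"
    "\<forall>C\<in>CC. \<forall>x\<in>C. \<forall>y\<in>C. \<bar>u x - u y\<bar> \<le> M * \<bar>x - y\<bar>"
    "{a..b} \<subseteq> \<Union>CC" "a \<le> b"
  shows "\<bar>u b - u a\<bar> \<le> M * (b - a)"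
  using assms
proof (induction "card CC" arbitrary: CC b rule: less_induct)
  case less
  obtain C0 where C0: "C0 \<in> CC" "b \<in> C0" using less.prems(4,5) by auto
  define K where "K = C0 \<inter> {a..b}"
  have Kc: "closed K" unfolding K_def using less.prems(2) C0 by auto
  have Kne: "K \<noteq> {}" unfolding K_def using C0 less.prems(5) by auto
  have Kb: "bdd_below K" unfolding K_def by auto
  define l where "l = Inf K"
  have lK: "l \<in> K" unfolding l_def using closed_contains_Inf[OF Kne Kb Kc] .
  have lle: "\<And>x. x \<in> K \<Longrightarrow> l \<le> x" unfolding l_def using Kb by (simp add: cInf_lower)
  have al: "a \<le> l" "l \<le> b" using lK unfolding K_def by auto
  have lip0: "\<And>x y. x \<in> C0 \<Longrightarrow> y \<in> C0 \<Longrightarrow> \<bar>u x - u y\<bar> \<le> M * \<bar>x - y\<bar>"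
    using less.prems(3) C0 by blast
  have lC0: "l \<in> C0" using lK unfolding K_def by auto
  show ?case
  proof (cases "l = a")
    case True
    then show ?thesis using lip0[OF C0(2) lC0] less.prems(5) by simp
  next
    case False
    then have alt: "a < l" using al by simp
    define CC' where "CC' = CC - {C0}"
    have card: "card CC' < card CC" unfolding CC'_def by (rule card_Diff1_less[OF less.prems(1) C0(1)])
    have sub: "{a..<l} \<subseteq> \<Union>CC'"
    proof
      fix x assume x: "x \<in> {a..<l}"
      then have "x \<in> {a..b}" using al by auto
      then have "x \<in> \<Union>CC" using less.prems(4) by blast
      moreover have "x \<notin> C0"
      proof
        assume "x \<in> C0" then have "x \<in> K" unfolding K_def using x al by auto
        then show False using lle x by force
      qed
      ultimately show "x \<in> \<Union>CC'" unfolding CC'_def by blast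
    qed
    have clU: "closed (\<Union>CC')" unfolding CC'_def using less.prems(1,2) by (intro closed_Union) auto
    have "closure {a..<l} \<subseteq> \<Union>CC'" using closure_minimal[OF sub clU] .
    then have sub2: "{a..l} \<subseteq> \<Union>CC'" using closure_atLeastLessThan[OF alt] by simp
    have IH: "\<bar>u l - u a\<bar> \<le> M * (l - a)"
      using less.hyps[OF card, of l] less.prems(1-3) sub2 al unfolding CC'_def by auto
    have "\<bar>u b - u l\<bar> \<le> M * (b - l)" using lip0[OF C0(2) lC0] al by simp
    then show ?thesis using IH by (simp add: algebra_simps)
  qed
qed

lemma piece_cover:
  fixes a :: "nat \<Rightarrow> real"
  assumes "\<forall>i<k. a i < a (Suc i)" "a 0 \<le> t" "t \<le> a k" "k > 0"
  shows "\<exists>i<k. a i \<le> t \<and> t \<le> a (Suc i)"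
  using assms
proof (induction k)
  case 0 then show ?case by simp
next
  case (Suc k)
  show ?case
  proof (cases "t \<le> a k \<and> k > 0")
    case True
    then obtain i where "i<k" "a i \<le> t \<and> t \<le> a (Suc i)" using Suc by auto
    then show ?thesis by (intro exI[of _ i]) auto
  next
    case False
    then have "a k \<le> t"
    proof (cases "k = 0")
      case True then show ?thesis using Suc by simp
    next
      case False then show ?thesis using \<open>\<not> (t \<le> a k \<and> k > 0)\<close> by simp
    qed
    then show ?thesis using Suc by (intro exI[of _ k]) auto
  qed
qed

lemma pw_lip:
  assumes pw: "pw_affine_int h L" and L: "L > 0"
  shows "\<exists>M\<ge>0. \<forall>s s'. 0 \<le> s \<longrightarrow> 0 \<le> s' \<longrightarrow> ereal s \<le> L \<longrightarrow> ereal s' \<le> L \<longrightarrow>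
           \<bar>h s - h s'\<bar> \<le> M * \<bar>s - s'\<bar>"
proof -
  obtain k a m c where
    a0: "a 0 = 0" and inc: "\<forall>i<k. a i < a (Suc i)" and
    fin: "L \<noteq> \<infinity> \<longrightarrow> ereal (a k) = L" and
    ray: "L = \<infinity> \<longrightarrow> (\<forall>t \<ge> a k. h t = c k + of_int (m k) * t)" and
    pc: "\<forall>i<k. \<forall>t \<in> {a i .. a (Suc i)}. h t = c i + of_int (m i) * t"
    using pw unfolding pw_affine_int_def by blast
  define M where "M = Max ((\<lambda>i. \<bar>real_of_int (m i)\<bar>) ` {..k})"
  have Mge: "\<And>i. i \<le> k \<Longrightarrow> \<bar>real_of_int (m i)\<bar> \<le> M" unfolding M_def by (rule Max_ge) auto
  have M0: "M \<ge> 0" using Mge[of 0] by simp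
  define CC where "CC = (\<lambda>i. {a i .. a (Suc i)}) ` {..<k} \<union> (if L = \<infinity> then {{a k ..}} else {})"
  have fCC: "finite CC" unfolding CC_def by auto
  have cCC: "\<forall>C\<in>CC. closed C" unfolding CC_def by auto
  have affl: "\<bar>(c i + of_int (m i) * x) - (c i + of_int (m i) * y)\<bar> \<le> M * \<bar>x - y\<bar>" if "i \<le> k" for i x y
  proof -
    have "\<bar>(c i + of_int (m i) * x) - (c i + of_int (m i) * y)\<bar> = \<bar>real_of_int (m i)\<bar> * \<bar>x - y\<bar>"
      by (simp add: abs_mult[symmetric] algebra_simps)
    also have "\<dots> \<le> M * \<bar>x - y\<bar>" using Mge[OF that] by (simp add: mult_right_mono)
    finally show ?thesis .
  qed
  have lCC: "\<forall>C\<in>CC. \<forall>x\<in>C. \<forall>y\<in>C. \<bar>h x - h y\<bar> \<le> M * \<bar>x - y\<bar>"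
  proof
    fix C assume "C \<in> CC"
    then consider (p) i where "i < k" "C = {a i .. a (Suc i)}" | (r) "L = \<infinity>" "C = {a k ..}"
      unfolding CC_def by (auto split: if_splits)
    then show "\<forall>x\<in>C. \<forall>y\<in>C. \<bar>h x - h y\<bar> \<le> M * \<bar>x - y\<bar>"
    proof cases
      case p then show ?thesis using pc affl[of i] by auto
    next
      case r then show ?thesis using ray affl[of k] by auto
    qed
  qed
  have ak0: "a k \<ge> 0"
  proof -
    have "\<forall>j\<le>k. a j \<ge> 0"
    proof (intro allI impI)
      fix j assume "j \<le> k" then show "a j \<ge> 0"
      proof (induction j)
        case 0 show ?case using a0 by simp
      next
        case (Suc j)
        then have "a j < a (Suc j)" using inc by auto
        with Suc show ?case by auto
      qed
    qed
    then show ?thesis by simp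
  qed
  have cover: "t \<in> \<Union>CC" if t0: "0 \<le> t" "ereal t \<le> L" for t
  proof (cases "t \<le> a k \<and> k > 0")
    case True
    then obtain i where "i<k" "a i \<le> t \<and> t \<le> a (Suc i)" using piece_cover[OF inc, of t] a0 t0 by auto
    then show ?thesis unfolding CC_def by auto
  next
    case False
    show ?thesis
    proof (cases "L = \<infinity>")
      case True
      have "a k \<le> t" using False a0 that by (cases "k = 0") auto
      then show ?thesis unfolding CC_def using True by auto
    next
      case Lf: False
      then have "ereal (a k) = L" using fin by simp
      then have "t \<le> a k" using that by auto
      then have "k = 0" using False by auto
      then show ?thesis using \<open>ereal (a k) = L\<close> L a0 by (metis less_irrefl zero_ereal_def)
    qed
  qed
  show ?thesis
  proof (intro exI[of _ M] conjI M0 allI impI)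
    fix s s' assume ss: "0 \<le> s" "0 \<le> s'" "ereal s \<le> L" "ereal s' \<le> L"
    have sub: "{min s s' .. max s s'} \<subseteq> \<Union>CC"
    proof
      fix t assume t: "t \<in> {min s s' .. max s s'}"
      then have "0 \<le> t" using ss by auto
      moreover have "ereal t \<le> L"
      proof (cases "s \<le> s'")
        case True then have "ereal t \<le> ereal s'" using t by simp
        then show ?thesis using ss(4) by (rule order.trans)
      next
        case False then have "ereal t \<le> ereal s" using t by simp
        then show ?thesis using ss(3) by (rule order.trans)
      qed
      ultimately show "t \<in> \<Union>CC" using cover by blast
    qed
    have "\<bar>h (max s s') - h (min s s')\<bar> \<le> M * (max s s' - min s s')"
      by (rule lip_cover[OF fCC cCC lCC sub]) simp
    then show "\<bar>h s - h s'\<bar> \<le> M * \<bar>s - s'\<bar>"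
      by (cases "s \<le> s'") (auto simp: abs_minus_commute max_def min_def)
  qed
qed

definition clen :: "('e \<times> real \<times> real) list \<Rightarrow> real" where
  "clen cs = sum_list (map (\<lambda>(e, s, s'). \<bar>s - s'\<bar>) cs)"

lemma clen_nonneg: "clen cs \<ge> 0"
  unfolding clen_def by (induction cs) auto

lemma clen_Cons[simp]: "clen ((e,s,s') # cs) = \<bar>s - s'\<bar> + clen cs"
  unfolding clen_def by simp

lemma clen_Nil[simp]: "clen [] = 0"
  unfolding clen_def by simp

lemma clen_append: "clen (cs @ ds) = clen cs + clen ds"
  unfolding clen_def by simp

lemma gdist_clen: "gdist G x y = Inf {clen cs | cs. gchain G x cs y}"
  unfolding gdist_def clen_def by simp

lemma gchain_append: "gchain G x cs y \<Longrightarrow> gchain G y ds z \<Longrightarrow> gchain G x (cs @ ds) z"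
proof (induction cs arbitrary: x)
  case Nil then show ?case by simp
next
  case (Cons c cs) then show ?case by (cases c) auto
qed

lemma gdist_le: "gchain G x cs y \<Longrightarrow> gdist G x y \<le> clen cs"
  unfolding gdist_clen
  using clen_nonneg by (intro cInf_lower bdd_belowI[of _ 0]) auto

lemma gdist_ge:
  assumes "\<exists>cs. gchain G x cs y" "\<And>cs. gchain G x cs y \<Longrightarrow> b \<le> clen cs"
  shows "b \<le> gdist G x y"
  unfolding gdist_clen using assms by (intro cInf_greatest) auto

lemma gdist_lessD:
  assumes "\<exists>cs. gchain G x cs y" "gdist G x y < d"
  shows "\<exists>cs. gchain G x cs y \<and> clen cs < d"
  using assms unfolding gdist_clen using cInf_lessD[of "{clen cs | cs. gchain G x cs y}" d] by auto

lemma gdist_nonneg: "\<exists>cs. gchain G x cs y \<Longrightarrow> gdist G x y \<ge> 0"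
  using gdist_ge[of G x y 0] clen_nonneg by auto

definition edge_lip :: "('v, 'e) tcurve \<Rightarrow> (('v, 'e) tpt \<Rightarrow> real) \<Rightarrow> real \<Rightarrow> bool" where
  "edge_lip G phi M \<longleftrightarrow> (\<forall>e\<in>edges G. \<forall>s s'. 0 \<le> s \<longrightarrow> 0 \<le> s' \<longrightarrow> ereal s \<le> len G e \<longrightarrow> ereal s' \<le> len G e \<longrightarrow>
      \<bar>phi (pt G e s) - phi (pt G e s')\<bar> \<le> M * \<bar>s - s'\<bar>)"

lemma chain_lip:
  assumes "edge_lip G phi M" "gchain G x cs y"
  shows "\<bar>phi x - phi y\<bar> \<le> M * clen cs"
  using assms(2)
proof (induction cs arbitrary: x)
  case Nil then show ?case by simp
next
  case (Cons c cs)
  obtain e s s' where c: "c = (e,s,s')" by (cases c)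
  have h: "e \<in> edges G" "0 \<le> s" "0 \<le> s'" "ereal s \<le> len G e" "ereal s' \<le> len G e"
    "pt G e s = x" "gchain G (pt G e s') cs y" using Cons.prems c by auto
  have "\<bar>phi x - phi (pt G e s')\<bar> \<le> M * \<bar>s - s'\<bar>" using assms(1) h unfolding edge_lip_def by metis
  moreover have "\<bar>phi (pt G e s') - phi y\<bar> \<le> M * clen cs" using Cons.IH[OF h(7)] .
  ultimately show ?case using c by (simp add: algebra_simps)
qed

lemma gdist_lip:
  assumes "edge_lip G phi 1" "\<exists>cs. gchain G x cs y"
  shows "\<bar>phi x - phi y\<bar> \<le> gdist G x y"
  using gdist_ge[OF assms(2)] chain_lip[OF assms(1)] by simp

context setting
begin

lemma fin_edges: "finite (edges G)" and fin_verts: "finite (verts G)" and verts_ne: "verts G \<noteq> {}"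
  using curve unfolding tropical_curve_def by auto

lemma edge_props: "e \<in> edges G \<Longrightarrow> src G e \<in> verts G \<and> tgt G e \<in> verts G \<and> len G e > 0"
  using curve unfolding tropical_curve_def by auto

lemma inf_edge: "e \<in> edges G \<Longrightarrow> len G e = \<infinity> \<Longrightarrow> src G e \<noteq> tgt G e \<and> degree G (tgt G e) = 1"
  using curve unfolding tropical_curve_def by auto

lemma connected: "u \<in> verts G \<Longrightarrow> v \<in> verts G \<Longrightarrow> (u, v) \<in> (adj G)\<^sup>*"
  using curve unfolding tropical_curve_def by auto

lemma degree_ge2:
  assumes "e1 \<in> edges G" "e2 \<in> edges G"
    "(src G e1 = w \<and> tgt G e2 = w) \<or> (tgt G e1 = w \<and> tgt G e2 = w \<and> e1 \<noteq> e2)"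
  shows "degree G w \<ge> 2"
proof -
  have f1: "finite {e \<in> edges G. src G e = w}" "finite {e \<in> edges G. tgt G e = w}"
    using fin_edges by auto
  show ?thesis using assms(3)
  proof
    assume a: "src G e1 = w \<and> tgt G e2 = w"
    have "card {e \<in> edges G. src G e = w} \<ge> 1" using a assms(1) f1(1)
      by (metis (mono_tags, lifting) One_nat_def Suc_leI card_gt_0_iff empty_iff mem_Collect_eq)
    moreover have "card {e \<in> edges G. tgt G e = w} \<ge> 1" using a assms(2) f1(2)
      by (metis (mono_tags, lifting) One_nat_def Suc_leI card_gt_0_iff empty_iff mem_Collect_eq)
    ultimately show ?thesis unfolding degree_def by simp
  next
    assume a: "tgt G e1 = w \<and> tgt G e2 = w \<and> e1 \<noteq> e2"
    have "{e1, e2} \<subseteq> {e \<in> edges G. tgt G e = w}" using a assms by auto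
    then have "card {e1, e2} \<le> card {e \<in> edges G. tgt G e = w}" using f1(2) by (rule card_mono[rotated])
    then show ?thesis using a unfolding degree_def by simp
  qed
qed

lemma src_not_inf: "e \<in> edges G \<Longrightarrow> src G e \<notin> inf_verts G"
proof
  assume e: "e \<in> edges G" and "src G e \<in> inf_verts G"
  then obtain e' where e': "e' \<in> edges G" "len G e' = \<infinity>" "tgt G e' = src G e"
    unfolding inf_verts_def by auto
  have "degree G (src G e) \<ge> 2" using degree_ge2[OF e e'(1)] e' by auto
  then show False using inf_edge[OF e'(1,2)] e'(3) by simp
qed

lemma tgt_not_inf: "e \<in> edges G \<Longrightarrow> len G e \<noteq> \<infinity> \<Longrightarrow> tgt G e \<notin> inf_verts G"
proof
  assume e: "e \<in> edges G" "len G e \<noteq> \<infinity>" and "tgt G e \<in> inf_verts G"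
  then obtain e' where e': "e' \<in> edges G" "len G e' = \<infinity>" "tgt G e' = tgt G e"
    unfolding inf_verts_def by auto
  have "e \<noteq> e'" using e e' by auto
  then have "degree G (tgt G e) \<ge> 2" using degree_ge2[OF e(1) e'(1)] e' by auto
  then show False using inf_edge[OF e'(1,2)] e'(3) by simp
qed

lemma inf_unique:
  assumes "e0 \<in> edges G" "len G e0 = \<infinity>" "e \<in> edges G" "tgt G e = tgt G e0"
  shows "e = e0"
proof (rule ccontr)
  assume "e \<noteq> e0"
  then have "degree G (tgt G e0) \<ge> 2" using degree_ge2[OF assms(3,1)] assms(4) by auto
  then show False using inf_edge[OF assms(1,2)] by simp
qed

lemma len_fin: "e \<in> edges G \<Longrightarrow> len G e \<noteq> \<infinity> \<Longrightarrow> len G e = ereal (real_of_ereal (len G e)) \<and> real_of_ereal (len G e) > 0"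
  using edge_props[of e] by (cases "len G e") auto

lemma pt_in_fin:
  assumes "e \<in> edges G" "0 \<le> t" "ereal t \<le> len G e"
  shows "pt G e t \<in> pts_fin G"
proof -
  have "len G e > 0" using edge_props assms(1) by blast
  consider "t = 0" | "t \<noteq> 0" "ereal t = len G e" | "t \<noteq> 0" "ereal t \<noteq> len G e" by blast
  then show ?thesis
  proof cases
    case 1 then show ?thesis using src_not_inf[OF assms(1)] edge_props[OF assms(1)]
      unfolding pt_def pts_fin_def by auto
  next
    case 2 then have "len G e \<noteq> \<infinity>" by auto
    then show ?thesis using 2 tgt_not_inf[OF assms(1)] edge_props[OF assms(1)]
      unfolding pt_def pts_fin_def by auto
  next
    case 3 then show ?thesis using assms unfolding pt_def pts_fin_def by auto
  qed
qed

lemma pt_Ein: "0 < t \<Longrightarrow> ereal t < len G e \<Longrightarrow> pt G e t = Ein e t"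
  unfolding pt_def by auto

lemma pt_0: "pt G e 0 = Vtx (src G e)"
  unfolding pt_def by auto

lemma pt_L: assumes "e \<in> edges G" "ereal L = len G e" shows "pt G e L = Vtx (tgt G e)"
proof -
  have "L \<noteq> 0" using edge_props[OF assms(1)] assms(2) by (metis less_irrefl zero_ereal_def)
  then show ?thesis unfolding pt_def using assms by auto
qed

lemma vert_chain:
  assumes "(u, v) \<in> (adj G)\<^sup>*" "u \<in> verts G" "u \<notin> inf_verts G"
  shows "(v \<notin> inf_verts G \<and> (\<exists>cs. gchain G (Vtx u) cs (Vtx v))) \<or>
         (\<exists>e. e \<in> edges G \<and> len G e = \<infinity> \<and> tgt G e = v \<and> (\<exists>cs. gchain G (Vtx u) cs (Vtx (src G e))))"
  using assms(1)
proof (induction rule: rtrancl_induct)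
  case base
  then show ?case using assms(3) by (auto intro: exI[of _ "[]"])
next
  case (step v w)
  from step(2) obtain e where e: "e \<in> edges G" "(v = src G e \<and> w = tgt G e) \<or> (v = tgt G e \<and> w = src G e)"
    unfolding adj_def by auto
  from step(3) show ?case
  proof
    assume A: "v \<notin> inf_verts G \<and> (\<exists>cs. gchain G (Vtx u) cs (Vtx v))"
    then obtain cs where cs: "gchain G (Vtx u) cs (Vtx v)" by blast
    from e(2) show ?case
    proof
      assume vw: "v = src G e \<and> w = tgt G e"
      show ?case
      proof (cases "len G e = \<infinity>")
        case True then show ?thesis using e(1) vw cs by blast
      next
        case False
        define L where "L = real_of_ereal (len G e)"
        have L: "len G e = ereal L" "L > 0" using len_fin[OF e(1) False] unfolding L_def by auto
        have "gchain G (Vtx v) [(e, 0, L)] (Vtx w)"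
          using e(1) L vw pt_0 pt_L[OF e(1) L(1)[symmetric]] by auto
        then have "gchain G (Vtx u) (cs @ [(e, 0, L)]) (Vtx w)" using gchain_append cs by blast
        then show ?thesis using tgt_not_inf[OF e(1) False] vw by blast
      qed
    next
      assume vw: "v = tgt G e \<and> w = src G e"
      have False': "len G e \<noteq> \<infinity>"
      proof
        assume "len G e = \<infinity>" then have "v \<in> inf_verts G" using vw e(1) unfolding inf_verts_def by auto
        then show False using A by simp
      qed
      define L where "L = real_of_ereal (len G e)"
      have L: "len G e = ereal L" "L > 0" using len_fin[OF e(1) False'] unfolding L_def by auto
      have "gchain G (Vtx v) [(e, L, 0)] (Vtx w)"
        using e(1) L vw pt_0 pt_L[OF e(1) L(1)[symmetric]] by auto
      then have "gchain G (Vtx u) (cs @ [(e, L, 0)]) (Vtx w)" using gchain_append cs by blast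
      then show ?thesis using src_not_inf[OF e(1)] vw by blast
    qed
  next
    assume "\<exists>e. e \<in> edges G \<and> len G e = \<infinity> \<and> tgt G e = v \<and> (\<exists>cs. gchain G (Vtx u) cs (Vtx (src G e)))"
    then obtain e0 cs where e0: "e0 \<in> edges G" "len G e0 = \<infinity>" "tgt G e0 = v" "gchain G (Vtx u) cs (Vtx (src G e0))"
      by blast
    from e(2) show ?case
    proof
      assume vw: "v = src G e \<and> w = tgt G e"
      then have "src G e = tgt G e0" using e0(3) by simp
      then have "src G e \<in> inf_verts G" using e0(1,2) unfolding inf_verts_def by blast
      then show ?case using src_not_inf[OF e(1)] by simp
    qed (use inf_unique[OF e0(1,2) e(1)] e0 src_not_inf[OF e0(1)] in auto)
  qed
qed

lemma pt_to_vert: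
  assumes "x \<in> pts_fin G"
  shows "\<exists>u. u \<in> verts G \<and> u \<notin> inf_verts G \<and> (\<exists>cs. gchain G x cs (Vtx u)) \<and> (\<exists>cs. gchain G (Vtx u) cs x)"
  using assms unfolding pts_fin_def
proof
  assume "x \<in> Vtx ` (verts G - inf_verts G)"
  then obtain v where "x = Vtx v" "v \<in> verts G" "v \<notin> inf_verts G" by auto
  then show ?thesis by (intro exI[of _ v]) (auto intro!: exI[of _ "[]"])
next
  assume "x \<in> {Ein e t |e t. e \<in> edges G \<and> 0 < t \<and> ereal t < len G e}"
  then obtain e t where et: "x = Ein e t" "e \<in> edges G" "0 < t" "ereal t < len G e" by blast
  have l0: "ereal 0 \<le> len G e" using edge_props[OF et(2)] by (simp add: zero_ereal_def[symmetric] less_imp_le)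
  have "gchain G x [(e, t, 0)] (Vtx (src G e))" "gchain G (Vtx (src G e)) [(e, 0, t)] x"
    using l0 et pt_Ein[OF et(3,4)] pt_0 edge_props[OF et(2)] by auto
  then show ?thesis using edge_props[OF et(2)] src_not_inf[OF et(2)] by blast
qed

lemma chain_exists:
  assumes "x \<in> pts_fin G" "y \<in> pts_fin G"
  shows "\<exists>cs. gchain G x cs y"
proof -
  obtain u cs1 where u: "u \<in> verts G" "u \<notin> inf_verts G" "gchain G x cs1 (Vtx u)"
    using pt_to_vert[OF assms(1)] by blast
  obtain w cs3 where w: "w \<in> verts G" "w \<notin> inf_verts G" "gchain G (Vtx w) cs3 y"
    using pt_to_vert[OF assms(2)] by blast
  obtain cs2 where "gchain G (Vtx u) cs2 (Vtx w)"
    using vert_chain[OF connected[OF u(1) w(1)] u(1,2)] w(2) unfolding inf_verts_def by blast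
  then show ?thesis using gchain_append u(3) w(3) by blast
qed

lemma fs_lip: "\<exists>M\<ge>0. \<forall>i. edge_lip G (fs i) M"
proof -
  have "\<forall>e\<in>edges G. \<forall>i. \<exists>M\<ge>0. \<forall>s s'. 0 \<le> s \<longrightarrow> 0 \<le> s' \<longrightarrow> ereal s \<le> len G e \<longrightarrow> ereal s' \<le> len G e \<longrightarrow>
           \<bar>fs i (pt G e s) - fs i (pt G e s')\<bar> \<le> M * \<bar>s - s'\<bar>"
  proof (intro ballI allI)
    fix e i assume e: "e \<in> edges G"
    have "pw_affine_int (\<lambda>t. fs i (pt G e t)) (len G e)" using rat e unfolding rat_real_fun_def by blast
    from pw_lip[OF this] show "\<exists>M\<ge>0. \<forall>s s'. 0 \<le> s \<longrightarrow> 0 \<le> s' \<longrightarrow> ereal s \<le> len G e \<longrightarrow> ereal s' \<le> len G e \<longrightarrow>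
           \<bar>fs i (pt G e s) - fs i (pt G e s')\<bar> \<le> M * \<bar>s - s'\<bar>" using edge_props[OF e] by simp
  qed
  then obtain Mf where Mf: "\<forall>e\<in>edges G. \<forall>i. Mf e i \<ge> 0 \<and> (\<forall>s s'. 0 \<le> s \<longrightarrow> 0 \<le> s' \<longrightarrow> ereal s \<le> len G e \<longrightarrow> ereal s' \<le> len G e \<longrightarrow>
           \<bar>fs i (pt G e s) - fs i (pt G e s')\<bar> \<le> Mf e i * \<bar>s - s'\<bar>)"
    by metis
  define M where "M = (\<Sum>e\<in>edges G. \<Sum>i\<in>UNIV. Mf e i)"
  have Mge: "Mf e i \<le> M" if "e \<in> edges G" for e i
  proof -
    have "Mf e i \<le> (\<Sum>i\<in>UNIV. Mf e i)" using Mf that by (intro member_le_sum) auto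
    also have "\<dots> \<le> M" unfolding M_def using Mf that fin_edges
      by (intro member_le_sum[where f="\<lambda>e. \<Sum>i\<in>UNIV. Mf e i"]) (auto intro: sum_nonneg)
    finally show ?thesis .
  qed
  have M0: "M \<ge> 0" unfolding M_def using Mf by (auto intro!: sum_nonneg)
  show ?thesis
  proof (intro exI[of _ M] conjI M0 allI)
    fix i show "edge_lip G (fs i) M" unfolding edge_lip_def
    proof (intro ballI allI impI)
      fix e s s' assume e: "e \<in> edges G" and ss: "0 \<le> s" "0 \<le> s'" "ereal s \<le> len G e" "ereal s' \<le> len G e"
      have "\<bar>fs i (pt G e s) - fs i (pt G e s')\<bar> \<le> Mf e i * \<bar>s - s'\<bar>" using Mf e ss by blast
      also have "\<dots> \<le> M * \<bar>s - s'\<bar>" using Mge[OF e] by (simp add: mult_right_mono)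
      finally show "\<bar>fs i (pt G e s) - fs i (pt G e s')\<bar> \<le> M * \<bar>s - s'\<bar>" .
    qed
  qed
qed

lemma part3:
  assumes x: "x \<in> pts_fin G" and eps: "\<epsilon> > 0"
  shows "\<exists>\<delta>>0. \<forall>y \<in> pts_fin G. gdist G x y < \<delta> \<longrightarrow> dist (theta y) (theta x) < \<epsilon>"
proof -
  obtain M where M: "M \<ge> 0" "\<And>i. edge_lip G (fs i) M" using fs_lip by blast
  define K where "K = real CARD('n) * M"
  have K0: "K \<ge> 0" unfolding K_def using M by simp
  define d where "d = \<epsilon> / (K + 1)"
  have d0: "d > 0" unfolding d_def using eps K0 by simp
  show ?thesis
  proof (intro exI[of _ d] conjI d0 ballI impI)
    fix y assume y: "y \<in> pts_fin G" and lt: "gdist G x y < d"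
    obtain cs where cs: "gchain G x cs y" "clen cs < d" using gdist_lessD[OF chain_exists[OF x y] lt] by blast
    have "dist (theta y) (theta x) = norm (theta y - theta x)" by (simp add: dist_norm)
    also have "\<dots> \<le> (\<Sum>i\<in>UNIV. \<bar>(theta y - theta x) $ i\<bar>)" by (rule norm_le_l1_cart)
    also have "\<dots> \<le> (\<Sum>i\<in>(UNIV::'n set). M * clen cs)"
    proof (rule sum_mono)
      fix i
      have "\<bar>fs i x - fs i y\<bar> \<le> M * clen cs" using chain_lip[OF M(2) cs(1)] .
      then show "\<bar>(theta y - theta x) $ i\<bar> \<le> M * clen cs" by (simp add: abs_minus_commute)
    qed
    also have "\<dots> = K * clen cs" unfolding K_def by simp
    also have "\<dots> \<le> K * d" using cs(2) K0 by (simp add: mult_left_mono)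
    also have "\<dots> < \<epsilon>"
    proof -
      have "K * d < (K + 1) * d" using d0 by simp
      also have "\<dots> = \<epsilon>" unfolding d_def using K0 by simp
      finally show ?thesis .
    qed
    finally show "dist (theta y) (theta x) < \<epsilon>" .
  qed
qed

end


definition PLR :: "(real \<Rightarrow> real) \<Rightarrow> bool" where
  "PLR h \<longleftrightarrow> (\<exists>B. finite B \<and> (\<forall>s t. s \<le> t \<longrightarrow> (\<forall>b\<in>B. b \<le> s \<or> t \<le> b) \<longrightarrow>
      (\<exists>(m::int) c. \<forall>u\<in>{s..t}. h u = c + of_int m * u)))"

lemma PLR_add: assumes "PLR f" "PLR g" shows "PLR (\<lambda>t. f t + g t)"
proof -
  obtain B1 where B1: "finite B1" "\<forall>s t. s \<le> t \<longrightarrow> (\<forall>b\<in>B1. b \<le> s \<or> t \<le> b) \<longrightarrow>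
      (\<exists>(m::int) c. \<forall>u\<in>{s..t}. f u = c + of_int m * u)" using assms(1) unfolding PLR_def by blast
  obtain B2 where B2: "finite B2" "\<forall>s t. s \<le> t \<longrightarrow> (\<forall>b\<in>B2. b \<le> s \<or> t \<le> b) \<longrightarrow>
      (\<exists>(m::int) c. \<forall>u\<in>{s..t}. g u = c + of_int m * u)" using assms(2) unfolding PLR_def by blast
  show ?thesis unfolding PLR_def
  proof (intro exI[of _ "B1 \<union> B2"] conjI allI impI)
    show "finite (B1 \<union> B2)" using B1 B2 by simp
    fix s t :: real assume st: "s \<le> t" "\<forall>b\<in>B1 \<union> B2. b \<le> s \<or> t \<le> b"
    have "\<forall>b\<in>B1. b \<le> s \<or> t \<le> b" "\<forall>b\<in>B2. b \<le> s \<or> t \<le> b" using st(2) by auto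
    then obtain m1 c1 m2 c2 where 1: "\<forall>u\<in>{s..t}. f u = c1 + of_int m1 * u"
       and 2: "\<forall>u\<in>{s..t}. g u = c2 + of_int m2 * u"
      using B1(2)[rule_format, OF st(1)] B2(2)[rule_format, OF st(1)] by blast
    show "\<exists>(m::int) c. \<forall>u\<in>{s..t}. f u + g u = c + of_int m * u"
      using 1 2 by (intro exI[of _ "m1 + m2"] exI[of _ "c1 + c2"]) (auto simp: algebra_simps)
  qed
qed

lemma PLR_neg: assumes "PLR f" shows "PLR (\<lambda>t. - f t)"
proof -
  obtain B1 where B1: "finite B1" "\<forall>s t. s \<le> t \<longrightarrow> (\<forall>b\<in>B1. b \<le> s \<or> t \<le> b) \<longrightarrow>
      (\<exists>(m::int) c. \<forall>u\<in>{s..t}. f u = c + of_int m * u)" using assms(1) unfolding PLR_def by blast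
  show ?thesis unfolding PLR_def
  proof (intro exI[of _ "B1"] conjI allI impI)
    show "finite B1" using B1 by simp
    fix s t :: real assume st: "s \<le> t" "\<forall>b\<in>B1. b \<le> s \<or> t \<le> b"
    obtain m1 c1 where 1: "\<forall>u\<in>{s..t}. f u = c1 + of_int m1 * u" using B1(2)[rule_format, OF st(1)] st(2) by blast
    show "\<exists>(m::int) c. \<forall>u\<in>{s..t}. - f u = c + of_int m * u"
      using 1 by (intro exI[of _ "- m1"] exI[of _ "- c1"]) (auto simp: algebra_simps)
  qed
qed

lemma PLR_const: "PLR (\<lambda>t. c)"
  unfolding PLR_def by (intro exI[of _ "{}"]) (auto intro!: exI[of _ "0::int"])

lemma PLR_if: "PLR f \<Longrightarrow> PLR g \<Longrightarrow> PLR (\<lambda>t. if P then f t else g t)"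
  by (cases P) auto

lemma PLR_refl: assumes "PLR f" shows "PLR (\<lambda>t. f (c - t))"
proof -
  obtain B1 where B1: "finite B1" "\<forall>s t. s \<le> t \<longrightarrow> (\<forall>b\<in>B1. b \<le> s \<or> t \<le> b) \<longrightarrow>
      (\<exists>(m::int) c. \<forall>u\<in>{s..t}. f u = c + of_int m * u)" using assms(1) unfolding PLR_def by blast
  show ?thesis unfolding PLR_def
  proof (intro exI[of _ "(\<lambda>b. c - b) ` B1"] conjI allI impI)
    show "finite ((\<lambda>b. c - b) ` B1)" using B1 by simp
    fix s t :: real assume st: "s \<le> t" "\<forall>b\<in>(\<lambda>b. c - b) ` B1. b \<le> s \<or> t \<le> b"
    have "\<forall>b\<in>B1. b \<le> c - t \<or> c - s \<le> b" using st(2) by force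
    moreover have "c - t \<le> c - s" using st(1) by simp
    ultimately obtain m1 c1 where 1: "\<forall>u\<in>{c - t..c - s}. f u = c1 + of_int m1 * u" using B1(2)[rule_format, of "c - t" "c - s"] by blast
    show "\<exists>(m::int) d. \<forall>u\<in>{s..t}. f (c - u) = d + of_int m * u"
      using 1 by (intro exI[of _ "- m1"] exI[of _ "c1 + of_int m1 * c"]) (auto simp: algebra_simps)
  qed
qed

lemma PLR_shift: assumes "PLR f" shows "PLR (\<lambda>t. f (t - c))"
proof -
  obtain B1 where B1: "finite B1" "\<forall>s t. s \<le> t \<longrightarrow> (\<forall>b\<in>B1. b \<le> s \<or> t \<le> b) \<longrightarrow>
      (\<exists>(m::int) c. \<forall>u\<in>{s..t}. f u = c + of_int m * u)" using assms(1) unfolding PLR_def by blast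
  show ?thesis unfolding PLR_def
  proof (intro exI[of _ "(\<lambda>b. b + c) ` B1"] conjI allI impI)
    show "finite ((\<lambda>b. b + c) ` B1)" using B1 by simp
    fix s t :: real assume st: "s \<le> t" "\<forall>b\<in>(\<lambda>b. b + c) ` B1. b \<le> s \<or> t \<le> b"
    have "\<forall>b\<in>B1. b \<le> s - c \<or> t - c \<le> b" using st(2) by force
    moreover have "s - c \<le> t - c" using st(1) by simp
    ultimately obtain m1 c1 where 1: "\<forall>u\<in>{s - c..t - c}. f u = c1 + of_int m1 * u" using B1(2)[rule_format, of "s - c" "t - c"] by blast
    show "\<exists>(m::int) d. \<forall>u\<in>{s..t}. f (u - c) = d + of_int m * u"
      using 1 by (intro exI[of _ "m1"] exI[of _ "c1 - of_int m1 * c"]) (auto simp: algebra_simps)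
  qed
qed

definition tri :: "real \<Rightarrow> real \<Rightarrow> real" where "tri r z = max 0 (r - \<bar>z\<bar>)"
definition ramp :: "real \<Rightarrow> real \<Rightarrow> real" where "ramp r z = max 0 (r - z)"
definition hat :: "real \<Rightarrow> real \<Rightarrow> real" where "hat r z = max 0 (min z (r - z))"

lemma PLR_tri: assumes "r > 0" shows "PLR (tri r)"
  unfolding PLR_def
proof (intro exI[of _ "{-r, 0, r}"] conjI allI impI)
  fix s t :: real assume st: "s \<le> t" "\<forall>b\<in>{-r, 0, r}. b \<le> s \<or> t \<le> b"
  consider "t \<le> -r" | "-r \<le> s" "t \<le> 0" | "0 \<le> s" "t \<le> r" | "r \<le> s" using st assms by force
  then show "\<exists>(m::int) c. \<forall>u\<in>{s..t}. tri r u = c + of_int m * u"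
  proof cases
    case 1 then show ?thesis by (intro exI[of _ 0] exI[of _ 0]) (auto simp: tri_def)
  next
    case 2 then show ?thesis by (intro exI[of _ 1] exI[of _ r]) (auto simp: tri_def)
  next
    case 3 then show ?thesis by (intro exI[of _ "-1"] exI[of _ r]) (auto simp: tri_def)
  next
    case 4 then show ?thesis by (intro exI[of _ 0] exI[of _ 0]) (auto simp: tri_def)
  qed
qed simp

lemma PLR_ramp: "PLR (ramp r)"
  unfolding PLR_def
proof (intro exI[of _ "{r}"] conjI allI impI)
  fix s t :: real assume st: "s \<le> t" "\<forall>b\<in>{r}. b \<le> s \<or> t \<le> b"
  consider "t \<le> r" | "r \<le> s" using st by force
  then show "\<exists>(m::int) c. \<forall>u\<in>{s..t}. ramp r u = c + of_int m * u"
  proof cases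
    case 1 then show ?thesis by (intro exI[of _ "-1"] exI[of _ r]) (auto simp: ramp_def)
  next
    case 2 then show ?thesis by (intro exI[of _ 0] exI[of _ 0]) (auto simp: ramp_def)
  qed
qed simp

lemma PLR_hat: assumes "r > 0" shows "PLR (hat r)"
  unfolding PLR_def
proof (intro exI[of _ "{0, r/2, r}"] conjI allI impI)
  fix s t :: real assume st: "s \<le> t" "\<forall>b\<in>{0, r/2, r}. b \<le> s \<or> t \<le> b"
  consider "t \<le> 0" | "0 \<le> s" "t \<le> r/2" | "r/2 \<le> s" "t \<le> r" | "r \<le> s" using st assms by force
  then show "\<exists>(m::int) c. \<forall>u\<in>{s..t}. hat r u = c + of_int m * u"
  proof cases
    case 1 then show ?thesis by (intro exI[of _ 0] exI[of _ 0]) (auto simp: hat_def)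
  next
    case 2 then show ?thesis by (intro exI[of _ 1] exI[of _ 0]) (auto simp: hat_def)
  next
    case 3 then show ?thesis by (intro exI[of _ "-1"] exI[of _ r]) (auto simp: hat_def)
  next
    case 4 then show ?thesis by (intro exI[of _ 0] exI[of _ 0]) (auto simp: hat_def)
  qed
qed simp

lemma tri_lip: "\<bar>tri r a - tri r b\<bar> \<le> \<bar>a - b\<bar>"
  unfolding tri_def by (auto simp: max_def abs_if)
lemma ramp_lip: "\<bar>ramp r a - ramp r b\<bar> \<le> \<bar>a - b\<bar>"
  unfolding ramp_def by (auto simp: max_def abs_if)
lemma hat_lip: "\<bar>hat r a - hat r b\<bar> \<le> \<bar>a - b\<bar>"
  unfolding hat_def by (auto simp: max_def min_def abs_if)

lemma PLR_pw:
  assumes P: "PLR h" and L: "L > 0"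
  shows "pw_affine_int h L"
proof -
  obtain B where B: "finite B" "\<forall>s t. s \<le> t \<longrightarrow> (\<forall>b\<in>B. b \<le> s \<or> t \<le> b) \<longrightarrow>
      (\<exists>(m::int) c. \<forall>u\<in>{s..t}. h u = c + of_int m * u)" using P unfolding PLR_def by blast
  define X where "X = {b\<in>B. 0 < b \<and> ereal b < L} \<union> {0} \<union> (if L = \<infinity> then {} else {real_of_ereal L})"
  have Lr: "L \<noteq> \<infinity> \<Longrightarrow> L = ereal (real_of_ereal L) \<and> real_of_ereal L > 0"
    using L by (cases L) auto
  have fX: "finite X" unfolding X_def using B(1) by auto
  obtain xs where xs: "sorted_wrt (<) xs" "set xs = X" using finite_set_strict_sorted[OF fX] by blast
  have X0: "\<forall>x\<in>X. 0 \<le> x" unfolding X_def using Lr by (auto split: if_splits)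
  have XL: "\<forall>x\<in>X. ereal x \<le> L"
  proof
    fix x assume "x \<in> X"
    then consider "ereal x < L" | "x = 0" | "L \<noteq> \<infinity>" "x = real_of_ereal L" unfolding X_def by (auto split: if_splits)
    then show "ereal x \<le> L"
    proof cases
      case 1 then show ?thesis by simp
    next
      case 2 then show ?thesis using L by (simp add: zero_ereal_def[symmetric])
    next
      case 3 then show ?thesis using Lr by simp
    qed
  qed
  have lt: "\<And>i j. i < j \<Longrightarrow> j < length xs \<Longrightarrow> xs ! i < xs ! j"
    using xs(1) by (simp add: sorted_wrt_nth_less)
  have le: "\<And>i j. i \<le> j \<Longrightarrow> j < length xs \<Longrightarrow> xs ! i \<le> xs ! j"
    using lt by (metis order.order_iff_strict)
  have inX: "\<And>i. i < length xs \<Longrightarrow> xs ! i \<in> X" using xs(2) nth_mem by blast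
  have ne: "xs \<noteq> []" using xs(2) unfolding X_def by auto
  define k where "k = length xs - 1"
  have kl: "k < length xs" unfolding k_def using ne by simp
  have a0: "xs ! 0 = 0"
  proof -
    have "0 \<in> set xs" using xs(2) unfolding X_def by auto
    then obtain j where j: "j < length xs" "xs ! j = 0" by (auto simp: in_set_conv_nth)
    show ?thesis
    proof (cases j)
      case 0 then show ?thesis using j by simp
    next
      case (Suc j')
      then have "xs ! 0 < 0" using lt[of 0 j] j by simp
      moreover have "xs ! 0 \<ge> 0" using X0 inX[of 0] ne by simp
      ultimately show ?thesis by simp
    qed
  qed
  have amax: "\<And>x. x \<in> X \<Longrightarrow> x \<le> xs ! k"
  proof -
    fix x assume "x \<in> X"
    then obtain j where "j < length xs" "xs ! j = x" using xs(2) by (auto simp: in_set_conv_nth)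
    then show "x \<le> xs ! k" using le[of j k] kl unfolding k_def by simp
  qed
  have ak: "L \<noteq> \<infinity> \<longrightarrow> ereal (xs ! k) = L"
  proof
    assume Lf: "L \<noteq> \<infinity>"
    then have "real_of_ereal L \<in> X" unfolding X_def by simp
    then have "real_of_ereal L \<le> xs ! k" using amax by blast
    moreover have "ereal (xs ! k) \<le> L" using XL inX[OF kl] by blast
    ultimately show "ereal (xs ! k) = L" using Lr[OF Lf] by (metis antisym ereal_less_eq(3))
  qed
  have gap: "\<forall>b\<in>B. b \<le> xs ! i \<or> xs ! Suc i \<le> b" if i: "i < k" for i
  proof
    fix b assume b: "b \<in> B"
    show "b \<le> xs ! i \<or> xs ! Suc i \<le> b"
    proof (rule ccontr)
      assume "\<not> ?thesis"
      then have bb: "xs ! i < b" "b < xs ! Suc i" by auto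
      have "0 \<le> xs ! i" using X0 inX i kl by simp
      moreover have "ereal (xs ! Suc i) \<le> L" using XL inX[of "Suc i"] i kl unfolding k_def by simp
      moreover have "ereal b < L" using bb(2) \<open>ereal (xs ! Suc i) \<le> L\<close> by (metis less_ereal.simps(1) less_le_trans)
      ultimately have "b \<in> X" unfolding X_def using b bb by auto
      then obtain j where j: "j < length xs" "xs ! j = b" using xs(2) by (auto simp: in_set_conv_nth)
      have "i < j"
      proof (rule ccontr)
        assume "\<not> i < j" then have "xs ! j \<le> xs ! i" using le[of j i] i kl by simp
        then show False using bb j by simp
      qed
      moreover have "j < Suc i"
      proof (rule ccontr)
        assume "\<not> j < Suc i" then have "xs ! Suc i \<le> xs ! j" using le[of "Suc i" j] j by simp
        then show False using bb j by simp
      qed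
      ultimately show False by simp
    qed
  qed
  have seg: "\<exists>(m::int) c. \<forall>u\<in>{xs ! i..xs ! Suc i}. h u = c + of_int m * u" if i: "i < k" for i
    using B(2) gap[OF i] lt[of i "Suc i"] i kl unfolding k_def by auto
  then obtain mm cc where mc: "\<forall>i<k. \<forall>u\<in>{xs ! i..xs ! Suc i}. h u = cc i + of_int (mm i) * u"
    by metis
  have rayex: "L = \<infinity> \<longrightarrow> (\<exists>(m::int) c. \<forall>t\<ge>xs ! k. h t = c + of_int m * t)"
  proof
    assume Li: "L = \<infinity>"
    have nb: "\<forall>b\<in>B. b \<le> xs ! k \<or> T \<le> b" for T
    proof
      fix b assume b: "b \<in> B"
      show "b \<le> xs ! k \<or> T \<le> b"
      proof (cases "0 < b")
        case True then have "b \<in> X" unfolding X_def using b Li by auto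
        then show ?thesis using amax by blast
      next
        case False then show ?thesis using X0 inX[OF kl] by auto
      qed
    qed
    define A where "A = xs ! k"
    have nbA: "\<forall>b\<in>B. b \<le> A \<or> T \<le> b" for T using nb unfolding A_def by blast
    have "A \<le> A + 1" by simp
    then obtain m c where mc1: "\<forall>u\<in>{A..A+1}. h u = c + of_int m * u" using B(2)[rule_format, of A "A+1"] nbA[of "A+1"] by blast
    have "\<forall>t\<ge>A. h t = c + of_int m * t"
    proof (intro allI impI)
      fix t assume t: "A \<le> t"
      define T where "T = max t (A + 1)"
      have "A \<le> T" unfolding T_def by simp
      then obtain m' c' where mc2: "\<forall>u\<in>{A..T}. h u = c' + of_int m' * u" using B(2)[rule_format, of A T] nbA[of T] by blast
      have "A \<in> {A..A+1}" "A \<in> {A..T}" "A + 1 \<in> {A..A+1}" "A + 1 \<in> {A..T}" unfolding T_def by auto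
      then have e1: "c + of_int m * A = c' + of_int m' * A"
        and e2: "c + of_int m * (A+1) = c' + of_int m' * (A+1)" using mc1 mc2 by metis+
      have "of_int m = (of_int m' :: real)" using e1 e2 by (simp add: algebra_simps)
      then have "c = c'" using e1 by simp
      then show "h t = c + of_int m * t" using mc2 \<open>of_int m = of_int m'\<close> t unfolding T_def by auto
    qed
    then show "\<exists>(m::int) c. \<forall>t\<ge>xs ! k. h t = c + of_int m * t" unfolding A_def by blast
  qed
  obtain mr cr where ray: "L = \<infinity> \<longrightarrow> (\<forall>t\<ge>xs ! k. h t = cr + of_int mr * t)" using rayex by metis
  define m where "m = (\<lambda>i. if i < k then mm i else mr)"
  define c where "c = (\<lambda>i. if i < k then cc i else cr)"
  show ?thesis unfolding pw_affine_int_def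
  proof (rule exI[of _ k], rule exI[of _ "\<lambda>i. xs ! i"], rule exI[of _ m], rule exI[of _ c], intro conjI)
    show "xs ! 0 = 0" by (rule a0)
    show "\<forall>i<k. xs ! i < xs ! Suc i" using lt kl unfolding k_def by auto
    show "L \<noteq> \<infinity> \<longrightarrow> ereal (xs ! k) = L" by (rule ak)
    show "L = \<infinity> \<longrightarrow> (\<forall>t\<ge>xs ! k. h t = c k + of_int (m k) * t)" using ray unfolding m_def c_def by simp
    show "\<forall>i<k. \<forall>t\<in>{xs ! i..xs ! Suc i}. h t = c i + of_int (m i) * t" using mc unfolding m_def c_def by simp
  qed
qed

lemma pw_cong:
  assumes pw: "pw_affine_int h L" and L: "L > 0" and eq: "\<And>t. 0 \<le> t \<Longrightarrow> ereal t \<le> L \<Longrightarrow> h' t = h t"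
  shows "pw_affine_int h' L"
proof -
  obtain k a m c where
    a0: "a 0 = 0" and inc: "\<forall>i<k. a i < a (Suc i)" and
    fin: "L \<noteq> \<infinity> \<longrightarrow> ereal (a k) = L" and
    ray: "L = \<infinity> \<longrightarrow> (\<forall>t \<ge> a k. h t = c k + of_int (m k) * t)" and
    pc: "\<forall>i<k. \<forall>t \<in> {a i .. a (Suc i)}. h t = c i + of_int (m i) * t"
    using pw unfolding pw_affine_int_def by blast
  have mono: "a i \<le> a j" if "i \<le> j" "j \<le> k" for i j
    using that
  proof (induction j)
    case 0 then show ?case by simp
  next
    case (Suc j)
    show ?case
    proof (cases "i = Suc j")
      case True then show ?thesis by simp
    next
      case False
      then have "i \<le> j" using Suc.prems by simp
      then have "a i \<le> a j" using Suc.IH Suc.prems by simp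
      moreover have "a j < a (Suc j)" using inc Suc.prems by simp
      ultimately show ?thesis by simp
    qed
  qed
  have inrange: "0 \<le> t \<and> ereal t \<le> L" if "i < k" "t \<in> {a i .. a (Suc i)}" for i t
  proof -
    have "0 \<le> a i" using mono[of 0 i] that a0 by simp
    moreover have "a (Suc i) \<le> a k" using mono[of "Suc i" k] that by simp
    moreover have "ereal (a k) \<le> L" using fin by (cases "L = \<infinity>") auto
    ultimately show ?thesis using that by (metis atLeastAtMost_iff ereal_less_eq(3) order.trans)
  qed
  have akpos: "a k \<ge> 0" using mono[of 0 k] a0 by simp
  have r': "L = \<infinity> \<longrightarrow> (\<forall>t\<ge>a k. h' t = c k + of_int (m k) * t)" using ray eq akpos by auto
  have p': "\<forall>i<k. \<forall>t\<in>{a i..a (Suc i)}. h' t = c i + of_int (m i) * t" using pc eq inrange by auto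
  show ?thesis unfolding pw_affine_int_def using a0 inc fin r' p' by blast
qed


definition Lr :: "('v, 'e) tcurve \<Rightarrow> 'e \<Rightarrow> real" where
  "Lr G e = real_of_ereal (len G e)"

definition br :: "('v, 'e) tcurve \<Rightarrow> ('v, 'e) tpt \<Rightarrow> ('e \<times> real \<times> real) set" where
  "br G x = (case x of Ein e0 t0 \<Rightarrow> {(e0, 1, t0), (e0, -1, t0)}
     | Vtx v \<Rightarrow> {(e, 1, 0) | e. e \<in> edges G \<and> src G e = v} \<union>
                {(e, -1, Lr G e) | e. e \<in> edges G \<and> tgt G e = v \<and> len G e \<noteq> \<infinity>})"

definition bpt :: "('v, 'e) tcurve \<Rightarrow> ('e \<times> real \<times> real) \<Rightarrow> real \<Rightarrow> ('v, 'e) tpt" where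
  "bpt G b r = pt G (fst b) (snd (snd b) + fst (snd b) * r)"

definition TF :: "('v, 'e) tcurve \<Rightarrow> ('v, 'e) tpt \<Rightarrow> real \<Rightarrow> 'e \<Rightarrow> real \<Rightarrow> real" where
  "TF G x \<rho> e t = (case x of Ein e0 t0 \<Rightarrow> if e = e0 then tri \<rho> (t - t0) else 0
     | Vtx v \<Rightarrow> (if src G e = v then ramp \<rho> t else 0) +
               (if tgt G e = v \<and> len G e \<noteq> \<infinity> then ramp \<rho> (Lr G e - t) else 0))"

definition Tfun :: "('v, 'e) tcurve \<Rightarrow> ('v, 'e) tpt \<Rightarrow> real \<Rightarrow> ('v, 'e) tpt \<Rightarrow> real" where
  "Tfun G x \<rho> w = (case w of Vtx u \<Rightarrow> if Vtx u = x then \<rho> else 0 | Ein e t \<Rightarrow> TF G x \<rho> e t)"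

definition PF :: "('v, 'e) tcurve \<Rightarrow> ('v, 'e) tpt \<Rightarrow> real \<Rightarrow> ('e \<times> real \<times> real) \<Rightarrow> 'e \<Rightarrow> real \<Rightarrow> real" where
  "PF G x \<rho> b e t = (case x of Ein e0 t0 \<Rightarrow>
        if e = e0 then (if 0 < fst (snd b) then hat \<rho> (t - t0) + - hat \<rho> (t0 - t)
                        else - (hat \<rho> (t - t0) + - hat \<rho> (t0 - t))) else 0
     | Vtx v \<Rightarrow> (if src G e = v then (if b = (e, 1, 0) then hat \<rho> t else - hat \<rho> t) else 0) +
               (if tgt G e = v \<and> len G e \<noteq> \<infinity> then
                   (if b = (e, -1, Lr G e) then hat \<rho> (Lr G e - t) else - hat \<rho> (Lr G e - t)) else 0))"

definition Pfun :: "('v, 'e) tcurve \<Rightarrow> ('v, 'e) tpt \<Rightarrow> real \<Rightarrow> ('e \<times> real \<times> real) \<Rightarrow> ('v, 'e) tpt \<Rightarrow> real" where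
  "Pfun G x \<rho> b w = (case w of Vtx u \<Rightarrow> 0 | Ein e t \<Rightarrow> PF G x \<rho> b e t)"

definition good :: "('v, 'e) tcurve \<Rightarrow> ('v, 'e) tpt \<Rightarrow> real \<Rightarrow> bool" where
  "good G x \<rho> \<longleftrightarrow> 0 < \<rho> \<and> (\<forall>e\<in>edges G. len G e \<noteq> \<infinity> \<longrightarrow> 2 * \<rho> \<le> Lr G e) \<and>
     (\<forall>e0 t0. x = Ein e0 t0 \<longrightarrow> \<rho> \<le> t0 \<and> ereal (t0 + \<rho>) \<le> len G e0)"

lemma lip_split:
  fixes f g :: "real \<Rightarrow> real"
  assumes "\<And>a b. \<bar>f a - f b\<bar> \<le> \<bar>a - b\<bar>" "\<And>a b. \<bar>g a - g b\<bar> \<le> \<bar>a - b\<bar>"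
    "\<And>t. t \<ge> m \<Longrightarrow> f t = 0" "\<And>t. t \<le> m \<Longrightarrow> g t = 0"
  shows "\<bar>(f a + g a) - (f b + g b)\<bar> \<le> \<bar>a - b\<bar>"
proof -
  have key: "\<bar>(f a + g a) - (f b + g b)\<bar> \<le> b - a" if ab: "a \<le> b" for a b
  proof (cases "b \<le> m")
    case True then show ?thesis using assms(1)[of a b] assms(4)[of a] assms(4)[of b] ab by auto
  next
    case False
    show ?thesis
    proof (cases "m \<le> a")
      case True then show ?thesis using assms(2)[of a b] assms(3)[of a] assms(3)[of b] ab by auto
    next
      case False
      have "\<bar>f a - f m\<bar> \<le> \<bar>a - m\<bar>" "\<bar>g b - g m\<bar> \<le> \<bar>b - m\<bar>" using assms(1,2) by auto
      then show ?thesis using assms(3)[of m] assms(4)[of m] assms(3)[of b] assms(4)[of a] False \<open>\<not> b \<le> m\<close> ab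
        by auto
    qed
  qed
  show ?thesis
  proof (cases "a \<le> b")
    case True then show ?thesis using key[OF True] by simp
  next
    case False then show ?thesis using key[of b a] by (simp add: abs_minus_commute)
  qed
qed

lemma tri_zero: "r \<le> \<bar>z\<bar> \<Longrightarrow> tri r z = 0" unfolding tri_def by simp
lemma ramp_zero: "r \<le> z \<Longrightarrow> ramp r z = 0" unfolding ramp_def by simp
lemma hat_zero1: "z \<le> 0 \<Longrightarrow> hat r z = 0" unfolding hat_def by simp
lemma hat_zero2: "r \<le> z \<Longrightarrow> hat r z = 0" unfolding hat_def by simp
lemma hat_small: "0 \<le> z \<Longrightarrow> 2 * z \<le> r \<Longrightarrow> hat r z = z" unfolding hat_def by simp
lemma ramp_val: "z \<le> r \<Longrightarrow> ramp r z = r - z" unfolding ramp_def by simp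
lemma tri_val: "\<bar>z\<bar> \<le> r \<Longrightarrow> tri r z = r - \<bar>z\<bar>" unfolding tri_def by simp

lemma PLR_tri_shift: "r > 0 \<Longrightarrow> PLR (\<lambda>t. tri r (t - c))" using PLR_shift[OF PLR_tri] by blast
lemma PLR_ramp_refl: "PLR (\<lambda>t. ramp r (c - t))" using PLR_refl[OF PLR_ramp] by blast
lemma PLR_hat_shift: "r > 0 \<Longrightarrow> PLR (\<lambda>t. hat r (t - c))" using PLR_shift[OF PLR_hat] by blast
lemma PLR_hat_refl: "r > 0 \<Longrightarrow> PLR (\<lambda>t. hat r (c - t))" using PLR_refl[OF PLR_hat] by blast

context setting
begin

lemma Lr_fin: "e \<in> edges G \<Longrightarrow> len G e \<noteq> \<infinity> \<Longrightarrow> len G e = ereal (Lr G e) \<and> Lr G e > 0"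
  unfolding Lr_def using len_fin by blast

lemma br_finite: "finite (br G x)"
proof (cases x)
  case (Vtx v)
  have "br G x \<subseteq> (\<lambda>e. (e, 1, 0)) ` edges G \<union> (\<lambda>e. (e, -1, Lr G e)) ` edges G"
    unfolding br_def Vtx by auto
  then show ?thesis by (rule finite_subset) (use fin_edges in auto)
next
  case (Ein e t) then show ?thesis unfolding br_def by simp
qed

lemma br_props:
  assumes x: "x \<in> pts_fin G" and g: "good G x \<rho>" and b: "b \<in> br G x"
  shows "fst b \<in> edges G \<and> (fst (snd b) = 1 \<or> fst (snd b) = -1) \<and> pt G (fst b) (snd (snd b)) = x \<and>
         (\<forall>r. 0 \<le> r \<longrightarrow> r \<le> \<rho> \<longrightarrow> 0 \<le> snd (snd b) + fst (snd b) * r \<and> ereal (snd (snd b) + fst (snd b) * r) \<le> len G (fst b))"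
proof (cases x)
  case (Ein e0 t0)
  then have e0: "e0 \<in> edges G" "0 < t0" "ereal t0 < len G e0" using x unfolding pts_fin_def by auto
  have gg: "\<rho> \<le> t0" "ereal (t0 + \<rho>) \<le> len G e0" using g Ein unfolding good_def by auto
  have "ereal (t0 + r) \<le> len G e0" if "0 \<le> r" "r \<le> \<rho>" for r
    using gg(2) that by (metis add_left_mono ereal_less_eq(3) order.trans)
  moreover have "ereal (t0 - r) \<le> len G e0" if "0 \<le> r" for r
    using e0(3) that by (metis diff_ge_0_iff_ge diff_le_eq ereal_less_eq(3) le_add_same_cancel1 less_imp_le order.trans)
  ultimately show ?thesis using b Ein e0 gg pt_Ein[OF e0(2,3)] unfolding br_def by auto
next
  case (Vtx v)
  from b consider (s) e where "b = (e, 1, 0)" "e \<in> edges G" "src G e = v"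
    | (t) e where "b = (e, -1, Lr G e)" "e \<in> edges G" "tgt G e = v" "len G e \<noteq> \<infinity>"
    unfolding br_def Vtx by auto
  then show ?thesis
  proof cases
    case s
    have "ereal r \<le> len G e" if "0 \<le> r" "r \<le> \<rho>" for r
    proof (cases "len G e = \<infinity>")
      case False
      then have "len G e = ereal (Lr G e)" "2 * \<rho> \<le> Lr G e" using Lr_fin[OF s(2)] g s(2) unfolding good_def by auto
      then show ?thesis using that g unfolding good_def by auto
    qed simp
    then show ?thesis using s Vtx pt_0 by auto
  next
    case t
    have L: "len G e = ereal (Lr G e)" "2 * \<rho> \<le> Lr G e" "0 < \<rho>" using Lr_fin[OF t(2,4)] g t(2,4) unfolding good_def by auto
    have "0 \<le> Lr G e - r \<and> ereal (Lr G e - r) \<le> len G e" if "0 \<le> r" "r \<le> \<rho>" for r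
      using L that by auto
    then show ?thesis using t Vtx pt_L[OF t(2) L(1)[symmetric]] by auto
  qed
qed

lemma bpt_0: "x \<in> pts_fin G \<Longrightarrow> good G x \<rho> \<Longrightarrow> b \<in> br G x \<Longrightarrow> bpt G b 0 = x"
  using br_props unfolding bpt_def by auto

lemma bpt_fin: "x \<in> pts_fin G \<Longrightarrow> good G x \<rho> \<Longrightarrow> b \<in> br G x \<Longrightarrow> 0 \<le> r \<Longrightarrow> r \<le> \<rho> \<Longrightarrow> bpt G b r \<in> pts_fin G"
  using br_props pt_in_fin unfolding bpt_def by blast

lemma bpt_chain:
  assumes "x \<in> pts_fin G" "good G x \<rho>" "b \<in> br G x" "0 \<le> r1" "r1 \<le> \<rho>" "0 \<le> r2" "r2 \<le> \<rho>"
  shows "gchain G (bpt G b r1) [(fst b, snd (snd b) + fst (snd b) * r1, snd (snd b) + fst (snd b) * r2)] (bpt G b r2)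
     \<and> clen [(fst b, snd (snd b) + fst (snd b) * r1, snd (snd b) + fst (snd b) * r2)] = \<bar>r1 - r2\<bar>"
proof -
  have p: "fst (snd b) = 1 \<or> fst (snd b) = -1" using br_props assms(1-3) by blast
  have "\<bar>fst (snd b) * r1 - fst (snd b) * r2\<bar> = \<bar>r1 - r2\<bar>" using p by (auto simp: abs_minus_commute)
  then show ?thesis using br_props[OF assms(1-3)] assms(4-7) unfolding bpt_def by auto
qed

lemma Tfun_pt:
  assumes x: "x \<in> pts_fin G" and g: "good G x \<rho>" and e: "e \<in> edges G" and t: "0 \<le> t" "ereal t \<le> len G e"
  shows "Tfun G x \<rho> (pt G e t) = TF G x \<rho> e t"
proof -
  have r0: "0 < \<rho>" using g unfolding good_def by simp
  consider "t = 0" | "t \<noteq> 0" "ereal t = len G e" | "t \<noteq> 0" "ereal t \<noteq> len G e" by blast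
  then show ?thesis
  proof cases
    case 1
    show ?thesis
    proof (cases x)
      case (Ein e0 t0)
      have "\<rho> \<le> t0" using g Ein unfolding good_def by simp
      then show ?thesis using 1 Ein unfolding Tfun_def TF_def pt_def by (auto simp: tri_zero)
    next
      case (Vtx v)
      show ?thesis
      proof (cases "tgt G e = v \<and> len G e \<noteq> \<infinity>")
        case True
        then have "2 * \<rho> \<le> Lr G e" using g e unfolding good_def by auto
        then show ?thesis using 1 Vtx True r0 unfolding Tfun_def TF_def pt_def by (auto simp: ramp_zero ramp_val)
      next
        case False
        then show ?thesis using 1 Vtx r0 unfolding Tfun_def TF_def pt_def by (auto simp: ramp_val)
      qed
    qed
  next
    case 2
    then have "len G e = ereal t" by simp
    then have Lf: "len G e \<noteq> \<infinity>" "Lr G e = t" unfolding Lr_def by auto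
    have L2: "2 * \<rho> \<le> Lr G e" using g e Lf unfolding good_def by auto
    show ?thesis
    proof (cases x)
      case (Ein e0 t0)
      have "ereal (t0 + \<rho>) \<le> len G e0" using g Ein unfolding good_def by simp
      then have "e = e0 \<Longrightarrow> t0 + \<rho> \<le> t" using 2 by (metis ereal_less_eq(3))
      then have "e = e0 \<Longrightarrow> \<rho> \<le> \<bar>t - t0\<bar>" by auto
      then show ?thesis using 2 Ein unfolding Tfun_def TF_def pt_def by (auto simp: tri_zero)
    next
      case (Vtx v)
      show ?thesis using 2 Vtx Lf L2 r0 unfolding Tfun_def TF_def pt_def by (auto simp: ramp_zero ramp_val)
    qed
  next
    case 3
    then show ?thesis unfolding Tfun_def pt_def by simp
  qed
qed

lemma Pfun_pt:
  assumes x: "x \<in> pts_fin G" and g: "good G x \<rho>" and e: "e \<in> edges G" and t: "0 \<le> t" "ereal t \<le> len G e"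
  shows "Pfun G x \<rho> b (pt G e t) = PF G x \<rho> b e t"
proof -
  have r0: "0 < \<rho>" using g unfolding good_def by simp
  consider "t = 0" | "t \<noteq> 0" "ereal t = len G e" | "t \<noteq> 0" "ereal t \<noteq> len G e" by blast
  then show ?thesis
  proof cases
    case 1
    show ?thesis
    proof (cases x)
      case (Ein e0 t0)
      have "\<rho> \<le> t0" using g Ein unfolding good_def by simp
      then show ?thesis using 1 Ein r0 unfolding Pfun_def PF_def pt_def by (auto simp: hat_zero1 hat_zero2)
    next
      case (Vtx v)
      show ?thesis
      proof (cases "tgt G e = v \<and> len G e \<noteq> \<infinity>")
        case True
        then have "2 * \<rho> \<le> Lr G e" using g e unfolding good_def by auto
        then show ?thesis using 1 Vtx True r0 unfolding Pfun_def PF_def pt_def by (auto simp: hat_zero1 hat_zero2)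
      next
        case False
        then show ?thesis using 1 Vtx r0 unfolding Pfun_def PF_def pt_def by (auto simp: hat_zero1)
      qed
    qed
  next
    case 2
    then have "len G e = ereal t" by simp
    then have Lf: "len G e \<noteq> \<infinity>" "Lr G e = t" unfolding Lr_def by auto
    have L2: "2 * \<rho> \<le> Lr G e" using g e Lf unfolding good_def by auto
    show ?thesis
    proof (cases x)
      case (Ein e0 t0)
      have "ereal (t0 + \<rho>) \<le> len G e0" using g Ein unfolding good_def by simp
      then have "e = e0 \<Longrightarrow> t0 + \<rho> \<le> t" using 2 by (metis ereal_less_eq(3))
      then have "e = e0 \<Longrightarrow> \<rho> \<le> t - t0" by auto
      then show ?thesis using 2 Ein r0 unfolding Pfun_def PF_def pt_def by (auto simp: hat_zero1 hat_zero2)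
    next
      case (Vtx v)
      show ?thesis using 2 Vtx Lf L2 r0 unfolding Pfun_def PF_def pt_def by (auto simp: hat_zero1 hat_zero2)
    qed
  next
    case 3
    then show ?thesis unfolding Pfun_def pt_def by simp
  qed
qed

lemma TF_lip:
  assumes g: "good G x \<rho>" and e: "e \<in> edges G"
  shows "\<bar>TF G x \<rho> e a - TF G x \<rho> e b\<bar> \<le> \<bar>a - b\<bar>"
proof (cases x)
  case (Ein e0 t0)
  then show ?thesis unfolding TF_def using tri_lip[of \<rho> "a - t0" "b - t0"] by auto
next
  case (Vtx v)
  show ?thesis
  proof (cases "tgt G e = v \<and> len G e \<noteq> \<infinity>")
    case True
    then have L2: "2 * \<rho> \<le> Lr G e" using g e unfolding good_def by auto
    define f where "f = (\<lambda>t. if src G e = v then ramp \<rho> t else 0)"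
    define h where "h = (\<lambda>t. ramp \<rho> (Lr G e - t))"
    have "\<bar>(f a + h a) - (f b + h b)\<bar> \<le> \<bar>a - b\<bar>"
    proof (rule lip_split[where m = "Lr G e / 2"])
      show "\<bar>f a - f b\<bar> \<le> \<bar>a - b\<bar>" for a b unfolding f_def using ramp_lip by auto
      show "\<bar>h a - h b\<bar> \<le> \<bar>a - b\<bar>" for a b unfolding h_def using ramp_lip[of \<rho> "Lr G e - a" "Lr G e - b"] by simp
      show "f t = 0" if "Lr G e / 2 \<le> t" for t unfolding f_def using that L2 by (auto intro!: ramp_zero)
      show "h t = 0" if "t \<le> Lr G e / 2" for t unfolding h_def using that L2 by (auto intro!: ramp_zero)
    qed
    then show ?thesis using True Vtx unfolding TF_def f_def h_def by simp
  next
    case False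
    then show ?thesis using Vtx unfolding TF_def using ramp_lip[of \<rho> a b] by auto
  qed
qed

lemma hatdiff_lip: "\<bar>(hat \<rho> (a - t0) + - hat \<rho> (t0 - a)) - (hat \<rho> (b - t0) + - hat \<rho> (t0 - b))\<bar> \<le> \<bar>a - b\<bar>"
proof (rule lip_split[where m = t0 and f = "\<lambda>t. - hat \<rho> (t0 - t)" and g = "\<lambda>t. hat \<rho> (t - t0)", simplified add.commute])
  show "\<bar>- hat \<rho> (t0 - a) - - hat \<rho> (t0 - b)\<bar> \<le> \<bar>a - b\<bar>" for a b
    using hat_lip[of \<rho> "t0 - a" "t0 - b"] by (simp add: abs_minus_commute)
  show "\<bar>hat \<rho> (a - t0) - hat \<rho> (b - t0)\<bar> \<le> \<bar>a - b\<bar>" for a b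
    using hat_lip[of \<rho> "a - t0" "b - t0"] by simp
  show "- hat \<rho> (t0 - t) = 0" if "t0 \<le> t" for t using that by (simp add: hat_zero1)
  show "hat \<rho> (t - t0) = 0" if "t \<le> t0" for t using that by (simp add: hat_zero1)
qed

lemma PF_lip:
  assumes g: "good G x \<rho>" and e: "e \<in> edges G"
  shows "\<bar>PF G x \<rho> b e a - PF G x \<rho> b e c\<bar> \<le> \<bar>a - c\<bar>"
proof (cases x)
  case (Ein e0 t0)
  show ?thesis using hatdiff_lip[of \<rho> a t0 c] Ein unfolding PF_def by (auto simp: abs_minus_commute)
next
  case (Vtx v)
  show ?thesis
  proof (cases "tgt G e = v \<and> len G e \<noteq> \<infinity>")
    case True
    then have L2: "2 * \<rho> \<le> Lr G e" using g e unfolding good_def by auto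
    define f where "f = (\<lambda>t. if src G e = v then (if b = (e, 1, 0) then hat \<rho> t else - hat \<rho> t) else 0)"
    define h where "h = (\<lambda>t. if b = (e, -1, Lr G e) then hat \<rho> (Lr G e - t) else - hat \<rho> (Lr G e - t))"
    have "\<bar>(f a + h a) - (f c + h c)\<bar> \<le> \<bar>a - c\<bar>"
    proof (rule lip_split[where m = "Lr G e / 2"])
      show "\<bar>f a - f b\<bar> \<le> \<bar>a - b\<bar>" for a b unfolding f_def using hat_lip[of \<rho> a b] by (auto simp: abs_minus_commute)
      show "\<bar>h a - h b\<bar> \<le> \<bar>a - b\<bar>" for a b unfolding h_def using hat_lip[of \<rho> "Lr G e - a" "Lr G e - b"]
        by (auto simp: abs_minus_commute)
      show "f t = 0" if "Lr G e / 2 \<le> t" for t unfolding f_def using that L2 by (auto simp: hat_zero2)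
      show "h t = 0" if "t \<le> Lr G e / 2" for t unfolding h_def using that L2 by (auto simp: hat_zero2)
    qed
    then show ?thesis using True Vtx unfolding PF_def f_def h_def by simp
  next
    case False
    then show ?thesis using Vtx unfolding PF_def using hat_lip[of \<rho> a c] by (auto simp: abs_minus_commute)
  qed
qed

lemma Tfun_lip: assumes "x \<in> pts_fin G" "good G x \<rho>" shows "edge_lip G (Tfun G x \<rho>) 1"
  unfolding edge_lip_def using Tfun_pt[OF assms] TF_lip[OF assms(2)] by simp

lemma Pfun_lip: assumes "x \<in> pts_fin G" "good G x \<rho>" shows "edge_lip G (Pfun G x \<rho> b) 1"
  unfolding edge_lip_def using Pfun_pt[OF assms] PF_lip[OF assms(2)] by simp

lemma TF_PLR: assumes "good G x \<rho>" shows "PLR (TF G x \<rho> e)"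
proof -
  have r0: "\<rho> > 0" using assms unfolding good_def by simp
  show ?thesis
  proof (cases x)
    case (Ein e0 t0)
    have "PLR (\<lambda>t. if e = e0 then tri \<rho> (t - t0) else 0)"
      by (intro PLR_if PLR_tri_shift r0 PLR_const)
    then show ?thesis unfolding TF_def Ein by simp
  next
    case (Vtx v)
    have "PLR (\<lambda>t. (if src G e = v then ramp \<rho> t else 0) +
               (if tgt G e = v \<and> len G e \<noteq> \<infinity> then ramp \<rho> (Lr G e - t) else 0))"
      by (intro PLR_add PLR_if PLR_ramp_refl PLR_ramp PLR_const)
    then show ?thesis unfolding TF_def Vtx by simp
  qed
qed

lemma PF_PLR: assumes "good G x \<rho>" shows "PLR (PF G x \<rho> b e)"
proof -
  have r0: "\<rho> > 0" using assms unfolding good_def by simp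
  have hs: "PLR (\<lambda>t. hat \<rho> (t - c))" for c by (rule PLR_hat_shift[OF r0])
  have hr: "PLR (\<lambda>t. hat \<rho> (c - t))" for c by (rule PLR_hat_refl[OF r0])
  show ?thesis
  proof (cases x)
    case (Ein e0 t0)
    have "PLR (\<lambda>t. if e = e0 then (if 0 < fst (snd b) then hat \<rho> (t - t0) + - hat \<rho> (t0 - t)
                        else - (hat \<rho> (t - t0) + - hat \<rho> (t0 - t))) else 0)"
      by (intro PLR_if PLR_add PLR_neg hs hr PLR_const)
    then show ?thesis unfolding PF_def Ein by simp
  next
    case (Vtx v)
    have h0: "PLR (hat \<rho>)" by (rule PLR_hat[OF r0])
    have "PLR (\<lambda>t. (if src G e = v then (if b = (e, 1, 0) then hat \<rho> t else - hat \<rho> t) else 0) +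
               (if tgt G e = v \<and> len G e \<noteq> \<infinity> then
                   (if b = (e, -1, Lr G e) then hat \<rho> (Lr G e - t) else - hat \<rho> (Lr G e - t)) else 0))"
      by (intro PLR_add PLR_if PLR_neg hr PLR_const h0)
    then show ?thesis unfolding PF_def Vtx by simp
  qed
qed

lemma Tfun_rat: assumes "x \<in> pts_fin G" "good G x \<rho>" shows "rat_real_fun G (Tfun G x \<rho>)"
  unfolding rat_real_fun_def
proof
  fix e assume e: "e \<in> edges G"
  have "pw_affine_int (TF G x \<rho> e) (len G e)" using PLR_pw[OF TF_PLR[OF assms(2)]] edge_props[OF e] by blast
  then show "pw_affine_int (\<lambda>t. Tfun G x \<rho> (pt G e t)) (len G e)"
    by (rule pw_cong) (use edge_props[OF e] Tfun_pt[OF assms e] in auto)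
qed

lemma Pfun_rat: assumes "x \<in> pts_fin G" "good G x \<rho>" shows "rat_real_fun G (Pfun G x \<rho> b)"
  unfolding rat_real_fun_def
proof
  fix e assume e: "e \<in> edges G"
  have "pw_affine_int (PF G x \<rho> b e) (len G e)" using PLR_pw[OF PF_PLR[OF assms(2)]] edge_props[OF e] by blast
  then show "pw_affine_int (\<lambda>t. Pfun G x \<rho> b (pt G e t)) (len G e)"
    by (rule pw_cong) (use edge_props[OF e] Pfun_pt[OF assms e] in auto)
qed

end


context setting
begin

lemma bpt_chain_ex:
  assumes "x \<in> pts_fin G" "good G x \<rho>" "b \<in> br G x" "0 \<le> r1" "r1 \<le> \<rho>" "0 \<le> r2" "r2 \<le> \<rho>"
  shows "\<exists>cs. gchain G (bpt G b r1) cs (bpt G b r2) \<and> clen cs = \<bar>r1 - r2\<bar>"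
  using bpt_chain[OF assms] by blast

lemma good_pos: "good G x \<rho> \<Longrightarrow> \<rho> > 0" unfolding good_def by simp

lemma Ein_fin: "Ein e t \<in> pts_fin G \<Longrightarrow> e \<in> edges G \<and> 0 < t \<and> ereal t < len G e"
  unfolding pts_fin_def by auto

lemma Ein_lt: "Ein e t \<in> pts_fin G \<Longrightarrow> len G e \<noteq> \<infinity> \<Longrightarrow> t < Lr G e"
  using Ein_fin Lr_fin by (metis less_ereal.simps(1))

lemma T_at_x: assumes "x \<in> pts_fin G" "good G x \<rho>" shows "Tfun G x \<rho> x = \<rho>"
proof (cases x)
  case (Ein e0 t0) then show ?thesis using good_pos[OF assms(2)] unfolding Tfun_def TF_def tri_def by simp
qed (simp add: Tfun_def)

lemma T_pos:
  assumes x: "x \<in> pts_fin G" and g: "good G x \<rho>" and w: "w \<in> pts_fin G" and pos: "Tfun G x \<rho> w > 0"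
  shows "w = x \<or> (\<exists>b\<in>br G x. \<exists>r. 0 < r \<and> r < \<rho> \<and> w = bpt G b r \<and> Tfun G x \<rho> w = \<rho> - r)"
proof (cases w)
  case (Vtx u)
  then show ?thesis using pos unfolding Tfun_def by (auto split: if_splits)
next
  case (Ein e t)
  note wE = Ein
  have et: "e \<in> edges G" "0 < t" "ereal t < len G e" using Ein_fin w wE by auto
  have r0: "\<rho> > 0" using good_pos[OF g] .
  show ?thesis
  proof (cases x)
    case (Ein e0 t0)
    note xE = Ein
    have tw: "Tfun G x \<rho> w = (if e = e0 then tri \<rho> (t - t0) else 0)" unfolding Tfun_def TF_def wE xE by simp
    then have ee: "e = e0" "\<bar>t - t0\<bar> < \<rho>" using pos unfolding tri_def by (auto split: if_splits)
    consider "t = t0" | "t > t0" | "t < t0" by linarith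
    then show ?thesis
    proof cases
      case 1 then show ?thesis using wE xE ee by simp
    next
      case 2
      have "(e0, 1, t0) \<in> br G x" unfolding br_def xE by simp
      moreover have "w = bpt G (e0, 1, t0) (t - t0)" unfolding bpt_def using pt_Ein[OF et(2,3)] wE ee by simp
      ultimately show ?thesis using 2 ee tw tri_val[of "t - t0" \<rho>] by (intro disjI2 bexI[of _ "(e0, 1, t0)"] exI[of _ "t - t0"]) auto
    next
      case 3
      have "(e0, -1, t0) \<in> br G x" unfolding br_def xE by simp
      moreover have "w = bpt G (e0, -1, t0) (t0 - t)" unfolding bpt_def using pt_Ein[OF et(2,3)] wE ee by simp
      ultimately show ?thesis using 3 ee tw tri_val[of "t - t0" \<rho>] by (intro disjI2 bexI[of _ "(e0, -1, t0)"] exI[of _ "t0 - t"]) auto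
    qed
  next
    case (Vtx v)
    have tw: "Tfun G x \<rho> w = (if src G e = v then ramp \<rho> t else 0) +
               (if tgt G e = v \<and> len G e \<noteq> \<infinity> then ramp \<rho> (Lr G e - t) else 0)"
      unfolding Tfun_def TF_def wE Vtx by simp
    show ?thesis
    proof (cases "src G e = v \<and> t < \<rho>")
      case True
      have A: "ramp \<rho> t = \<rho> - t" using True by (simp add: ramp_val)
      have B: "tgt G e = v \<and> len G e \<noteq> \<infinity> \<Longrightarrow> ramp \<rho> (Lr G e - t) = 0"
      proof -
        assume c: "tgt G e = v \<and> len G e \<noteq> \<infinity>"
        then have "2 * \<rho> \<le> Lr G e" using g et unfolding good_def by auto
        then show ?thesis using True by (intro ramp_zero) auto
      qed
      have "(e, 1, 0) \<in> br G x" unfolding br_def Vtx using True et by simp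
      moreover have "w = bpt G (e, 1, 0) t" unfolding bpt_def using pt_Ein[OF et(2,3)] wE by simp
      ultimately show ?thesis using True tw A B et by (intro disjI2 bexI[of _ "(e, 1, 0)"] exI[of _ t]) auto
    next
      case False
      then have A: "(if src G e = v then ramp \<rho> t else 0) = 0" by (auto simp: ramp_zero)
      then have c: "tgt G e = v \<and> len G e \<noteq> \<infinity>" and rp: "ramp \<rho> (Lr G e - t) > 0" using pos tw by (auto split: if_splits)
      have L: "len G e = ereal (Lr G e)" using Lr_fin[OF et(1)] c by simp
      have tL: "t < Lr G e" using Ein_lt w wE c by simp
      have lt: "Lr G e - t < \<rho>" using rp unfolding ramp_def by (auto simp: max_def split: if_splits)
      have "(e, -1, Lr G e) \<in> br G x" unfolding br_def Vtx using c et by simp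
      moreover have "w = bpt G (e, -1, Lr G e) (Lr G e - t)" unfolding bpt_def using pt_Ein[OF et(2,3)] wE by simp
      ultimately show ?thesis using tw A c tL lt ramp_val[of "Lr G e - t" \<rho>]
        by (intro disjI2 bexI[of _ "(e, -1, Lr G e)"] exI[of _ "Lr G e - t"]) auto
    qed
  qed
qed

lemma T_bpt:
  assumes x: "x \<in> pts_fin G" and g: "good G x \<rho>" and b: "b \<in> br G x" and r: "0 \<le> r" "r \<le> \<rho>"
  shows "Tfun G x \<rho> (bpt G b r) = \<rho> - r"
proof -
  have bp: "fst b \<in> edges G" "0 \<le> snd (snd b) + fst (snd b) * r" "ereal (snd (snd b) + fst (snd b) * r) \<le> len G (fst b)"
    using br_props[OF x g b] r by auto
  have eq: "Tfun G x \<rho> (bpt G b r) = TF G x \<rho> (fst b) (snd (snd b) + fst (snd b) * r)"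
    unfolding bpt_def using Tfun_pt[OF x g bp] .
  show ?thesis
  proof (cases x)
    case (Ein e0 t0)
    then have "b = (e0, 1, t0) \<or> b = (e0, -1, t0)" using b unfolding br_def by simp
    then show ?thesis using eq Ein r by (auto simp: TF_def tri_val)
  next
    case (Vtx v)
    from b consider (s) e where "b = (e, 1, 0)" "e \<in> edges G" "src G e = v"
      | (t) e where "b = (e, -1, Lr G e)" "e \<in> edges G" "tgt G e = v" "len G e \<noteq> \<infinity>"
      unfolding br_def Vtx by auto
    then show ?thesis
    proof cases
      case s
      have "tgt G e = v \<and> len G e \<noteq> \<infinity> \<Longrightarrow> ramp \<rho> (Lr G e - r) = 0"
        using g s(2) r unfolding good_def by (intro ramp_zero) auto
      then show ?thesis using eq s r Vtx by (auto simp: TF_def ramp_val)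
    next
      case t
      have "2 * \<rho> \<le> Lr G e" using g t unfolding good_def by auto
      then have "src G e = v \<Longrightarrow> ramp \<rho> (Lr G e - r) = 0" using r by (intro ramp_zero) auto
      then show ?thesis using eq t r Vtx by (auto simp: TF_def ramp_val)
    qed
  qed
qed

lemma T_eq:
  assumes x: "x \<in> pts_fin G" and g: "good G x \<rho>" and w: "w \<in> pts_fin G" and eq: "Tfun G x \<rho> w = \<rho>"
  shows "w = x"
proof -
  have "Tfun G x \<rho> w > 0" using eq good_pos[OF g] by simp
  from T_pos[OF x g w this] show ?thesis using eq by auto
qed

lemma P_bpt:
  assumes x: "x \<in> pts_fin G" and g: "good G x \<rho>" and b: "b \<in> br G x" and b': "b' \<in> br G x"
    and r: "0 \<le> r" "2 * r \<le> \<rho>"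
  shows "Pfun G x \<rho> b (bpt G b' r) = (if b' = b then r else - r)"
proof -
  have r0: "\<rho> > 0" using good_pos[OF g] .
  have rr: "r \<le> \<rho>" using r r0 by simp
  have bp: "fst b' \<in> edges G" "0 \<le> snd (snd b') + fst (snd b') * r" "ereal (snd (snd b') + fst (snd b') * r) \<le> len G (fst b')"
    using br_props[OF x g b'] r rr by auto
  have eq: "Pfun G x \<rho> b (bpt G b' r) = PF G x \<rho> b (fst b') (snd (snd b') + fst (snd b') * r)"
    unfolding bpt_def using Pfun_pt[OF x g bp] .
  have hr: "hat \<rho> r = r" using r by (simp add: hat_small)
  have hm: "hat \<rho> (- r) = 0" using r by (simp add: hat_zero1)
  show ?thesis
  proof (cases x)
    case (Ein e0 t0)
    then have "b = (e0, 1, t0) \<or> b = (e0, -1, t0)" "b' = (e0, 1, t0) \<or> b' = (e0, -1, t0)"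
      using b b' unfolding br_def by auto
    then show ?thesis using eq Ein hr hm by (auto simp: PF_def)
  next
    case (Vtx v)
    have hL: "hat \<rho> (Lr G e - r) = 0" if "e \<in> edges G" "len G e \<noteq> \<infinity>" for e
    proof -
      have "2 * \<rho> \<le> Lr G e" using g that unfolding good_def by auto
      then show ?thesis using r by (intro hat_zero2) auto
    qed
    from b' consider (s) e where "b' = (e, 1, 0)" "e \<in> edges G" "src G e = v"
      | (t) e where "b' = (e, -1, Lr G e)" "e \<in> edges G" "tgt G e = v" "len G e \<noteq> \<infinity>"
      unfolding br_def Vtx by auto
    then show ?thesis
    proof cases
      case s
      then show ?thesis using eq Vtx hr hL[OF s(2)] by (auto simp: PF_def)
    next
      case t
      then show ?thesis using eq Vtx hr hL[OF t(2,4)] by (auto simp: PF_def)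
    qed
  qed
qed

lemma G1:
  assumes x: "x \<in> pts_fin G" and g: "good G x \<rho>" and b: "b \<in> br G x" and r: "0 \<le> r" "r \<le> \<rho>"
  shows "gdist G x (bpt G b r) = r"
proof -
  have r0: "0 \<le> \<rho>" using good_pos[OF g] by simp
  obtain cs where cs: "gchain G x cs (bpt G b r)" "clen cs = r"
    using bpt_chain[OF x g b _ r0 r] bpt_0[OF x g b] r by fastforce
  have "gdist G x (bpt G b r) \<le> r" using gdist_le[OF cs(1)] cs(2) by simp
  moreover have "\<bar>Tfun G x \<rho> x - Tfun G x \<rho> (bpt G b r)\<bar> \<le> gdist G x (bpt G b r)"
    using gdist_lip[OF Tfun_lip[OF x g]] cs(1) by blast
  then have "r \<le> gdist G x (bpt G b r)" using T_at_x[OF x g] T_bpt[OF x g b r] r by simp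
  ultimately show ?thesis by simp
qed

lemma G2:
  assumes x: "x \<in> pts_fin G" and g: "good G x \<rho>" and w: "w \<in> pts_fin G" and d: "gdist G x w < \<rho>"
  shows "w = x \<or> (\<exists>b\<in>br G x. \<exists>r. 0 < r \<and> r < \<rho> \<and> w = bpt G b r)"
proof -
  have "\<bar>Tfun G x \<rho> x - Tfun G x \<rho> w\<bar> \<le> gdist G x w"
    using gdist_lip[OF Tfun_lip[OF x g] chain_exists[OF x w]] .
  then have "Tfun G x \<rho> w > 0" using T_at_x[OF x g] d by simp
  then show ?thesis using T_pos[OF x g w] by blast
qed

lemma G3:
  assumes x: "x \<in> pts_fin G" and g: "good G x \<rho>" and b1: "b1 \<in> br G x" and b2: "b2 \<in> br G x"
    and r1: "0 \<le> r1" "2 * r1 \<le> \<rho>" and r2: "0 \<le> r2" "2 * r2 \<le> \<rho>"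
  shows "gdist G (bpt G b1 r1) (bpt G b2 r2) = (if b1 = b2 then \<bar>r1 - r2\<bar> else r1 + r2)"
proof -
  have r0: "0 < \<rho>" using good_pos[OF g] .
  have r1': "r1 \<le> \<rho>" and r2': "r2 \<le> \<rho>" using r1 r2 r0 by auto
  obtain cs where cs: "gchain G (bpt G b1 r1) cs (bpt G b2 r2)" "clen cs = (if b1 = b2 then \<bar>r1 - r2\<bar> else r1 + r2)"
  proof (cases "b1 = b2")
    case True
    define cl where "cl = [(fst b1, snd (snd b1) + fst (snd b1) * r1, snd (snd b1) + fst (snd b1) * r2)]"
    note bc = bpt_chain[OF x g b1 r1(1) r1' r2(1) r2', folded cl_def]
    show ?thesis
    proof (rule that)
      show "gchain G (bpt G b1 r1) cl (bpt G b2 r2)" using bc True by simp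
      show "clen cl = (if b1 = b2 then \<bar>r1 - r2\<bar> else r1 + r2)" using bc True by simp
    qed
  next
    case False
    obtain c1 where c1: "gchain G (bpt G b1 r1) c1 (bpt G b1 0)" "clen c1 = r1"
      using bpt_chain_ex[OF x g b1 r1(1) r1' order.refl less_imp_le[OF r0]] r1 by auto
    obtain c2 where c2: "gchain G (bpt G b2 0) c2 (bpt G b2 r2)" "clen c2 = r2"
      using bpt_chain_ex[OF x g b2 order.refl less_imp_le[OF r0] r2(1) r2'] r2 by auto
    have "gchain G (bpt G b1 r1) (c1 @ c2) (bpt G b2 r2)"
      using gchain_append c1(1) c2(1) bpt_0[OF x g b1] bpt_0[OF x g b2] by metis
    then show ?thesis using that c1 c2 False clen_append by auto
  qed
  have "\<bar>Pfun G x \<rho> b1 (bpt G b1 r1) - Pfun G x \<rho> b1 (bpt G b2 r2)\<bar> \<le> gdist G (bpt G b1 r1) (bpt G b2 r2)"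
    using gdist_lip[OF Pfun_lip[OF x g]] cs(1) by blast
  then have "(if b1 = b2 then \<bar>r1 - r2\<bar> else r1 + r2) \<le> gdist G (bpt G b1 r1) (bpt G b2 r2)"
    using P_bpt[OF x g b1 b1 r1] P_bpt[OF x g b1 b2 r2] r1 r2 by (auto split: if_splits)
  moreover have "gdist G (bpt G b1 r1) (bpt G b2 r2) \<le> (if b1 = b2 then \<bar>r1 - r2\<bar> else r1 + r2)"
    using gdist_le[OF cs(1)] cs(2) by simp
  ultimately show ?thesis by simp
qed

end


definition ivec :: "('n::finite \<Rightarrow> int) \<Rightarrow> real^'n" where
  "ivec z = (\<chi> i. real_of_int (z i))"

lemma ivec_nth[simp]: "ivec z $ i = real_of_int (z i)"
  unfolding ivec_def by simp

lemma prim_crit: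
  fixes z :: "'n::finite \<Rightarrow> int"
  assumes "(\<Sum>i\<in>UNIV. w i * z i) = 1"
  shows "Gcd (range z) = 1"
proof -
  have "Gcd (range z) dvd (\<Sum>i\<in>UNIV. w i * z i)"
    by (intro dvd_sum dvd_mult Gcd_dvd) auto
  then have "Gcd (range z) dvd 1" using assms by simp
  then show ?thesis using Gcd_int_greater_eq_0[of "range z"] by simp
qed

lemma two_affine:
  fixes \<alpha> \<beta> c1 c2 m1 m2 :: real
  assumes "\<alpha> < \<beta>"
  shows "\<exists>\<alpha>' \<beta>'. \<alpha> \<le> \<alpha>' \<and> \<alpha>' < \<beta>' \<and> \<beta>' \<le> \<beta> \<and>
     ((\<forall>t\<in>{\<alpha>'..\<beta>'}. c2 + m2 * t \<le> c1 + m1 * t) \<or> (\<forall>t\<in>{\<alpha>'..\<beta>'}. c1 + m1 * t \<le> c2 + m2 * t))"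
proof -
  define mid where "mid = (\<alpha> + \<beta>) / 2"
  have mid: "\<alpha> < mid" "mid < \<beta>" unfolding mid_def using assms by auto
  define d where "d = (\<lambda>t. (c1 + m1 * t) - (c2 + m2 * t))"
  have dt: "d t = d mid + (m1 - m2) * (t - mid)" for t unfolding d_def by (simp add: algebra_simps)
  consider "d mid \<ge> 0" "m1 - m2 \<ge> 0" | "d mid \<ge> 0" "m1 - m2 < 0" | "d mid < 0" "m1 - m2 \<ge> 0" | "d mid < 0" "m1 - m2 < 0"
    by linarith
  then show ?thesis
  proof cases
    case 1
    have "\<forall>t\<in>{mid..\<beta>}. c2 + m2 * t \<le> c1 + m1 * t"
    proof
      fix t assume "t \<in> {mid..\<beta>}"
      then have "(m1 - m2) * (t - mid) \<ge> 0" using 1 by (simp add: mult_nonneg_nonneg)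
      then have "d t \<ge> 0" using dt[of t] 1 by simp
      then show "c2 + m2 * t \<le> c1 + m1 * t" unfolding d_def by simp
    qed
    then show ?thesis using mid by (intro exI[of _ mid] exI[of _ \<beta>]) auto
  next
    case 2
    have "\<forall>t\<in>{\<alpha>..mid}. c2 + m2 * t \<le> c1 + m1 * t"
    proof
      fix t assume "t \<in> {\<alpha>..mid}"
      then have "(m1 - m2) * (t - mid) \<ge> 0" using 2 by (simp add: mult_nonpos_nonpos)
      then have "d t \<ge> 0" using dt[of t] 2 by simp
      then show "c2 + m2 * t \<le> c1 + m1 * t" unfolding d_def by simp
    qed
    then show ?thesis using mid by (intro exI[of _ \<alpha>] exI[of _ mid]) auto
  next
    case 3
    have "\<forall>t\<in>{\<alpha>..mid}. c1 + m1 * t \<le> c2 + m2 * t"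
    proof
      fix t assume "t \<in> {\<alpha>..mid}"
      then have "(m1 - m2) * (t - mid) \<le> 0" using 3 by (simp add: mult_nonneg_nonpos)
      then have "d t \<le> 0" using dt[of t] 3 by simp
      then show "c1 + m1 * t \<le> c2 + m2 * t" unfolding d_def by simp
    qed
    then show ?thesis using mid by (intro exI[of _ \<alpha>] exI[of _ mid]) auto
  next
    case 4
    have "\<forall>t\<in>{mid..\<beta>}. c1 + m1 * t \<le> c2 + m2 * t"
    proof
      fix t assume "t \<in> {mid..\<beta>}"
      then have "(m1 - m2) * (t - mid) \<le> 0" using 4 by (simp add: mult_nonpos_nonneg)
      then have "d t \<le> 0" using dt[of t] 4 by simp
      then show "c1 + m1 * t \<le> c2 + m2 * t" unfolding d_def by simp
    qed
    then show ?thesis using mid by (intro exI[of _ mid] exI[of _ \<beta>]) auto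
  qed
qed

lemma mono_line:
  "c + (\<Sum>i\<in>UNIV. real (a i) * (B + t *\<^sub>R D) $ i) = (c + (\<Sum>i\<in>UNIV. real (a i) * B $ i)) + t * (\<Sum>i\<in>UNIV. real (a i) * D $ i)"
  by (simp add: algebra_simps sum.distrib sum_distrib_left)

lemma slope_sub:
  fixes B D :: "real^'n::finite"
  assumes S: "finite S" and ab: "\<alpha> < \<beta>"
  shows "\<exists>\<alpha>' \<beta>'. \<alpha> \<le> \<alpha>' \<and> \<alpha>' < \<beta>' \<and> \<beta>' \<le> \<beta> \<and>
    ((\<forall>t\<in>{\<alpha>'..\<beta>'}. tp S (B + t *\<^sub>R D) = -\<infinity>) \<or>
     (\<exists>(a::'n \<Rightarrow> nat) C. \<forall>t\<in>{\<alpha>'..\<beta>'}. tp S (B + t *\<^sub>R D) = ereal (C + t * (\<Sum>i\<in>UNIV. real (a i) * D $ i))))"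
  using S
proof (induction S)
  case empty
  then show ?case using ab by (intro exI[of _ \<alpha>] exI[of _ \<beta>]) (auto simp: tp_empty)
next
  case (insert s S)
  obtain a0 c0 where s: "s = (a0, c0)" by (cases s)
  define C0 where "C0 = c0 + (\<Sum>i\<in>UNIV. real (a0 i) * B $ i)"
  define m0 where "m0 = (\<Sum>i\<in>UNIV. real (a0 i) * D $ i)"
  have ins: "tp (insert s S) (B + t *\<^sub>R D) = max (ereal (C0 + t * m0)) (tp S (B + t *\<^sub>R D))" for t
    unfolding tp_insert s C0_def m0_def by (simp add: algebra_simps sum.distrib sum_distrib_left)
  obtain \<alpha>' \<beta>' where ab': "\<alpha> \<le> \<alpha>'" "\<alpha>' < \<beta>'" "\<beta>' \<le> \<beta>" and
    alt: "(\<forall>t\<in>{\<alpha>'..\<beta>'}. tp S (B + t *\<^sub>R D) = -\<infinity>) \<or>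
     (\<exists>(a::'n \<Rightarrow> nat) C. \<forall>t\<in>{\<alpha>'..\<beta>'}. tp S (B + t *\<^sub>R D) = ereal (C + t * (\<Sum>i\<in>UNIV. real (a i) * D $ i)))"
    using insert.IH by blast
  from alt show ?case
  proof
    assume A: "\<forall>t\<in>{\<alpha>'..\<beta>'}. tp S (B + t *\<^sub>R D) = -\<infinity>"
    show ?case using ab' A ins unfolding m0_def by (intro exI[of _ \<alpha>'] exI[of _ \<beta>'] conjI disjI2 exI[of _ a0] exI[of _ C0]) auto
  next
    assume "\<exists>(a::'n \<Rightarrow> nat) C. \<forall>t\<in>{\<alpha>'..\<beta>'}. tp S (B + t *\<^sub>R D) = ereal (C + t * (\<Sum>i\<in>UNIV. real (a i) * D $ i))"
    then obtain a1 C1 where A: "\<forall>t\<in>{\<alpha>'..\<beta>'}. tp S (B + t *\<^sub>R D) = ereal (C1 + t * (\<Sum>i\<in>UNIV. real (a1 i) * D $ i))"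
      by blast
    define m1 where "m1 = (\<Sum>i\<in>UNIV. real (a1 i) * D $ i)"
    obtain \<alpha>'' \<beta>'' where ab'': "\<alpha>' \<le> \<alpha>''" "\<alpha>'' < \<beta>''" "\<beta>'' \<le> \<beta>'" and
      cmp: "(\<forall>t\<in>{\<alpha>''..\<beta>''}. C1 + t * m1 \<le> C0 + t * m0) \<or> (\<forall>t\<in>{\<alpha>''..\<beta>''}. C0 + t * m0 \<le> C1 + t * m1)"
      using two_affine[OF ab'(2), of C0 "m0" C1 m1] by (auto simp: mult.commute)
    have sub: "{\<alpha>''..\<beta>''} \<subseteq> {\<alpha>'..\<beta>'}" using ab'' by auto
    from cmp show ?case
    proof
      assume c: "\<forall>t\<in>{\<alpha>''..\<beta>''}. C1 + t * m1 \<le> C0 + t * m0"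
      have "\<forall>t\<in>{\<alpha>''..\<beta>''}. tp (insert s S) (B + t *\<^sub>R D) = ereal (C0 + t * m0)"
        using c A sub ins unfolding m1_def by (auto simp: max_def)
      then show ?case using ab' ab'' unfolding m0_def
        by (intro exI[of _ \<alpha>''] exI[of _ \<beta>''] conjI disjI2 exI[of _ a0] exI[of _ C0]) auto
    next
      assume c: "\<forall>t\<in>{\<alpha>''..\<beta>''}. C0 + t * m0 \<le> C1 + t * m1"
      have "\<forall>t\<in>{\<alpha>''..\<beta>''}. tp (insert s S) (B + t *\<^sub>R D) = ereal (C1 + t * m1)"
        using c A sub ins unfolding m1_def by (auto simp: max_def)
      then show ?case using ab' ab'' unfolding m1_def
        by (intro exI[of _ \<alpha>''] exI[of _ \<beta>''] conjI disjI2 exI[of _ a1] exI[of _ C1]) auto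
    qed
  qed
qed

lemma sum_nat_int:
  "(\<Sum>i\<in>UNIV. real (a i) * ivec z $ i) = real_of_int (\<Sum>i\<in>UNIV. int (a i) * z i)"
  by simp

lemma prim_of_TRat:
  fixes z :: "'n::finite \<Rightarrow> int"
  assumes f: "f \<in> TRat" and ab: "\<alpha> < \<beta>"
    and eq: "\<And>t. \<alpha> < t \<Longrightarrow> t < \<beta> \<Longrightarrow> f (B + t *\<^sub>R ivec z) = ereal (C0 + t)"
  shows "\<exists>w. (\<Sum>i\<in>UNIV. w i * z i) = 1"
proof -
  obtain p q where pq: "f = (\<lambda>x. p x - q x)" "p \<in> TPoly" "q \<in> TPoly" "q \<noteq> (\<lambda>_. -\<infinity>)"
    using f unfolding TRat_def by blast
  obtain Sp where Sp: "finite Sp" "p = tp Sp" using pq(2) unfolding TPoly_tp by blast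
  obtain Sq where Sq: "finite Sq" "q = tp Sq" using pq(3) unfolding TPoly_tp by blast
  define \<alpha>1 where "\<alpha>1 = \<alpha> + (\<beta> - \<alpha>) / 3"
  define \<beta>1 where "\<beta>1 = \<beta> - (\<beta> - \<alpha>) / 3"
  have ab1: "\<alpha> < \<alpha>1" "\<alpha>1 < \<beta>1" "\<beta>1 < \<beta>" unfolding \<alpha>1_def \<beta>1_def using ab by (simp_all add: field_simps)
  obtain \<alpha>2 \<beta>2 where ab2: "\<alpha>1 \<le> \<alpha>2" "\<alpha>2 < \<beta>2" "\<beta>2 \<le> \<beta>1" and
    altp: "(\<forall>t\<in>{\<alpha>2..\<beta>2}. p (B + t *\<^sub>R ivec z) = -\<infinity>) \<or>
     (\<exists>(a::'n \<Rightarrow> nat) C. \<forall>t\<in>{\<alpha>2..\<beta>2}. p (B + t *\<^sub>R ivec z) = ereal (C + t * (\<Sum>i\<in>UNIV. real (a i) * ivec z $ i)))"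
    using slope_sub[OF Sp(1) ab1(2), of B "ivec z"] Sp(2) by blast
  obtain \<alpha>3 \<beta>3 where ab3: "\<alpha>2 \<le> \<alpha>3" "\<alpha>3 < \<beta>3" "\<beta>3 \<le> \<beta>2" and
    altq: "(\<forall>t\<in>{\<alpha>3..\<beta>3}. q (B + t *\<^sub>R ivec z) = -\<infinity>) \<or>
     (\<exists>(a::'n \<Rightarrow> nat) C. \<forall>t\<in>{\<alpha>3..\<beta>3}. q (B + t *\<^sub>R ivec z) = ereal (C + t * (\<Sum>i\<in>UNIV. real (a i) * ivec z $ i)))"
    using slope_sub[OF Sq(1) ab2(2), of B "ivec z"] Sq(2) by blast
  have in3: "\<alpha> < t \<and> t < \<beta>" if "t \<in> {\<alpha>3..\<beta>3}" for t using that ab1 ab2 ab3 by auto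
  have qfin: "\<exists>r. q y = ereal r" for y using TPoly_finite_val pq(3,4) by blast
  have a3: "\<alpha>3 \<in> {\<alpha>3..\<beta>3}" "\<beta>3 \<in> {\<alpha>3..\<beta>3}" using ab3 by auto
  obtain a1 C1 where P: "\<forall>t\<in>{\<alpha>3..\<beta>3}. p (B + t *\<^sub>R ivec z) = ereal (C1 + t * (\<Sum>i\<in>UNIV. real (a1 i) * ivec z $ i))"
  proof -
    from altp show ?thesis
    proof
      assume "\<forall>t\<in>{\<alpha>2..\<beta>2}. p (B + t *\<^sub>R ivec z) = -\<infinity>"
      then have "p (B + \<alpha>3 *\<^sub>R ivec z) = -\<infinity>" using ab3 by auto
      moreover obtain r where "q (B + \<alpha>3 *\<^sub>R ivec z) = ereal r" using qfin by blast
      moreover have "f (B + \<alpha>3 *\<^sub>R ivec z) = ereal (C0 + \<alpha>3)" using eq in3 a3 by blast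
      ultimately show ?thesis using pq(1) by simp
    next
      assume "\<exists>(a::'n \<Rightarrow> nat) C. \<forall>t\<in>{\<alpha>2..\<beta>2}. p (B + t *\<^sub>R ivec z) = ereal (C + t * (\<Sum>i\<in>UNIV. real (a i) * ivec z $ i))"
      then show ?thesis using that ab3 by fastforce
    qed
  qed
  obtain a2 C2 where Q: "\<forall>t\<in>{\<alpha>3..\<beta>3}. q (B + t *\<^sub>R ivec z) = ereal (C2 + t * (\<Sum>i\<in>UNIV. real (a2 i) * ivec z $ i))"
  proof -
    from altq show ?thesis
    proof
      assume "\<forall>t\<in>{\<alpha>3..\<beta>3}. q (B + t *\<^sub>R ivec z) = -\<infinity>"
      then have "q (B + \<alpha>3 *\<^sub>R ivec z) = -\<infinity>" using ab3 by auto
      then show ?thesis using qfin by (metis MInfty_neq_ereal(1))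
    next
      assume "\<exists>(a::'n \<Rightarrow> nat) C. \<forall>t\<in>{\<alpha>3..\<beta>3}. q (B + t *\<^sub>R ivec z) = ereal (C + t * (\<Sum>i\<in>UNIV. real (a i) * ivec z $ i))"
      then show ?thesis using that by blast
    qed
  qed
  define s1 where "s1 = (\<Sum>i\<in>UNIV. real (a1 i) * ivec z $ i)"
  define s2 where "s2 = (\<Sum>i\<in>UNIV. real (a2 i) * ivec z $ i)"
  have lin: "(C1 + t * s1) - (C2 + t * s2) = C0 + t" if "t \<in> {\<alpha>3..\<beta>3}" for t
  proof -
    have "f (B + t *\<^sub>R ivec z) = ereal (C0 + t)" using eq in3[OF that] by blast
    then show ?thesis using P Q that pq(1) unfolding s1_def s2_def by simp
  qed
  have "s1 - s2 = 1"
  proof -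
    have "(C1 + \<alpha>3 * s1) - (C2 + \<alpha>3 * s2) = C0 + \<alpha>3" "(C1 + \<beta>3 * s1) - (C2 + \<beta>3 * s2) = C0 + \<beta>3"
      using lin a3 by auto
    then have "(\<beta>3 - \<alpha>3) * (s1 - s2) = (\<beta>3 - \<alpha>3) * 1" by (simp add: algebra_simps)
    then show ?thesis using ab3 by simp
  qed
  then have "real_of_int (\<Sum>i\<in>UNIV. (int (a1 i) - int (a2 i)) * z i) = 1"
    unfolding s1_def s2_def by (simp add: sum_subtractf algebra_simps)
  then have "(\<Sum>i\<in>UNIV. (int (a1 i) - int (a2 i)) * z i) = 1" by linarith
  then show ?thesis by (intro exI[of _ "\<lambda>i. int (a1 i) - int (a2 i)"])
qed

lemma piece_find:
  fixes a :: "nat \<Rightarrow> real"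
  assumes "\<forall>i<k. a i < a (Suc i)" "a 0 \<le> t" "t < a k"
  shows "\<exists>i<k. a i \<le> t \<and> t < a (Suc i)"
  using assms
proof (induction k)
  case 0 then show ?case by simp
next
  case (Suc k)
  show ?case
  proof (cases "t < a k")
    case True then obtain i where "i<k" "a i \<le> t \<and> t < a (Suc i)" using Suc by auto
    then show ?thesis by (intro exI[of _ i]) auto
  next
    case False then show ?thesis using Suc by (intro exI[of _ k]) auto
  qed
qed

lemma piece_find_left:
  fixes a :: "nat \<Rightarrow> real"
  assumes "\<forall>i<k. a i < a (Suc i)" "a 0 < t" "t \<le> a k"
  shows "\<exists>i<k. a i < t \<and> t \<le> a (Suc i)"
  using assms
proof (induction k)
  case 0 then show ?case by simp
next
  case (Suc k)
  show ?case
  proof (cases "t \<le> a k")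
    case True then obtain i where "i<k" "a i < t \<and> t \<le> a (Suc i)" using Suc by auto
    then show ?thesis by (intro exI[of _ i]) auto
  next
    case False then show ?thesis using Suc by (intro exI[of _ k]) auto
  qed
qed

lemma pw_right:
  assumes pw: "pw_affine_int h L" and t0: "0 \<le> t0" "ereal t0 < L"
  shows "\<exists>\<eta>>0. ereal (t0 + \<eta>) \<le> L \<and> (\<exists>(m::int) c. \<forall>t\<in>{t0..t0+\<eta>}. h t = c + of_int m * t)"
proof -
  obtain k a m c where
    a0: "a 0 = 0" and inc: "\<forall>i<k. a i < a (Suc i)" and
    fin: "L \<noteq> \<infinity> \<longrightarrow> ereal (a k) = L" and
    ray: "L = \<infinity> \<longrightarrow> (\<forall>t \<ge> a k. h t = c k + of_int (m k) * t)" and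
    pc: "\<forall>i<k. \<forall>t \<in> {a i .. a (Suc i)}. h t = c i + of_int (m i) * t"
    using pw unfolding pw_affine_int_def by blast
  have mono: "a i \<le> a j" if "i \<le> j" "j \<le> k" for i j
    using that
  proof (induction j)
    case 0 then show ?case by simp
  next
    case (Suc j)
    show ?case
    proof (cases "i = Suc j")
      case False
      then have "a i \<le> a j" using Suc by simp
      moreover have "a j < a (Suc j)" using inc Suc.prems by simp
      ultimately show ?thesis by simp
    qed simp
  qed
  show ?thesis
  proof (cases "t0 < a k")
    case True
    then obtain i where i: "i<k" "a i \<le> t0" "t0 < a (Suc i)" using piece_find[OF inc] a0 t0 by force
    have "ereal (a (Suc i)) \<le> L"
    proof (cases "L = \<infinity>")
      case False then show ?thesis using fin mono[of "Suc i" k] i by auto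
    qed simp
    then show ?thesis using i pc by (intro exI[of _ "a (Suc i) - t0"] conjI exI[of _ "m i"] exI[of _ "c i"]) auto
  next
    case False
    then have Li: "L = \<infinity>" using fin t0 by (metis ereal_less_eq(3) linorder_not_le order.strict_iff_not)
    then show ?thesis using ray False by (intro exI[of _ 1] conjI exI[of _ "m k"] exI[of _ "c k"]) auto
  qed
qed

lemma pw_left:
  assumes pw: "pw_affine_int h L" and t0: "0 < t0" "ereal t0 \<le> L"
  shows "\<exists>\<eta>>0. \<eta> \<le> t0 \<and> (\<exists>(m::int) c. \<forall>t\<in>{t0-\<eta>..t0}. h t = c + of_int m * t)"
proof -
  obtain k a m c where
    a0: "a 0 = 0" and inc: "\<forall>i<k. a i < a (Suc i)" and
    fin: "L \<noteq> \<infinity> \<longrightarrow> ereal (a k) = L" and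
    ray: "L = \<infinity> \<longrightarrow> (\<forall>t \<ge> a k. h t = c k + of_int (m k) * t)" and
    pc: "\<forall>i<k. \<forall>t \<in> {a i .. a (Suc i)}. h t = c i + of_int (m i) * t"
    using pw unfolding pw_affine_int_def by blast
  have mono: "a i \<le> a j" if "i \<le> j" "j \<le> k" for i j
    using that
  proof (induction j)
    case 0 then show ?case by simp
  next
    case (Suc j)
    show ?case
    proof (cases "i = Suc j")
      case False
      then have "a i \<le> a j" using Suc by simp
      moreover have "a j < a (Suc j)" using inc Suc.prems by simp
      ultimately show ?thesis by simp
    qed simp
  qed
  show ?thesis
  proof (cases "t0 \<le> a k")
    case True
    then obtain i where i: "i<k" "a i < t0" "t0 \<le> a (Suc i)" using piece_find_left[OF inc] a0 t0 by force
    have "0 \<le> a i" using mono[of 0 i] i a0 by simp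
    then show ?thesis using i pc by (intro exI[of _ "t0 - a i"] conjI exI[of _ "m i"] exI[of _ "c i"]) auto
  next
    case False
    then have Li: "L = \<infinity>" using fin t0 by (metis ereal_less_eq(3))
    have "0 \<le> a k" using mono[of 0 k] a0 by simp
    then show ?thesis using ray False Li by (intro exI[of _ "t0 - a k"] conjI exI[of _ "m k"] exI[of _ "c k"]) auto
  qed
qed

context setting
begin

lemma theta_right:
  assumes e: "e \<in> edges G" and t0: "0 \<le> t0" "ereal t0 < len G e"
  shows "\<exists>\<eta>>0. ereal (t0 + \<eta>) \<le> len G e \<and> (\<exists>z B. \<forall>t\<in>{t0..t0+\<eta>}. theta (pt G e t) = B + t *\<^sub>R ivec z)"
proof -
  have "\<forall>i. \<exists>\<eta>>0. ereal (t0 + \<eta>) \<le> len G e \<and> (\<exists>(m::int) c. \<forall>t\<in>{t0..t0+\<eta>}. fs i (pt G e t) = c + of_int m * t)"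
    using pw_right[OF _ t0] rat e unfolding rat_real_fun_def by blast
  then obtain \<eta> m c where H: "\<forall>i. \<eta> i > 0 \<and> ereal (t0 + \<eta> i) \<le> len G e \<and> (\<forall>t\<in>{t0..t0+\<eta> i}. fs i (pt G e t) = c i + of_int (m i) * t)"
    by metis
  define \<eta>0 where "\<eta>0 = Min (range \<eta>)"
  have mi: "Min (range \<eta>) \<in> range \<eta>" by (rule Min_in) auto
  obtain i0 where i0: "\<eta>0 = \<eta> i0" using mi unfolding \<eta>0_def by (metis rangeE)
  have \<eta>0: "\<eta>0 > 0" "\<And>i. \<eta>0 \<le> \<eta> i"
    using H i0 apply simp
    unfolding \<eta>0_def by (rule Min_le) auto
  have "ereal (t0 + \<eta>0) \<le> len G e" using H i0 by simp
  moreover have "\<forall>t\<in>{t0..t0+\<eta>0}. theta (pt G e t) = (\<chi> i. c i) + t *\<^sub>R ivec m"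
  proof
    fix t assume t: "t \<in> {t0..t0+\<eta>0}"
    show "theta (pt G e t) = (\<chi> i. c i) + t *\<^sub>R ivec m"
    proof (rule vec_eq_iff[THEN iffD2], rule allI)
      fix i
      have "t \<in> {t0..t0+\<eta> i}" using t \<eta>0(2)[of i] by auto
      then show "theta (pt G e t) $ i = ((\<chi> i. c i) + t *\<^sub>R ivec m) $ i" using H by (simp add: mult.commute)
    qed
  qed
  ultimately show ?thesis using \<eta>0(1) by blast
qed

lemma theta_left:
  assumes e: "e \<in> edges G" and t0: "0 < t0" "ereal t0 \<le> len G e"
  shows "\<exists>\<eta>>0. \<eta> \<le> t0 \<and> (\<exists>z B. \<forall>t\<in>{t0-\<eta>..t0}. theta (pt G e t) = B + t *\<^sub>R ivec z)"
proof -
  have "\<forall>i. \<exists>\<eta>>0. \<eta> \<le> t0 \<and> (\<exists>(m::int) c. \<forall>t\<in>{t0-\<eta>..t0}. fs i (pt G e t) = c + of_int m * t)"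
    using pw_left[OF _ t0] rat e unfolding rat_real_fun_def by blast
  then obtain \<eta> m c where H: "\<forall>i. \<eta> i > 0 \<and> \<eta> i \<le> t0 \<and> (\<forall>t\<in>{t0-\<eta> i..t0}. fs i (pt G e t) = c i + of_int (m i) * t)"
    by metis
  define \<eta>0 where "\<eta>0 = Min (range \<eta>)"
  have mi: "Min (range \<eta>) \<in> range \<eta>" by (rule Min_in) auto
  obtain i0 where i0: "\<eta>0 = \<eta> i0" using mi unfolding \<eta>0_def by (metis rangeE)
  have \<eta>0: "\<eta>0 > 0" "\<And>i. \<eta>0 \<le> \<eta> i"
    using H i0 apply simp
    unfolding \<eta>0_def by (rule Min_le) auto
  have "\<eta>0 \<le> t0" using H i0 by simp
  moreover have "\<forall>t\<in>{t0-\<eta>0..t0}. theta (pt G e t) = (\<chi> i. c i) + t *\<^sub>R ivec m"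
  proof
    fix t assume t: "t \<in> {t0-\<eta>0..t0}"
    show "theta (pt G e t) = (\<chi> i. c i) + t *\<^sub>R ivec m"
    proof (rule vec_eq_iff[THEN iffD2], rule allI)
      fix i
      have "t \<in> {t0-\<eta> i..t0}" using t \<eta>0(2)[of i] by auto
      then show "theta (pt G e t) $ i = ((\<chi> i. c i) + t *\<^sub>R ivec m) $ i" using H by (simp add: mult.commute)
    qed
  qed
  ultimately show ?thesis using \<eta>0(1) by blast
qed

lemma rho0_ex: "\<exists>\<rho>0>0. \<forall>e\<in>edges G. len G e \<noteq> \<infinity> \<longrightarrow> 2 * \<rho>0 \<le> Lr G e"
proof -
  define R where "R = insert 1 ((\<lambda>e. Lr G e / 2) ` {e\<in>edges G. len G e \<noteq> \<infinity>})"
  have fR: "finite R" unfolding R_def using fin_edges by simp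
  have pR: "\<forall>r\<in>R. r > 0" unfolding R_def using Lr_fin by auto
  define \<rho>0 where "\<rho>0 = Min R"
  have "\<rho>0 > 0" unfolding \<rho>0_def using fR pR Min_in[OF fR] R_def by auto
  moreover have "\<forall>e\<in>edges G. len G e \<noteq> \<infinity> \<longrightarrow> 2 * \<rho>0 \<le> Lr G e"
  proof (intro ballI impI)
    fix e assume "e \<in> edges G" "len G e \<noteq> \<infinity>"
    then have "Lr G e / 2 \<in> R" unfolding R_def by auto
    then have "\<rho>0 \<le> Lr G e / 2" unfolding \<rho>0_def by (rule Min_le[OF fR])
    then show "2 * \<rho>0 \<le> Lr G e" by simp
  qed
  ultimately show ?thesis by blast
qed

lemma good_mono: assumes "good G x \<rho>" "0 < \<rho>'" "\<rho>' \<le> \<rho>" shows "good G x \<rho>'"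
proof -
  have "ereal (t0 + \<rho>') \<le> len G e0" if "x = Ein e0 t0" for e0 t0
  proof -
    have "ereal (t0 + \<rho>) \<le> len G e0" using assms(1) that unfolding good_def by simp
    moreover have "ereal (t0 + \<rho>') \<le> ereal (t0 + \<rho>)" using assms(3) by simp
    ultimately show ?thesis by (rule order.trans[rotated])
  qed
  then show ?thesis using assms unfolding good_def by auto
qed

lemma good_ex: assumes x: "x \<in> pts_fin G" shows "\<exists>\<rho>. good G x \<rho>"
proof -
  obtain \<rho>0 where r0: "\<rho>0 > 0" "\<forall>e\<in>edges G. len G e \<noteq> \<infinity> \<longrightarrow> 2 * \<rho>0 \<le> Lr G e" using rho0_ex by blast
  show ?thesis
  proof (cases x)
    case (Vtx v) then show ?thesis using r0 unfolding good_def by auto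
  next
    case (Ein e0 t0)
    then have e0: "e0 \<in> edges G" "0 < t0" "ereal t0 < len G e0" using Ein_fin x by auto
    show ?thesis
    proof (cases "len G e0 = \<infinity>")
      case True
      show ?thesis using True r0 e0 Ein unfolding good_def by (intro exI[of _ "min \<rho>0 t0"]) auto
    next
      case False
      have L: "len G e0 = ereal (Lr G e0)" using Lr_fin[OF e0(1) False] by simp
      then have tl: "t0 < Lr G e0" using e0 by simp
      have Lle: "ereal (t0 + min \<rho>0 (min t0 (Lr G e0 - t0))) \<le> len G e0" unfolding L by simp
      have "\<forall>e\<in>edges G. len G e \<noteq> \<infinity> \<longrightarrow> 2 * min \<rho>0 (min t0 (Lr G e0 - t0)) \<le> Lr G e"
      proof (intro ballI impI)
        fix e assume "e \<in> edges G" "len G e \<noteq> \<infinity>"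
        then have "2 * \<rho>0 \<le> Lr G e" using r0 by blast
        moreover have "2 * min \<rho>0 (min t0 (Lr G e0 - t0)) \<le> 2 * \<rho>0" by simp
        ultimately show "2 * min \<rho>0 (min t0 (Lr G e0 - t0)) \<le> Lr G e" by linarith
      qed
      then show ?thesis using Lle r0 e0 Ein tl unfolding good_def by (intro exI[of _ "min \<rho>0 (min t0 (Lr G e0 - t0))"]) auto
    qed
  qed
qed

lemma surj_fun:
  assumes surj: "hom_surj G psi" and g: "rat_real_fun G g"
  shows "\<exists>f\<in>TRat. \<forall>w\<in>pts_fin G. f (theta w) = ereal (g w)"
proof -
  have "(\<lambda>w. ereal (g w)) \<in> RatG G" unfolding RatG_def using g by blast
  then have "\<exists>f\<in>TRat. \<forall>w\<in>pts_fin G. psi f w = (\<lambda>w. ereal (g w)) w"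
    by (rule bspec[OF surj[unfolded hom_surj_def]])
  then obtain f where f: "f \<in> TRat" "\<forall>w\<in>pts_fin G. psi f w = ereal (g w)" by auto
  then show ?thesis using part1 by auto
qed

lemma injective:
  assumes surj: "hom_surj G psi"
  shows "inj_on theta (pts_fin G)"
proof
  fix x y assume x: "x \<in> pts_fin G" and y: "y \<in> pts_fin G" and eq: "theta x = theta y"
  obtain \<rho> where g: "good G x \<rho>" using good_ex[OF x] by blast
  obtain f where f: "f \<in> TRat" "\<forall>w\<in>pts_fin G. f (theta w) = ereal (Tfun G x \<rho> w)"
    using surj_fun[OF surj Tfun_rat[OF x g]] by blast
  have "ereal (Tfun G x \<rho> y) = ereal \<rho>" using f(2) x y eq T_at_x[OF x g] by metis
  then have "Tfun G x \<rho> y = \<rho>" by simp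
  then show "x = y" using T_eq[OF x g y] by simp
qed

lemma edge_prim:
  assumes surj: "hom_surj G psi" and e: "e \<in> edges G" and ab: "0 \<le> \<alpha>" "\<alpha> < \<beta>" "ereal \<beta> \<le> len G e"
    and aff: "\<forall>t\<in>{\<alpha>..\<beta>}. theta (pt G e t) = B + t *\<^sub>R ivec z"
  shows "\<exists>w. (\<Sum>i\<in>UNIV. w i * z i) = 1"
proof -
  define tm where "tm = (\<alpha> + \<beta>) / 2"
  have tm: "\<alpha> < tm" "tm < \<beta>" unfolding tm_def using ab by auto
  have tmL: "ereal tm < len G e" using tm(2) ab(3) by (metis less_ereal.simps(1) less_le_trans)
  define x :: "('v, 'e) tpt" where "x = Ein e tm"
  have x: "x \<in> pts_fin G" unfolding x_def pts_fin_def using e tm ab tmL by auto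
  obtain \<rho>1 where g1: "good G x \<rho>1" using good_ex[OF x] by blast
  define \<rho> where "\<rho> = min \<rho>1 ((\<beta> - \<alpha>) / 2)"
  have g: "good G x \<rho>" using good_mono[OF g1] good_pos[OF g1] tm unfolding \<rho>_def by auto
  have tma: "tm - \<alpha> = (\<beta> - \<alpha>) / 2" unfolding tm_def by (simp add: field_simps)
  have "\<rho> \<le> (\<beta> - \<alpha>) / 2" unfolding \<rho>_def by (rule min.cobounded2)
  then have r: "0 < \<rho>" "\<rho> \<le> tm - \<alpha>" using tma good_pos[OF g1] tm unfolding \<rho>_def by auto
  obtain f where f: "f \<in> TRat" "\<forall>w\<in>pts_fin G. f (theta w) = ereal (Tfun G x \<rho> w)"
    using surj_fun[OF surj Tfun_rat[OF x g]] by blast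
  have b: "(e, -1, tm) \<in> br G x" unfolding br_def x_def by simp
  have "f (B + t *\<^sub>R ivec z) = ereal ((\<rho> - tm) + t)" if t: "tm - \<rho> < t" "t < tm" for t
  proof -
    have w: "bpt G (e, -1, tm) (tm - t) = pt G e t" unfolding bpt_def by simp
    have "bpt G (e, -1, tm) (tm - t) \<in> pts_fin G" using bpt_fin[OF x g b] t by simp
    moreover have "Tfun G x \<rho> (bpt G (e, -1, tm) (tm - t)) = \<rho> - (tm - t)" using T_bpt[OF x g b] t by simp
    moreover have "theta (pt G e t) = B + t *\<^sub>R ivec z" using aff t r tm by auto
    ultimately have "f (B + t *\<^sub>R ivec z) = ereal (Tfun G x \<rho> (pt G e t))" "Tfun G x \<rho> (pt G e t) = \<rho> - (tm - t)"
      using f(2) w by metis+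
    then show ?thesis by (simp add: algebra_simps)
  qed
  moreover have "tm - \<rho> < tm" using r by simp
  ultimately show ?thesis using prim_of_TRat[OF f(1), of "tm - \<rho>" tm B z "\<rho> - tm"] by blast
qed

end


definition segset :: "(real^'n::finite) \<times> ('n \<Rightarrow> int) \<times> real \<times> ereal \<Rightarrow> (real^'n) set" where
  "segset \<pi> = (case \<pi> of (B, z, \<alpha>, \<beta>) \<Rightarrow> {B + t *\<^sub>R ivec z | t. \<alpha> \<le> t \<and> ereal t \<le> \<beta>})"

lemma segset_closed: "closed (segset \<pi>)"
proof -
  obtain B z \<alpha> \<beta> where pi: "\<pi> = (B, z, \<alpha>, \<beta>)" by (cases \<pi>) auto
  define D where "D = ivec z"
  have eq: "segset \<pi> = (\<lambda>t. B + t *\<^sub>R D) ` {t. \<alpha> \<le> t \<and> ereal t \<le> \<beta>}"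
    unfolding segset_def pi D_def by auto
  show ?thesis
  proof (cases \<beta>)
    case (real b)
    then have "{t. \<alpha> \<le> t \<and> ereal t \<le> \<beta>} = {\<alpha>..b}" by auto
    then have "compact (segset \<pi>)" unfolding eq by (auto intro!: compact_continuous_image continuous_intros)
    then show ?thesis by (rule compact_imp_closed)
  next
    case PInf
    then have A: "{t. \<alpha> \<le> t \<and> ereal t \<le> \<beta>} = {\<alpha>..}" by auto
    show ?thesis
    proof (cases "D = 0")
      case True
      then have "(\<lambda>t. B + t *\<^sub>R D) ` {\<alpha>..} = {B}" by auto
      then show ?thesis unfolding eq A by simp
    next
      case False
      have lin: "linear (\<lambda>t::real. t *\<^sub>R D)" by (rule bounded_linear.linear[OF bounded_linear_scaleR_left])
      have inj: "inj (\<lambda>t::real. t *\<^sub>R D)" using False by (auto intro!: injI)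
      have "closed ((\<lambda>t::real. t *\<^sub>R D) ` {\<alpha>..})" by (rule closed_injective_linear_image[OF closed_atLeast lin inj])
      then have "closed ((+) B ` ((\<lambda>t::real. t *\<^sub>R D) ` {\<alpha>..}))" by (rule closed_translation)
      moreover have "(+) B ` ((\<lambda>t::real. t *\<^sub>R D) ` {\<alpha>..}) = segset \<pi>" unfolding eq A by auto
      ultimately show ?thesis by simp
    qed
  next
    case MInf
    then have "segset \<pi> = {}" unfolding eq by auto
    then show ?thesis by simp
  qed
qed

lemma ichain_nonneg: "ichain S p cs q \<Longrightarrow> sum_list (map snd cs) \<ge> 0"
proof (induction cs arbitrary: p)
  case (Cons c cs)
  obtain r lam where c: "c = (r, lam)" by (cases c)
  then have "lat_dir (r - p) lam" "ichain S r cs q" using Cons.prems by auto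
  then have "lam \<ge> 0" "sum_list (map snd cs) \<ge> 0" using Cons.IH unfolding lat_dir_def by auto
  then show ?case using c by simp
qed simp

lemma latdist_le: "ichain S p cs q \<Longrightarrow> latdist S p q \<le> sum_list (map snd cs)"
  unfolding latdist_def using ichain_nonneg by (intro cInf_lower bdd_belowI[of _ 0]) auto

lemma latdist_ge:
  assumes "\<exists>cs. ichain S p cs q" "\<And>cs. ichain S p cs q \<Longrightarrow> b \<le> sum_list (map snd cs)"
  shows "b \<le> latdist S p q"
  unfolding latdist_def using assms by (intro cInf_greatest) auto

lemma ichain_lip:
  assumes seg: "\<And>p r lam. closed_segment p r \<subseteq> S \<Longrightarrow> lat_dir (r - p) lam \<Longrightarrow> \<bar>Phi r - Phi p\<bar> \<le> lam"
  shows "ichain S p cs q \<Longrightarrow> \<bar>Phi q - Phi p\<bar> \<le> sum_list (map snd cs)"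
proof (induction cs arbitrary: p)
  case Nil then show ?case by simp
next
  case (Cons c cs)
  obtain r lam where c: "c = (r, lam)" by (cases c)
  have h: "closed_segment p r \<subseteq> S" "lat_dir (r - p) lam" "ichain S r cs q" using Cons.prems c by auto
  have "\<bar>Phi r - Phi p\<bar> \<le> lam" using seg h by blast
  moreover have "\<bar>Phi q - Phi r\<bar> \<le> sum_list (map snd cs)" using Cons.IH h(3) .
  ultimately show ?case using c by simp
qed

lemma primitive_ivec: "primitive v \<longleftrightarrow> (\<exists>y. v = ivec y \<and> Gcd (range y) = 1)"
  unfolding primitive_def ivec_def by simp

lemma prim_neg: "(\<Sum>i\<in>UNIV. w i * z i) = (1::int) \<Longrightarrow> (\<Sum>i\<in>UNIV. (- w i) * (- z i)) = 1"
  by simp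

context setting
begin

lemma pw_data:
  "\<exists>K A M C. \<forall>e\<in>edges G. \<forall>i.
     A e i 0 = 0 \<and> (\<forall>j<K e i. A e i j < A e i (Suc j)) \<and>
     (len G e \<noteq> \<infinity> \<longrightarrow> ereal (A e i (K e i)) = len G e) \<and>
     (len G e = \<infinity> \<longrightarrow> (\<forall>t \<ge> A e i (K e i). fs i (pt G e t) = C e i (K e i) + of_int (M e i (K e i)) * t)) \<and>
     (\<forall>j<K e i. \<forall>t \<in> {A e i j .. A e i (Suc j)}. fs i (pt G e t) = C e i j + of_int (M e i j) * t)"
proof -
  define PW where "PW e i k a m c \<longleftrightarrow> a 0 = 0 \<and> (\<forall>j<k. a j < a (Suc j)) \<and>
     (len G e \<noteq> \<infinity> \<longrightarrow> ereal (a k) = len G e) \<and>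
     (len G e = \<infinity> \<longrightarrow> (\<forall>t \<ge> a k. fs i (pt G e t) = c k + of_int (m k) * t)) \<and>
     (\<forall>j<k. \<forall>t \<in> {a j .. a (Suc j)}. fs i (pt G e t) = c j + of_int (m j) * t)"
    for e i k and a :: "nat \<Rightarrow> real" and m :: "nat \<Rightarrow> int" and c :: "nat \<Rightarrow> real"
  have "\<forall>ei. \<exists>kamc. fst ei \<in> edges G \<longrightarrow> PW (fst ei) (snd ei) (fst kamc) (fst (snd kamc)) (fst (snd (snd kamc))) (snd (snd (snd kamc)))"
  proof
    fix ei :: "'e \<times> 'n"
    show "\<exists>kamc. fst ei \<in> edges G \<longrightarrow> PW (fst ei) (snd ei) (fst kamc) (fst (snd kamc)) (fst (snd (snd kamc))) (snd (snd (snd kamc)))"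
    proof (cases "fst ei \<in> edges G")
      case True
      then have "pw_affine_int (\<lambda>t. fs (snd ei) (pt G (fst ei) t)) (len G (fst ei))"
        using rat unfolding rat_real_fun_def by blast
      then obtain k a m c where "PW (fst ei) (snd ei) k a m c"
        unfolding pw_affine_int_def PW_def by blast
      then show ?thesis by (intro exI[of _ "(k, a, m, c)"]) simp
    qed simp
  qed
  from choice[OF this] obtain F where F: "\<forall>ei. fst ei \<in> edges G \<longrightarrow> PW (fst ei) (snd ei) (fst (F ei)) (fst (snd (F ei))) (fst (snd (snd (F ei)))) (snd (snd (snd (F ei))))"
    by blast
  have "\<forall>e\<in>edges G. \<forall>i. PW e i (fst (F (e, i))) (fst (snd (F (e, i)))) (fst (snd (snd (F (e, i))))) (snd (snd (snd (F (e, i)))))"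
    using F by auto
  from this[unfolded PW_def] show ?thesis by - ((rule exI)+, assumption)
qed

lemma pieces:
  "\<exists>P. finite P \<and> theta ` pts_fin G \<subseteq> \<Union> (segset ` P) \<and> (\<forall>\<pi>\<in>P. segset \<pi> \<subseteq> theta ` pts_fin G) \<and>
     (\<forall>\<pi>\<in>P. case \<pi> of (B, z, \<alpha>, \<beta>) \<Rightarrow> (z = (\<lambda>_. 0) \<and> \<alpha> = 0 \<and> \<beta> = 0) \<or>
         (\<exists>e\<in>edges G. 0 \<le> \<alpha> \<and> (\<forall>t. \<alpha> \<le> t \<and> ereal t \<le> \<beta> \<longrightarrow> ereal t \<le> len G e \<and> theta (pt G e t) = B + t *\<^sub>R ivec z)))"
proof -
  obtain K A M C where D: "\<forall>e\<in>edges G. \<forall>i.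
     A e i 0 = 0 \<and> (\<forall>j<K e i. A e i j < A e i (Suc j)) \<and>
     (len G e \<noteq> \<infinity> \<longrightarrow> ereal (A e i (K e i)) = len G e) \<and>
     (len G e = \<infinity> \<longrightarrow> (\<forall>t \<ge> A e i (K e i). fs i (pt G e t) = C e i (K e i) + of_int (M e i (K e i)) * t)) \<and>
     (\<forall>j<K e i. \<forall>t \<in> {A e i j .. A e i (Suc j)}. fs i (pt G e t) = C e i j + of_int (M e i j) * t)"
    using pw_data by blast
  have mono: "A e i j \<le> A e i j'" if "e \<in> edges G" "j \<le> j'" "j' \<le> K e i" for e i j j'
    using that(2,3)
  proof (induction j')
    case 0 then show ?case by simp
  next
    case (Suc j')
    show ?case
    proof (cases "j = Suc j'")
      case False
      then have "A e i j \<le> A e i j'" using Suc by simp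
      moreover have "A e i j' < A e i (Suc j')" using D that(1) Suc.prems by simp
      ultimately show ?thesis by simp
    qed simp
  qed
  define valid where "valid e = {j :: 'n \<Rightarrow> nat. \<forall>i. j i < K e i \<or> (j i = K e i \<and> len G e = \<infinity>)}" for e
  define al where "al e j = Max (range (\<lambda>i. A e i (j i)))" for e j
  define be where "be e j = Min (range (\<lambda>i. if j i < K e i then ereal (A e i (Suc (j i))) else \<infinity>))" for e j
  define pc where "pc e j = ((\<chi> i. C e i (j i)), (\<lambda>i. M e i (j i)), al e j, be e j)" for e j
  define vp where "vp v = (theta (Vtx v), (\<lambda>_::'n. 0::int), 0::real, 0::ereal)" for v
  define P where "P = (\<lambda>(e, j). pc e j) ` (SIGMA e:edges G. valid e) \<union> vp ` (verts G - inf_verts G)"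
  have fin_valid: "finite (valid e)" for e
  proof -
    have "valid e \<subseteq> Pi\<^sub>E UNIV (\<lambda>_. {..(\<Sum>i\<in>UNIV. K e i)})"
    proof
      fix j assume "j \<in> valid e"
      then have "j i \<le> (\<Sum>i\<in>UNIV. K e i)" for i
      proof -
        have "j i < K e i \<or> j i = K e i" using \<open>j \<in> valid e\<close> unfolding valid_def by blast
        then have "j i \<le> K e i" by linarith
        moreover have "K e i \<le> (\<Sum>i\<in>UNIV. K e i)" by (rule member_le_sum) auto
        ultimately show ?thesis by simp
      qed
      then show "j \<in> Pi\<^sub>E UNIV (\<lambda>_. {..(\<Sum>i\<in>UNIV. K e i)})" by (simp add: PiE_UNIV_domain)
    qed
    then show ?thesis by (rule finite_subset) (auto intro: finite_PiE)
  qed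
  have finP: "finite P" unfolding P_def using fin_edges fin_verts fin_valid by auto
  have tup: "0 \<le> al e j \<and> (\<forall>t. al e j \<le> t \<and> ereal t \<le> be e j \<longrightarrow> ereal t \<le> len G e \<and>
             theta (pt G e t) = (\<chi> i. C e i (j i)) + t *\<^sub>R ivec (\<lambda>i. M e i (j i)))"
    if e: "e \<in> edges G" and j: "j \<in> valid e" for e j
  proof -
    have alge: "A e i (j i) \<le> al e j" for i unfolding al_def by (rule Max_ge) auto
    have bele: "be e j \<le> (if j i < K e i then ereal (A e i (Suc (j i))) else \<infinity>)" for i
      unfolding be_def by (rule Min_le) auto
    have "j undefined < K e undefined \<or> j undefined = K e undefined" using j unfolding valid_def by blast
    then have "j undefined \<le> K e undefined" by linarith
    then have "A e undefined 0 \<le> A e undefined (j undefined)" using mono[OF e, of 0 "j undefined" undefined] by simp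
    moreover have "A e undefined 0 = 0" using D e by blast
    ultimately have "0 \<le> al e j" using alge[of undefined] by simp
    moreover have "ereal t \<le> len G e \<and> theta (pt G e t) = (\<chi> i. C e i (j i)) + t *\<^sub>R ivec (\<lambda>i. M e i (j i))"
      if t: "al e j \<le> t" "ereal t \<le> be e j" for t
    proof
      show "ereal t \<le> len G e"
      proof (cases "len G e = \<infinity>")
        case False
        then have jk: "j undefined < K e undefined" using j unfolding valid_def by auto
        then have "be e j \<le> ereal (A e undefined (Suc (j undefined)))" using bele[of undefined] by simp
        then have "ereal t \<le> ereal (A e undefined (Suc (j undefined)))" using t(2) by (rule order.trans[rotated])
        moreover have "A e undefined (Suc (j undefined)) \<le> A e undefined (K e undefined)" using mono[OF e] jk by simp
        moreover have "ereal (A e undefined (K e undefined)) = len G e" using D e False by blast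
        ultimately show ?thesis by (metis ereal_less_eq(3) order.trans)
      qed simp
      show "theta (pt G e t) = (\<chi> i. C e i (j i)) + t *\<^sub>R ivec (\<lambda>i. M e i (j i))"
      proof (rule vec_eq_iff[THEN iffD2], rule allI)
        fix i
        have lo: "A e i (j i) \<le> t" using alge[of i] t(1) by simp
        show "theta (pt G e t) $ i = ((\<chi> i. C e i (j i)) + t *\<^sub>R ivec (\<lambda>i. M e i (j i))) $ i"
        proof (cases "j i < K e i")
          case True
          then have "t \<le> A e i (Suc (j i))" using t(2) bele[of i] by (metis (mono_tags, lifting) ereal_less_eq(3) order.trans)
          then show ?thesis using D e True lo by (simp add: mult.commute)
        next
          case False
          then have "j i = K e i \<and> len G e = \<infinity>" using j unfolding valid_def by auto
          then show ?thesis using D e lo by (simp add: mult.commute)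
        qed
      qed
    qed
    ultimately show ?thesis by blast
  qed
  have cover: "theta ` pts_fin G \<subseteq> \<Union> (segset ` P)"
  proof
    fix y assume "y \<in> theta ` pts_fin G"
    then obtain w where w: "w \<in> pts_fin G" "y = theta w" by blast
    from w(1) show "y \<in> \<Union> (segset ` P)" unfolding pts_fin_def
    proof
      assume "w \<in> Vtx ` (verts G - inf_verts G)"
      then obtain v where v: "v \<in> verts G - inf_verts G" "w = Vtx v" by blast
      then have "vp v \<in> P" unfolding P_def by blast
      moreover have "y \<in> segset (vp v)" unfolding segset_def vp_def using w v by auto
      ultimately show ?thesis by blast
    next
      assume "w \<in> {Ein e t |e t. e \<in> edges G \<and> 0 < t \<and> ereal t < len G e}"
      then obtain e t where et: "w = Ein e t" "e \<in> edges G" "0 < t" "ereal t < len G e" by blast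
      have "\<forall>i. \<exists>ji. (ji < K e i \<and> A e i ji \<le> t \<and> t \<le> A e i (Suc ji)) \<or> (ji = K e i \<and> len G e = \<infinity> \<and> A e i (K e i) \<le> t)"
      proof
        fix i
        have inc: "\<forall>j<K e i. A e i j < A e i (Suc j)" and a0: "A e i 0 = 0" using D et(2) by auto
        show "\<exists>ji. (ji < K e i \<and> A e i ji \<le> t \<and> t \<le> A e i (Suc ji)) \<or> (ji = K e i \<and> len G e = \<infinity> \<and> A e i (K e i) \<le> t)"
        proof (cases "t \<le> A e i (K e i) \<and> K e i > 0")
          case True
          then show ?thesis using piece_cover[OF inc, of t] a0 et(3) by fastforce
        next
          case False
          show ?thesis
          proof (cases "len G e = \<infinity>")
            case True
            have "A e i (K e i) \<le> t" using False a0 et(3) by (cases "K e i = 0") auto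
            then show ?thesis using True by blast
          next
            case Lf: False
            then have "ereal (A e i (K e i)) = len G e" using D et(2) by blast
            then have "t < A e i (K e i)" using et(4) by (metis less_ereal.simps(1))
            then have "K e i = 0" using False by simp
            then show ?thesis using \<open>t < A e i (K e i)\<close> a0 et(3) by simp
          qed
        qed
      qed
      then obtain j where j: "\<forall>i. (j i < K e i \<and> A e i (j i) \<le> t \<and> t \<le> A e i (Suc (j i))) \<or> (j i = K e i \<and> len G e = \<infinity> \<and> A e i (K e i) \<le> t)"
        by metis
      have jv: "j \<in> valid e" unfolding valid_def using j by blast
      have "al e j \<le> t" unfolding al_def using j by (auto intro!: Max.boundedI)
      moreover have "ereal t \<le> be e j" unfolding be_def using j by (auto intro!: Min.boundedI)
      ultimately have "theta (pt G e t) = (\<chi> i. C e i (j i)) + t *\<^sub>R ivec (\<lambda>i. M e i (j i))"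
        using tup[OF et(2) jv] by blast
      then have "y \<in> segset (pc e j)" unfolding segset_def pc_def using w et pt_Ein[OF et(3,4)]
        \<open>al e j \<le> t\<close> \<open>ereal t \<le> be e j\<close> by auto
      moreover have "pc e j \<in> P" unfolding P_def using et(2) jv by force
      ultimately show ?thesis by blast
    qed
  qed
  have inS: "\<forall>\<pi>\<in>P. segset \<pi> \<subseteq> theta ` pts_fin G"
  proof
    fix \<pi> assume "\<pi> \<in> P"
    then consider (t) e j where "e \<in> edges G" "j \<in> valid e" "\<pi> = pc e j" | (v) v where "v \<in> verts G - inf_verts G" "\<pi> = vp v"
      unfolding P_def by auto
    then show "segset \<pi> \<subseteq> theta ` pts_fin G"
    proof cases
      case t
      show ?thesis
      proof
        fix y assume "y \<in> segset \<pi>"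
        then obtain s where s: "y = (\<chi> i. C e i (j i)) + s *\<^sub>R ivec (\<lambda>i. M e i (j i))" "al e j \<le> s" "ereal s \<le> be e j"
          unfolding t segset_def pc_def by auto
        have "ereal s \<le> len G e" "theta (pt G e s) = y" using tup[OF t(1,2)] s by auto
        moreover have "0 \<le> s" using tup[OF t(1,2)] s by auto
        ultimately show "y \<in> theta ` pts_fin G" using pt_in_fin[OF t(1)] by force
      qed
    next
      case v
      then show ?thesis unfolding segset_def vp_def pts_fin_def by auto
    qed
  qed
  have props: "\<forall>\<pi>\<in>P. case \<pi> of (B, z, \<alpha>, \<beta>) \<Rightarrow> (z = (\<lambda>_. 0) \<and> \<alpha> = 0 \<and> \<beta> = 0) \<or>
         (\<exists>e\<in>edges G. 0 \<le> \<alpha> \<and> (\<forall>t. \<alpha> \<le> t \<and> ereal t \<le> \<beta> \<longrightarrow> ereal t \<le> len G e \<and> theta (pt G e t) = B + t *\<^sub>R ivec z))"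
  proof
    fix \<pi> assume "\<pi> \<in> P"
    then consider (t) e j where "e \<in> edges G" "j \<in> valid e" "\<pi> = pc e j" | (v) v where "v \<in> verts G - inf_verts G" "\<pi> = vp v"
      unfolding P_def by auto
    then show "case \<pi> of (B, z, \<alpha>, \<beta>) \<Rightarrow> (z = (\<lambda>_. 0) \<and> \<alpha> = 0 \<and> \<beta> = 0) \<or>
         (\<exists>e\<in>edges G. 0 \<le> \<alpha> \<and> (\<forall>t. \<alpha> \<le> t \<and> ereal t \<le> \<beta> \<longrightarrow> ereal t \<le> len G e \<and> theta (pt G e t) = B + t *\<^sub>R ivec z))"
    proof cases
      case t then show ?thesis using tup[OF t(1,2)] unfolding pc_def by auto
    next
      case v then show ?thesis unfolding vp_def by simp
    qed
  qed
  show ?thesis using finP cover inS props by blast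
qed

end


lemma ivec_neg: "ivec (\<lambda>i. - z i) = - ivec z"
  unfolding ivec_def by (simp add: vec_eq_iff)

lemma Gcd_zero_range: "Gcd (range (\<lambda>_::'n. 0::int)) = 0"
  by simp

lemma prim_nonzero: "Gcd (range y) = (1::int) \<Longrightarrow> ivec y \<noteq> 0"
proof
  assume g: "Gcd (range y) = 1" and "ivec y = 0"
  then have "\<forall>i. y i = 0" unfolding ivec_def by (simp add: vec_eq_iff)
  then have "range y = {0}" by auto
  then show False using g by simp
qed

context setting
begin

lemma seg_lip:
  assumes surj: "hom_surj G psi" and phi: "edge_lip G phi 1" and Phi: "\<forall>w\<in>pts_fin G. Phi (theta w) = phi w"
    and seg: "closed_segment p q \<subseteq> theta ` pts_fin G" and ld: "lat_dir (q - p) lam"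
  shows "\<bar>Phi q - Phi p\<bar> \<le> lam"
proof -
  obtain v where lam0: "lam \<ge> 0" and v: "primitive v" "q - p = lam *\<^sub>R v" using ld unfolding lat_dir_def by blast
  obtain y where y: "v = ivec y" "Gcd (range y) = 1" using v(1) unfolding primitive_ivec by blast
  have v0: "v \<noteq> 0" using prim_nonzero[OF y(2)] y(1) by simp
  obtain P where P: "finite P" "theta ` pts_fin G \<subseteq> \<Union> (segset ` P)" "\<forall>\<pi>\<in>P. segset \<pi> \<subseteq> theta ` pts_fin G"
    "\<forall>\<pi>\<in>P. case \<pi> of (B, z, \<alpha>, \<beta>) \<Rightarrow> (z = (\<lambda>_. 0) \<and> \<alpha> = 0 \<and> \<beta> = 0) \<or>
         (\<exists>e\<in>edges G. 0 \<le> \<alpha> \<and> (\<forall>t. \<alpha> \<le> t \<and> ereal t \<le> \<beta> \<longrightarrow> ereal t \<le> len G e \<and> theta (pt G e t) = B + t *\<^sub>R ivec z))"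
    using pieces by blast
  define u where "u s = Phi (p + s *\<^sub>R v)" for s
  define I where "I \<pi> = {s \<in> {0..lam}. p + s *\<^sub>R v \<in> segset \<pi>}" for \<pi>
  have closedI: "closed (I \<pi>)" for \<pi>
  proof -
    have "I \<pi> = {0..lam} \<inter> ((\<lambda>s. p + s *\<^sub>R v) -` segset \<pi>)" unfolding I_def by auto
    moreover have "closed ((\<lambda>s. p + s *\<^sub>R v) -` segset \<pi>)"
      by (rule continuous_closed_vimage[OF segset_closed]) (intro continuous_intros)
    ultimately show ?thesis by auto
  qed
  have coverI: "{0..lam} \<subseteq> \<Union> (I ` P)"
  proof
    fix s assume s: "s \<in> {0..lam}"
    have "p + s *\<^sub>R v \<in> closed_segment p q"
    proof (cases "lam = 0")
      case True then show ?thesis using s by simp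
    next
      case False
      then have lp: "lam > 0" using lam0 by simp
      define mu where "mu = s / lam"
      have mu: "0 \<le> mu" "mu \<le> 1" unfolding mu_def using s lp by auto
      have "p + s *\<^sub>R v = (1 - mu) *\<^sub>R p + mu *\<^sub>R q"
      proof -
        have "q = p + lam *\<^sub>R v" using v(2) by (simp add: algebra_simps)
        then have "(1 - mu) *\<^sub>R p + mu *\<^sub>R q = p + (mu * lam) *\<^sub>R v" by (simp add: algebra_simps)
        also have "mu * lam = s" unfolding mu_def using lp by simp
        finally show ?thesis by simp
      qed
      then show ?thesis unfolding closed_segment_def using mu by blast
    qed
    then have "p + s *\<^sub>R v \<in> \<Union> (segset ` P)" using seg P(2) by blast
    then show "s \<in> \<Union> (I ` P)" unfolding I_def using s by blast
  qed
  have lipI: "\<forall>C\<in>I ` P. \<forall>s\<in>C. \<forall>s'\<in>C. \<bar>u s - u s'\<bar> \<le> 1 * \<bar>s - s'\<bar>"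
  proof (intro ballI)
    fix C s s' assume C: "C \<in> I ` P" and s: "s \<in> C" and s': "s' \<in> C"
    then obtain \<pi> where pi: "\<pi> \<in> P" "C = I \<pi>" by blast
    obtain B z \<alpha> \<beta> where pz: "\<pi> = (B, z, \<alpha>, \<beta>)" by (cases \<pi>) auto
    obtain \<tau> where \<tau>: "p + s *\<^sub>R v = B + \<tau> *\<^sub>R ivec z" "\<alpha> \<le> \<tau>" "ereal \<tau> \<le> \<beta>"
      using s pi unfolding I_def segset_def pz by auto
    obtain \<tau>' where \<tau>': "p + s' *\<^sub>R v = B + \<tau>' *\<^sub>R ivec z" "\<alpha> \<le> \<tau>'" "ereal \<tau>' \<le> \<beta>"
      using s' pi unfolding I_def segset_def pz by auto
    have diff: "(s' - s) *\<^sub>R v = (\<tau>' - \<tau>) *\<^sub>R ivec z"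
    proof -
      have "(s' - s) *\<^sub>R v = (p + s' *\<^sub>R v) - (p + s *\<^sub>R v)" by (simp add: algebra_simps)
      also have "\<dots> = (\<tau>' - \<tau>) *\<^sub>R ivec z" unfolding \<tau>(1) \<tau>'(1) by (simp add: algebra_simps)
      finally show ?thesis .
    qed
    show "\<bar>u s - u s'\<bar> \<le> 1 * \<bar>s - s'\<bar>"
    proof (cases "s = s'")
      case True then show ?thesis by simp
    next
      case ss: False
      have "\<tau> \<noteq> \<tau>'"
      proof
        assume "\<tau> = \<tau>'"
        then have "(s' - s) *\<^sub>R v = 0" using diff by simp
        then show False using ss v0 by simp
      qed
      from P(4) pi(1) consider (vtx) "z = (\<lambda>_. 0)" | (edge) e where "e \<in> edges G" "0 \<le> \<alpha>"
        "\<forall>t. \<alpha> \<le> t \<and> ereal t \<le> \<beta> \<longrightarrow> ereal t \<le> len G e \<and> theta (pt G e t) = B + t *\<^sub>R ivec z"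
        unfolding pz by auto
      then show ?thesis
      proof cases
        case vtx
        then have "(s' - s) *\<^sub>R v = 0" using diff unfolding ivec_def by (simp add: vec_eq_iff)
        then show ?thesis using ss v0 by simp
      next
        case edge
        define lo where "lo = min \<tau> \<tau>'"
        define hi where "hi = max \<tau> \<tau>'"
        have lohi: "lo < hi" "\<alpha> \<le> lo" "ereal hi \<le> \<beta>" unfolding lo_def hi_def using \<open>\<tau> \<noteq> \<tau>'\<close> \<tau> \<tau>' by (auto simp: max_def)
        have hiL: "ereal hi \<le> len G e" using edge(3) lohi by auto
        have aff: "\<forall>t\<in>{lo..hi}. theta (pt G e t) = B + t *\<^sub>R ivec z"
        proof
          fix t assume t: "t \<in> {lo..hi}"
          then have "ereal t \<le> \<beta>" using lohi(3) by (metis atLeastAtMost_iff ereal_less_eq(3) order.trans)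
          then show "theta (pt G e t) = B + t *\<^sub>R ivec z" using edge(3) t lohi(2) by auto
        qed
        obtain w where w: "(\<Sum>i\<in>UNIV. w i * z i) = 1"
          using edge_prim[OF surj edge(1) _ lohi(1) hiL aff] lohi(2) edge(2) by auto
        define Kk where "Kk = (\<Sum>i\<in>UNIV. w i * y i)"
        have coord: "(s' - s) * real_of_int (y i) = (\<tau>' - \<tau>) * real_of_int (z i)" for i
          using arg_cong[OF diff, of "\<lambda>x. x $ i"] y(1) by simp
        have tk: "\<tau>' - \<tau> = real_of_int Kk * (s' - s)"
        proof -
          have "real_of_int Kk * (s' - s) = (\<Sum>i\<in>UNIV. real_of_int (w i) * ((s' - s) * real_of_int (y i)))"
            unfolding Kk_def by (simp add: sum_distrib_left sum_distrib_right algebra_simps)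
          also have "\<dots> = (\<Sum>i\<in>UNIV. real_of_int (w i) * ((\<tau>' - \<tau>) * real_of_int (z i)))" using coord by simp
          also have "\<dots> = (\<tau>' - \<tau>) * real_of_int (\<Sum>i\<in>UNIV. w i * z i)"
            by (simp add: sum_distrib_left algebra_simps)
          finally show ?thesis using w by simp
        qed
        have "y i = Kk * z i" for i
        proof -
          have "(s' - s) * real_of_int (y i) = (s' - s) * (real_of_int Kk * real_of_int (z i))"
            using coord[of i] tk by (simp add: algebra_simps)
          then have "real_of_int (y i) = real_of_int (Kk * z i)" using ss by simp
          then show ?thesis by linarith
        qed
        then have "Kk dvd Gcd (range y)" by (intro Gcd_greatest) auto
        then have "\<bar>Kk\<bar> = 1" using y(2) by simp
        then have abs_eq: "\<bar>\<tau> - \<tau>'\<bar> = \<bar>s - s'\<bar>" using tk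
          by (metis abs_minus_commute abs_mult mult_1 of_int_1 of_int_abs)
        have inf: "ereal \<tau> \<le> len G e" "ereal \<tau>' \<le> len G e" "0 \<le> \<tau>" "0 \<le> \<tau>'" using edge(2,3) \<tau> \<tau>' by auto
        have "u s = phi (pt G e \<tau>)" unfolding u_def \<tau>(1) using edge(3) \<tau> Phi pt_in_fin[OF edge(1) inf(3,1)] by metis
        moreover have "u s' = phi (pt G e \<tau>')" unfolding u_def \<tau>'(1) using edge(3) \<tau>' Phi pt_in_fin[OF edge(1) inf(4,2)] by metis
        moreover have "\<bar>phi (pt G e \<tau>) - phi (pt G e \<tau>')\<bar> \<le> 1 * \<bar>\<tau> - \<tau>'\<bar>"
          using phi edge(1) inf unfolding edge_lip_def by blast
        ultimately show ?thesis using abs_eq by simp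
      qed
    qed
  qed
  have "\<bar>u lam - u 0\<bar> \<le> 1 * (lam - 0)"
    by (rule lip_cover[OF _ _ lipI]) (use P(1) closedI coverI lam0 in auto)
  moreover have "u lam = Phi q" "u 0 = Phi p" unfolding u_def using v(2) by (auto simp: algebra_simps)
  ultimately show ?thesis by simp
qed

lemma branch_aff:
  assumes surj: "hom_surj G psi" and x: "x \<in> pts_fin G" and g: "good G x \<rho>" and b: "b \<in> br G x"
  shows "\<exists>\<eta>z. fst \<eta>z > 0 \<and> (\<exists>w. (\<Sum>i\<in>UNIV. w i * snd \<eta>z i) = 1) \<and>
     (\<forall>r\<in>{0..fst \<eta>z}. theta (bpt G b r) = theta x + r *\<^sub>R ivec (snd \<eta>z))"
proof -
  obtain e \<sigma> tb where bb: "b = (e, \<sigma>, tb)" by (cases b) auto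
  have bp: "e \<in> edges G" "\<sigma> = 1 \<or> \<sigma> = -1" "pt G e tb = x"
    "\<forall>r. 0 \<le> r \<longrightarrow> r \<le> \<rho> \<longrightarrow> 0 \<le> tb + \<sigma> * r \<and> ereal (tb + \<sigma> * r) \<le> len G e"
    using br_props[OF x g b] bb by auto
  have r0: "\<rho> > 0" using good_pos[OF g] .
  have tb: "0 \<le> tb" "ereal tb \<le> len G e" using bp(4)[rule_format, of 0] r0 by auto
  from bp(2) show ?thesis
  proof
    assume s1: "\<sigma> = 1"
    have "ereal (tb + \<rho>) \<le> len G e" using bp(4)[rule_format, of \<rho>] s1 r0 by auto
    moreover have "ereal tb < ereal (tb + \<rho>)" using r0 by simp
    ultimately have "ereal tb < len G e" by (rule order.strict_trans2[rotated])
    then obtain \<eta> z B where \<eta>: "\<eta> > 0" "ereal (tb + \<eta>) \<le> len G e" "\<forall>t\<in>{tb..tb+\<eta>}. theta (pt G e t) = B + t *\<^sub>R ivec z"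
      using theta_right[OF bp(1) tb(1)] by blast
    obtain w where w: "(\<Sum>i\<in>UNIV. w i * z i) = 1" using edge_prim[OF surj bp(1) tb(1) _ \<eta>(2) \<eta>(3)] \<eta>(1) by auto
    have "\<forall>r\<in>{0..\<eta>}. theta (bpt G b r) = theta x + r *\<^sub>R ivec z"
    proof
      fix r assume r: "r \<in> {0..\<eta>}"
      have "theta (bpt G b r) = B + (tb + r) *\<^sub>R ivec z" unfolding bpt_def bb using s1 \<eta>(3) r by auto
      moreover have "theta x = B + tb *\<^sub>R ivec z" using \<eta>(3) bp(3) \<eta>(1) by auto
      ultimately show "theta (bpt G b r) = theta x + r *\<^sub>R ivec z" by (simp add: algebra_simps)
    qed
    then show ?thesis using \<eta>(1) w by (intro exI[of _ "(\<eta>, z)"]) auto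
  next
    assume s1: "\<sigma> = -1"
    have "0 \<le> tb - \<rho>" using bp(4)[rule_format, of \<rho>] s1 r0 by auto
    then have tbp: "0 < tb" using r0 by simp
    obtain \<eta> z B where \<eta>: "\<eta> > 0" "\<eta> \<le> tb" "\<forall>t\<in>{tb-\<eta>..tb}. theta (pt G e t) = B + t *\<^sub>R ivec z"
      using theta_left[OF bp(1) tbp tb(2)] by blast
    obtain w where w: "(\<Sum>i\<in>UNIV. w i * z i) = 1" using edge_prim[OF surj bp(1) _ _ tb(2) \<eta>(3)] \<eta>(1,2) by auto
    have "\<forall>r\<in>{0..\<eta>}. theta (bpt G b r) = theta x + r *\<^sub>R ivec (\<lambda>i. - z i)"
    proof
      fix r assume r: "r \<in> {0..\<eta>}"
      have "theta (bpt G b r) = B + (tb - r) *\<^sub>R ivec z" unfolding bpt_def bb using s1 \<eta>(3) r by auto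
      moreover have "theta x = B + tb *\<^sub>R ivec z" using \<eta>(3) bp(3) \<eta>(1) by auto
      ultimately show "theta (bpt G b r) = theta x + r *\<^sub>R ivec (\<lambda>i. - z i)" by (simp add: algebra_simps ivec_neg)
    qed
    moreover have "\<exists>w. (\<Sum>i\<in>UNIV. w i * (- z i)) = 1"
      by (rule exI[of _ "\<lambda>i. - w i"]) (use w in simp)
    ultimately show ?thesis using \<eta>(1) by (intro exI[of _ "(\<eta>, \<lambda>i. - z i)"]) auto
  qed
qed

lemma branch_seg:
  assumes x: "x \<in> pts_fin G" and g: "good G x \<rho>" and b: "b \<in> br G x"
    and aff: "\<forall>r\<in>{0..\<rho>}. theta (bpt G b r) = theta x + r *\<^sub>R ivec z" and w: "(\<Sum>i\<in>UNIV. w i * z i) = 1"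
    and r: "0 \<le> r" "r \<le> \<rho>" and r': "0 \<le> r'" "r' \<le> \<rho>"
  shows "closed_segment (theta (bpt G b r)) (theta (bpt G b r')) \<subseteq> theta ` pts_fin G \<and>
         lat_dir (theta (bpt G b r') - theta (bpt G b r)) \<bar>r' - r\<bar>"
proof
  show "closed_segment (theta (bpt G b r)) (theta (bpt G b r')) \<subseteq> theta ` pts_fin G"
  proof
    fix m assume "m \<in> closed_segment (theta (bpt G b r)) (theta (bpt G b r'))"
    then obtain mu where mu: "0 \<le> mu" "mu \<le> 1" "m = (1 - mu) *\<^sub>R theta (bpt G b r) + mu *\<^sub>R theta (bpt G b r')"
      unfolding closed_segment_def by blast
    define r'' where "r'' = (1 - mu) * r + mu * r'"
    have r''a: "0 \<le> r''" unfolding r''_def using mu r r' by simp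
    have r''b: "r'' \<le> \<rho>"
    proof -
      have "(1 - mu) * r \<le> (1 - mu) * \<rho>" "mu * r' \<le> mu * \<rho>" using mu r r' by (auto intro: mult_left_mono)
      then show ?thesis unfolding r''_def by (simp add: algebra_simps)
    qed
    have "m = theta x + r'' *\<^sub>R ivec z" unfolding mu(3) r''_def using aff r r' by (simp add: algebra_simps)
    also have "\<dots> = theta (bpt G b r'')" using aff r''a r''b by simp
    finally show "m \<in> theta ` pts_fin G" using bpt_fin[OF x g b r''a r''b] by blast
  qed
  have pz: "primitive (ivec z)" unfolding primitive_ivec using prim_crit[OF w] by blast
  have pmz: "primitive (ivec (\<lambda>i. - z i))" unfolding primitive_ivec
    using prim_crit[of "\<lambda>i. - w i" "\<lambda>i. - z i"] w by auto
  have d: "theta (bpt G b r') - theta (bpt G b r) = (r' - r) *\<^sub>R ivec z" using aff r r' by (simp add: algebra_simps)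
  show "lat_dir (theta (bpt G b r') - theta (bpt G b r)) \<bar>r' - r\<bar>"
  proof (cases "r \<le> r'")
    case True then show ?thesis unfolding lat_dir_def d using pz by auto
  next
    case False
    then have "(r' - r) *\<^sub>R ivec z = \<bar>r' - r\<bar> *\<^sub>R ivec (\<lambda>i. - z i)" by (simp add: ivec_neg algebra_simps scaleR_diff_left)
    then show ?thesis unfolding lat_dir_def d using pmz by auto
  qed
qed

end


definition ip :: "('n::finite \<Rightarrow> int) \<Rightarrow> real^'n \<Rightarrow> real" where
  "ip w x = (\<Sum>i\<in>UNIV. real_of_int (w i) * x $ i)"

lemma ip_add: "ip w (a + b) = ip w a + ip w b"
  unfolding ip_def by (simp add: algebra_simps sum.distrib)
lemma ip_scale: "ip w (t *\<^sub>R a) = t * ip w a"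
  unfolding ip_def by (simp add: algebra_simps sum_distrib_left)
lemma ip_diff: "ip w (a - b) = ip w a - ip w b"
  unfolding ip_def by (simp add: algebra_simps sum_subtractf)
lemma ip_neg: "ip (\<lambda>i. - w i) x = - ip w x"
  unfolding ip_def by (simp add: sum_negf)
lemma ip_line: "ip w (B + t *\<^sub>R D) = ip w B + t * ip w D"
  by (simp add: ip_add ip_scale)
lemma ip_unit: "ip (\<lambda>i. if i = k then 1 else 0) x = x $ k"
proof -
  have "ip (\<lambda>i. if i = k then 1 else 0) x = (\<Sum>i\<in>UNIV. if i = k then x $ i else 0)"
    unfolding ip_def by (rule sum.cong) auto
  then show ?thesis by simp
qed
lemma ip_sub: "ip (\<lambda>i. w1 i - w2 i) x = ip w1 x - ip w2 x"
  unfolding ip_def by (simp add: left_diff_distrib sum_subtractf)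
lemma ip_single: "ip (\<lambda>i. if i = k then a else 0) x = real_of_int a * x $ k"
proof -
  have "ip (\<lambda>i. if i = k then a else 0) x = (\<Sum>i\<in>UNIV. if i = k then real_of_int a * x $ i else 0)"
    unfolding ip_def by (rule sum.cong) auto
  then show ?thesis by simp
qed
lemma ip_pair: "ip (\<lambda>i. (if i = k then a else 0) - (if i = j then b else 0)) x = real_of_int a * x $ k - real_of_int b * x $ j"
proof -
  have "ip (\<lambda>i. (if i = k then a else 0) - (if i = j then b else 0)) x = ip (\<lambda>i. if i = k then a else 0) x - ip (\<lambda>i. if i = j then b else 0) x"
    by (rule ip_sub)
  also have "\<dots> = real_of_int a * x $ k - real_of_int b * x $ j" by (metis ip_single)
  finally show ?thesis .
qed

lemma sep_seg:
  fixes B :: "real^'n::finite"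
  assumes ny: "y \<notin> segset (B, z, \<alpha>, \<beta>)"
  shows "\<exists>(w::'n\<Rightarrow>int) c. (\<forall>q\<in>segset (B, z, \<alpha>, \<beta>). ip w q + c < 0) \<and> ip w y + c > 0"
proof (cases "ereal \<alpha> \<le> \<beta>")
  case False
  have "segset (B, z, \<alpha>, \<beta>) = {}"
  proof -
    have "\<not> (\<alpha> \<le> t \<and> ereal t \<le> \<beta>)" for t using False by (metis ereal_less_eq(3) order.trans)
    then show ?thesis unfolding segset_def by auto
  qed
  then show ?thesis by (intro exI[of _ "\<lambda>_. 0"] exI[of _ 1]) (auto simp: ip_def)
next
  case ab: True
  define D where "D = ivec z"
  define u where "u = y - B"
  have yBu: "y = B + u" unfolding u_def by simp
  have seg_eq: "segset (B, z, \<alpha>, \<beta>) = {B + t *\<^sub>R D | t. \<alpha> \<le> t \<and> ereal t \<le> \<beta>}" unfolding segset_def D_def by simp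
  show ?thesis
  proof (cases "\<exists>w. ip w D = 0 \<and> ip w u \<noteq> 0")
    case True
    then obtain w where w: "ip w D = 0" "ip w u \<noteq> 0" by blast
    define w' where "w' = (if ip w u > 0 then w else (\<lambda>i. - w i))"
    have w': "ip w' D = 0" "ip w' u > 0" unfolding w'_def using w by (auto simp: ip_neg)
    define c where "c = - ip w' B - ip w' u / 2"
    show ?thesis
    proof (intro exI[of _ w'] exI[of _ c] conjI ballI)
      fix q assume "q \<in> segset (B, z, \<alpha>, \<beta>)"
      then obtain t where "q = B + t *\<^sub>R D" unfolding seg_eq by blast
      then show "ip w' q + c < 0" unfolding c_def using w' by (simp add: ip_line)
    next
      show "ip w' y + c > 0" unfolding c_def yBu ip_add using w' by simp
    qed
  next
    case False
    then have orth: "\<And>w. ip w D = 0 \<Longrightarrow> ip w u = 0" by blast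
    show ?thesis
    proof (cases "\<forall>i. z i = 0")
      case True
      have "u $ k = 0" for k
      proof -
        have "ip (\<lambda>i. if i = k then 1 else 0) D = 0" unfolding ip_unit D_def using True by simp
        then show ?thesis using orth ip_unit by metis
      qed
      then have "u = 0" by (simp add: vec_eq_iff)
      moreover have "B + \<alpha> *\<^sub>R D \<in> segset (B, z, \<alpha>, \<beta>)" unfolding seg_eq using ab by blast
      moreover have "D = 0" unfolding D_def ivec_def using True by (simp add: vec_eq_iff)
      ultimately show ?thesis using ny yBu by simp
    next
      case False
      then obtain i0 where i0: "z i0 \<noteq> 0" by blast
      define s where "s = u $ i0 / real_of_int (z i0)"
      have uk: "u $ k = s * real_of_int (z k)" for k
      proof -
        have "ip (\<lambda>i. (if i = k then z i0 else 0) - (if i = i0 then z k else 0)) D = 0"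
          unfolding ip_pair D_def by simp
        then have "ip (\<lambda>i. (if i = k then z i0 else 0) - (if i = i0 then z k else 0)) u = 0" by (rule orth)
        then have "real_of_int (z i0) * u $ k = real_of_int (z k) * u $ i0" unfolding ip_pair by simp
        then show ?thesis unfolding s_def using i0 by (simp add: field_simps)
      qed
      have yl: "y = B + s *\<^sub>R D" unfolding yBu D_def using uk by (simp add: vec_eq_iff)
      have notin: "\<not> (\<alpha> \<le> s \<and> ereal s \<le> \<beta>)" using ny yl unfolding seg_eq by blast
      define n2 where "n2 = ip z D"
      have n2: "n2 > 0"
      proof -
        have "n2 = (\<Sum>i\<in>UNIV. real_of_int (z i) * real_of_int (z i))" unfolding n2_def ip_def D_def by simp
        moreover have "(\<Sum>i\<in>UNIV. real_of_int (z i) * real_of_int (z i)) > 0"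
        proof -
          have "(\<Sum>i\<in>UNIV. real_of_int (z i) * real_of_int (z i)) \<ge> real_of_int (z i0) * real_of_int (z i0)"
            by (rule member_le_sum) auto
          moreover have "real_of_int (z i0) * real_of_int (z i0) > 0" using i0
            by (cases "z i0 > 0") (auto simp: mult_pos_pos mult_neg_neg)
          ultimately show ?thesis by linarith
        qed
        ultimately show ?thesis by simp
      qed
      show ?thesis
      proof (cases "s < \<alpha>")
        case True
        define c where "c = ip z B + ((\<alpha> + s) / 2) * n2"
        show ?thesis
        proof (intro exI[of _ "\<lambda>i. - z i"] exI[of _ c] conjI ballI)
          fix q assume "q \<in> segset (B, z, \<alpha>, \<beta>)"
          then obtain t where t: "q = B + t *\<^sub>R D" "\<alpha> \<le> t" unfolding seg_eq by blast
          have "ip (\<lambda>i. - z i) q + c = ((\<alpha> + s) / 2 - t) * n2" unfolding t(1) c_def n2_def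
            by (simp add: ip_line ip_neg algebra_simps)
          moreover have "(\<alpha> + s) / 2 - t < 0" using t(2) True by simp
          ultimately show "ip (\<lambda>i. - z i) q + c < 0" using n2 by (simp add: mult_neg_pos)
        next
          have "ip (\<lambda>i. - z i) y + c = ((\<alpha> - s) / 2) * n2" unfolding yl c_def n2_def
            by (simp add: ip_line ip_neg algebra_simps)
          moreover have "((\<alpha> - s) / 2) * n2 > 0" using n2 True by simp
          ultimately show "ip (\<lambda>i. - z i) y + c > 0" by linarith
        qed
      next
        case False
        then have sb: "\<not> ereal s \<le> \<beta>" using notin by simp
        then obtain bb where bb: "\<beta> = ereal bb" using ab by (cases \<beta>) auto
        have sbb: "bb < s" using sb bb by simp
        define c where "c = - ip z B - ((bb + s) / 2) * n2"
        show ?thesis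
        proof (intro exI[of _ z] exI[of _ c] conjI ballI)
          fix q assume "q \<in> segset (B, z, \<alpha>, \<beta>)"
          then obtain t where t: "q = B + t *\<^sub>R D" "ereal t \<le> \<beta>" unfolding seg_eq by blast
          have tb: "t \<le> bb" using t(2) bb by simp
          have "ip z q + c = (t - (bb + s) / 2) * n2" unfolding t(1) c_def n2_def
            by (simp add: ip_line algebra_simps)
          moreover have "t - (bb + s) / 2 < 0" using tb sbb by simp
          ultimately show "ip z q + c < 0" using n2 by (simp add: mult_neg_pos)
        next
          have "ip z y + c = ((s - bb) / 2) * n2" unfolding yl c_def n2_def
            by (simp add: ip_line algebra_simps)
          moreover have "((s - bb) / 2) * n2 > 0" using n2 sbb by simp
          ultimately show "ip z y + c > 0" by linarith
        qed
      qed
    qed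
  qed
qed


context setting
begin

lemma pts_fin_ne: "pts_fin G \<noteq> {}"
proof -
  obtain v where v: "v \<in> verts G" using verts_ne by blast
  show ?thesis
  proof (cases "v \<in> inf_verts G")
    case False then show ?thesis using v unfolding pts_fin_def by auto
  next
    case True
    then obtain e where e: "e \<in> edges G" "len G e = \<infinity>" unfolding inf_verts_def by auto
    then have "Ein e 1 \<in> pts_fin G" unfolding pts_fin_def by auto
    then show ?thesis by blast
  qed
qed

lemma sep:
  assumes ny: "y \<notin> theta ` pts_fin G"
  shows "\<exists>f g. (f, g) \<in> kerpsi G psi \<and> f y \<noteq> g y"
proof -
  obtain P where P: "finite P" "theta ` pts_fin G \<subseteq> \<Union> (segset ` P)" "\<forall>\<pi>\<in>P. segset \<pi> \<subseteq> theta ` pts_fin G"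
    using pieces by blast
  have "\<forall>\<pi>\<in>P. \<exists>wc. (\<forall>q\<in>segset \<pi>. ip (fst wc) q + snd wc < 0) \<and> ip (fst wc) y + snd wc > 0"
  proof
    fix \<pi> assume pi: "\<pi> \<in> P"
    obtain B z \<alpha> \<beta> where pz: "\<pi> = (B, z, \<alpha>, \<beta>)" by (cases \<pi>) auto
    have "y \<notin> segset (B, z, \<alpha>, \<beta>)" using ny P(3) pi pz by blast
    from sep_seg[OF this] obtain w c where "(\<forall>q\<in>segset (B, z, \<alpha>, \<beta>). ip w q + c < 0) \<and> ip w y + c > 0" by blast
    then show "\<exists>wc. (\<forall>q\<in>segset \<pi>. ip (fst wc) q + snd wc < 0) \<and> ip (fst wc) y + snd wc > 0"
      using pz by (intro exI[of _ "(w, c)"]) simp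
  qed
  from bchoice[OF this] obtain H where H: "\<forall>\<pi>\<in>P. (\<forall>q\<in>segset \<pi>. ip (fst (H \<pi>)) q + snd (H \<pi>) < 0) \<and> ip (fst (H \<pi>)) y + snd (H \<pi>) > 0"
    by blast
  define W where "W \<pi> = fst (H \<pi>)" for \<pi>
  define Cc where "Cc \<pi> = snd (H \<pi>)" for \<pi>
  have Pne: "P \<noteq> {}" using pts_fin_ne P(2) by blast
  define N where "N i = (\<Sum>\<pi>\<in>P. \<bar>W \<pi> i\<bar>)" for i
  have WN: "W \<pi> i \<le> N i" if "\<pi> \<in> P" for \<pi> i
  proof -
    have "\<bar>W \<pi> i\<bar> \<le> N i" unfolding N_def using P(1) that by (intro member_le_sum) auto
    then show ?thesis by simp
  qed
  have N0: "0 \<le> N i" for i unfolding N_def by (intro sum_nonneg) auto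
  define Sq where "Sq = (\<lambda>\<pi>. (\<lambda>i. nat (N i - W \<pi> i), - Cc \<pi>)) ` P"
  define Sp where "Sp = insert (\<lambda>i. nat (N i), 0) Sq"
  have fSq: "finite Sq" "Sq \<noteq> {}" unfolding Sq_def using P(1) Pne by auto
  have fSp: "finite Sp" unfolding Sp_def using fSq by simp
  define NX where "NX x = ip N x" for x :: "real^'n"
  have monoq: "- Cc \<pi> + (\<Sum>i\<in>UNIV. real (nat (N i - W \<pi> i)) * x $ i) = NX x - (ip (W \<pi>) x + Cc \<pi>)"
    if "\<pi> \<in> P" for \<pi> x
  proof -
    have "(\<Sum>i\<in>UNIV. real (nat (N i - W \<pi> i)) * x $ i) = ip (\<lambda>i. N i - W \<pi> i) x"
      unfolding ip_def using WN[OF that] by (intro sum.cong) auto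
    then show ?thesis unfolding NX_def ip_sub by simp
  qed
  have nN: "real (nat (N i)) = real_of_int (N i)" for i using N0[of i] by simp
  have monop: "0 + (\<Sum>i\<in>UNIV. real (nat (N i)) * x $ i) = NX x" for x
    unfolding NX_def ip_def nN by simp
  define Q where "Q = tp Sq"
  define Pp where "Pp = tp Sp"
  have Qfin: "\<exists>r. Q x = ereal r" for x unfolding Q_def using tp_finite_val fSq by blast
  have Qne: "Q \<noteq> (\<lambda>_. -\<infinity>)" using Qfin by (metis MInfty_neq_ereal(1))
  have Pp_eq: "Pp x = max (ereal (NX x)) (Q x)" for x
    unfolding Pp_def Sp_def Q_def tp_insert using monop[of x] by simp
  define f where "f = (\<lambda>x. Pp x - Q x)"
  define g :: "real^'n \<Rightarrow> ereal" where "g = tp {(\<lambda>_. 0, 0)}"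
  have fT: "f \<in> TRat" unfolding f_def TRat_def Pp_def Q_def
    using tp_in_TPoly[OF fSp] tp_in_TPoly[OF fSq(1)] Qne unfolding Q_def by blast
  have gT: "g \<in> TRat" unfolding g_def by (rule tp_TRat) simp
  have g0: "g x = ereal 0" for x unfolding g_def zero_tp by simp
  have fS: "f (theta w) = 0" if w: "w \<in> pts_fin G" for w
  proof -
    obtain \<pi> where pi: "\<pi> \<in> P" "theta w \<in> segset \<pi>" using P(2) w by blast
    have neg: "ip (W \<pi>) (theta w) + Cc \<pi> < 0" using H pi unfolding W_def Cc_def by blast
    have "(\<lambda>i. nat (N i - W \<pi> i), - Cc \<pi>) \<in> Sq" unfolding Sq_def using pi by blast
    then have "ereal (- Cc \<pi> + (\<Sum>i\<in>UNIV. real (nat (N i - W \<pi> i)) * theta w $ i)) \<le> Q (theta w)"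
      unfolding Q_def by (rule tp_ge[OF fSq(1)])
    then have "ereal (NX (theta w) - (ip (W \<pi>) (theta w) + Cc \<pi>)) \<le> Q (theta w)" by (simp only: monoq[OF pi(1)])
    moreover have "ereal (NX (theta w)) \<le> ereal (NX (theta w) - (ip (W \<pi>) (theta w) + Cc \<pi>))" using neg by simp
    ultimately have "ereal (NX (theta w)) \<le> Q (theta w)" by (rule order.trans[rotated])
    then have "Pp (theta w) = Q (theta w)" using Pp_eq by (simp add: max_def)
    then show ?thesis unfolding f_def using Qfin[of "theta w"] by auto
  qed
  have fy: "f y \<noteq> 0"
  proof -
    obtain a c where ac: "(a, c) \<in> Sq" "Q y = ereal (c + (\<Sum>i\<in>UNIV. real (a i) * y $ i))"
      using tp_attained[OF fSq] unfolding Q_def by blast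
    then obtain \<pi> where pi: "\<pi> \<in> P" "a = (\<lambda>i. nat (N i - W \<pi> i))" "c = - Cc \<pi>" unfolding Sq_def by blast
    have pos: "ip (W \<pi>) y + Cc \<pi> > 0" using H pi unfolding W_def Cc_def by blast
    have "Q y = ereal (NX y - (ip (W \<pi>) y + Cc \<pi>))" using ac(2) monoq[OF pi(1)] pi by simp
    then have Qlt: "Q y < ereal (NX y)" using pos by simp
    then have "\<not> ereal (NX y) \<le> Q y" by simp
    then have "Pp y = ereal (NX y)" using Pp_eq[of y] by (simp add: max_def)
    then show ?thesis unfolding f_def using Qlt \<open>Q y = ereal (NX y - (ip (W \<pi>) y + Cc \<pi>))\<close> pos by simp
  qed
  have "(f, g) \<in> kerpsi G psi"
    unfolding kerpsi_def using fT gT part1[OF fT] part1[OF gT] fS g0 by simp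
  moreover have "f y \<noteq> g y" using fy g0[of y] by (simp add: zero_ereal_def)
  ultimately show ?thesis by blast
qed

lemma local_iso:
  assumes surj: "hom_surj G psi" and x: "x \<in> pts_fin G"
  shows "\<exists>\<epsilon>>0. \<forall>y\<in>pts_fin G. \<forall>z\<in>pts_fin G. gdist G x y < \<epsilon> \<longrightarrow> gdist G x z < \<epsilon> \<longrightarrow>
            latdist (theta ` pts_fin G) (theta y) (theta z) = gdist G y z"
proof -
  define S where "S = theta ` pts_fin G"
  obtain \<rho>1 where g1: "good G x \<rho>1" using good_ex[OF x] by blast
  have "\<forall>b\<in>br G x. \<exists>\<eta>z. fst \<eta>z > 0 \<and> (\<exists>w. (\<Sum>i\<in>UNIV. w i * snd \<eta>z i) = 1) \<and>
     (\<forall>r\<in>{0..fst \<eta>z}. theta (bpt G b r) = theta x + r *\<^sub>R ivec (snd \<eta>z))"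
    using branch_aff[OF surj x g1] by blast
  from bchoice[OF this] obtain H where H: "\<forall>b\<in>br G x. fst (H b) > 0 \<and> (\<exists>w. (\<Sum>i\<in>UNIV. w i * snd (H b) i) = 1) \<and>
     (\<forall>r\<in>{0..fst (H b)}. theta (bpt G b r) = theta x + r *\<^sub>R ivec (snd (H b)))" by blast
  define R where "R = insert \<rho>1 ((\<lambda>b. fst (H b)) ` br G x)"
  have fR: "finite R" unfolding R_def using br_finite by simp
  define \<rho> where "\<rho> = Min R"
  have \<rho>R: "\<rho> \<in> R" unfolding \<rho>_def using fR by (intro Min_in) (auto simp: R_def)
  have \<rho>pos: "\<rho> > 0" using \<rho>R H good_pos[OF g1] unfolding R_def by auto
  have \<rho>le1: "\<rho> \<le> \<rho>1" unfolding \<rho>_def using fR by (intro Min_le) (auto simp: R_def)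
  have \<rho>leb: "\<rho> \<le> fst (H b)" if "b \<in> br G x" for b unfolding \<rho>_def using fR that by (intro Min_le) (auto simp: R_def)
  have g: "good G x \<rho>" using good_mono[OF g1 \<rho>pos \<rho>le1] .
  have affb: "\<forall>r\<in>{0..\<rho>}. theta (bpt G b r) = theta x + r *\<^sub>R ivec (snd (H b))" if b: "b \<in> br G x" for b
    using H b \<rho>leb[OF b] by auto
  have wb: "\<exists>w. (\<Sum>i\<in>UNIV. w i * snd (H b) i) = 1" if "b \<in> br G x" for b using H that by blast
  define \<epsilon> where "\<epsilon> = \<rho> / 2"
  have rep: "w = x \<or> (\<exists>b\<in>br G x. \<exists>r. 0 \<le> r \<and> 2 * r \<le> \<rho> \<and> w = bpt G b r)"
    if w: "w \<in> pts_fin G" "gdist G x w < \<epsilon>" for w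
  proof -
    have "gdist G x w < \<rho>" using w(2) \<rho>pos unfolding \<epsilon>_def by simp
    from G2[OF x g w(1) this] show ?thesis
    proof
      assume "\<exists>b\<in>br G x. \<exists>r. 0 < r \<and> r < \<rho> \<and> w = bpt G b r"
      then obtain b r where br: "b \<in> br G x" "0 < r" "r < \<rho>" "w = bpt G b r" by blast
      have "gdist G x w = r" using G1[OF x g br(1)] br by simp
      then have r2: "2 * r \<le> \<rho>" using w(2) unfolding \<epsilon>_def by simp
      have "\<exists>b'\<in>br G x. \<exists>r'. 0 \<le> r' \<and> 2 * r' \<le> \<rho> \<and> w = bpt G b' r'"
        using br(1,4) r2 br(2) by (intro bexI[of _ b] exI[of _ r]) auto
      then show ?thesis by (rule disjI2)
    qed simp
  qed
  have lat0: "latdist S p p = 0" if "p \<in> S" for p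
  proof -
    have "latdist S p p \<le> 0" using latdist_le[of S p "[]" p] by simp
    moreover have "0 \<le> latdist S p p" by (rule latdist_ge) (auto intro: exI[of _ "[]"] ichain_nonneg)
    ultimately show ?thesis by simp
  qed
  have gd0: "gdist G x x = 0"
  proof -
    have "gdist G x x \<le> 0" using gdist_le[of G x "[]" x] by simp
    moreover have "0 \<le> gdist G x x" by (rule gdist_nonneg) (auto intro: exI[of _ "[]"])
    ultimately show ?thesis by simp
  qed
  show ?thesis
  proof (intro exI[of _ \<epsilon>] conjI ballI impI)
    show "\<epsilon> > 0" unfolding \<epsilon>_def using \<rho>pos by simp
    fix y z assume y: "y \<in> pts_fin G" and z: "z \<in> pts_fin G" and dy: "gdist G x y < \<epsilon>" and dz: "gdist G x z < \<epsilon>"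
    show "latdist (theta ` pts_fin G) (theta y) (theta z) = gdist G y z"
    proof (cases "br G x = {}")
      case True
      then have "y = x" "z = x" using rep[OF y dy] rep[OF z dz] by auto
      then show ?thesis using lat0[of "theta x"] gd0 x unfolding S_def by auto
    next
      case False
      then obtain b0 where b0: "b0 \<in> br G x" by blast
      have rep2: "\<exists>b\<in>br G x. \<exists>r. 0 \<le> r \<and> 2 * r \<le> \<rho> \<and> w = bpt G b r" if "w \<in> pts_fin G" "gdist G x w < \<epsilon>" for w
        using rep[OF that] bpt_0[OF x g b0] b0 \<rho>pos by (metis mult_zero_right order_refl less_imp_le)
      obtain b1 r1 where 1: "b1 \<in> br G x" "0 \<le> r1" "2 * r1 \<le> \<rho>" "y = bpt G b1 r1" using rep2[OF y dy] by blast
      obtain b2 r2 where 2: "b2 \<in> br G x" "0 \<le> r2" "2 * r2 \<le> \<rho>" "z = bpt G b2 r2" using rep2[OF z dz] by blast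
      have r1r: "r1 \<le> \<rho>" and r2r: "r2 \<le> \<rho>" using 1 2 by auto
      define d where "d = (if b1 = b2 then \<bar>r1 - r2\<bar> else r1 + r2)"
      have gyz: "gdist G y z = d" unfolding d_def 1(4) 2(4) using G3[OF x g 1(1) 2(1) 1(2,3) 2(2,3)] .
      obtain cs where cs: "ichain S (theta y) cs (theta z)" "sum_list (map snd cs) = d"
      proof (cases "b1 = b2")
        case True
        obtain w where w: "(\<Sum>i\<in>UNIV. w i * snd (H b1) i) = 1" using wb[OF 1(1)] by blast
        have bs: "closed_segment (theta (bpt G b1 r1)) (theta (bpt G b1 r2)) \<subseteq> S \<and>
          lat_dir (theta (bpt G b1 r2) - theta (bpt G b1 r1)) \<bar>r2 - r1\<bar>"
          using branch_seg[OF x g 1(1) affb[OF 1(1)] w 1(2) r1r 2(2) r2r] unfolding S_def .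
        have "ichain S (theta y) [(theta z, \<bar>r2 - r1\<bar>)] (theta z)" using bs True 1(4) 2(4) by simp
        moreover have "sum_list (map snd [(theta z, \<bar>r2 - r1\<bar>)]) = d" unfolding d_def using True by (simp add: abs_minus_commute)
        ultimately show ?thesis by (rule that)
      next
        case False
        obtain w1 where w1: "(\<Sum>i\<in>UNIV. w1 i * snd (H b1) i) = 1" using wb[OF 1(1)] by blast
        obtain w2 where w2: "(\<Sum>i\<in>UNIV. w2 i * snd (H b2) i) = 1" using wb[OF 2(1)] by blast
        have bs1: "closed_segment (theta (bpt G b1 r1)) (theta (bpt G b1 0)) \<subseteq> S \<and>
          lat_dir (theta (bpt G b1 0) - theta (bpt G b1 r1)) \<bar>0 - r1\<bar>"
          using branch_seg[OF x g 1(1) affb[OF 1(1)] w1 1(2) r1r _ _, of 0] \<rho>pos unfolding S_def by simp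
        have bs2: "closed_segment (theta (bpt G b2 0)) (theta (bpt G b2 r2)) \<subseteq> S \<and>
          lat_dir (theta (bpt G b2 r2) - theta (bpt G b2 0)) \<bar>r2 - 0\<bar>"
          using branch_seg[OF x g 2(1) affb[OF 2(1)] w2 _ _ 2(2) r2r, of 0] \<rho>pos unfolding S_def by simp
        have x1: "bpt G b1 0 = x" and x2: "bpt G b2 0 = x" using bpt_0[OF x g] 1(1) 2(1) by auto
        have "ichain S (theta y) [(theta x, r1), (theta z, r2)] (theta z)" using bs1 bs2 x1 x2 1 2 by simp
        moreover have "sum_list (map snd [(theta x, r1), (theta z, r2)]) = d" unfolding d_def using False by simp
        ultimately show ?thesis by (rule that)
      qed
      have up: "latdist S (theta y) (theta z) \<le> d" using latdist_le[OF cs(1)] cs(2) by simp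
      obtain f where f: "f \<in> TRat" "\<forall>w\<in>pts_fin G. f (theta w) = ereal (Pfun G x \<rho> b1 w)"
        using surj_fun[OF surj Pfun_rat[OF x g]] by blast
      define Phi where "Phi q = real_of_ereal (f q)" for q
      have PhiP: "\<forall>w\<in>pts_fin G. Phi (theta w) = Pfun G x \<rho> b1 w" unfolding Phi_def using f(2) by simp
      have segb: "\<And>p r lam. closed_segment p r \<subseteq> S \<Longrightarrow> lat_dir (r - p) lam \<Longrightarrow> \<bar>Phi r - Phi p\<bar> \<le> lam"
        using seg_lip[OF surj Pfun_lip[OF x g] PhiP] unfolding S_def by blast
      have vy: "Phi (theta y) = r1" using PhiP y P_bpt[OF x g 1(1) 1(1) 1(2,3)] 1(4) by simp
      have vz: "Phi (theta z) = (if b2 = b1 then r2 else - r2)" using PhiP z P_bpt[OF x g 1(1) 2(1) 2(2,3)] 2(4) by simp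
      have "d \<le> latdist S (theta y) (theta z)"
      proof (rule latdist_ge)
        show "\<exists>cs. ichain S (theta y) cs (theta z)" using cs(1) by blast
        fix cs' assume "ichain S (theta y) cs' (theta z)"
        note ic = this
        have "\<bar>Phi (theta z) - Phi (theta y)\<bar> \<le> sum_list (map snd cs')"
          by (rule ichain_lip[of S Phi], rule segb, assumption, assumption, rule ic)
        then show "d \<le> sum_list (map snd cs')" using vy vz 1(2) 2(2) unfolding d_def by (auto split: if_splits)
      qed
      then show ?thesis using up gyz unfolding S_def by simp
    qed
  qed
qed

end

theorem proposition3p12:
  fixes G :: "('v, 'e) tcurve"
    and fs :: "'n::finite \<Rightarrow> ('v, 'e) tpt \<Rightarrow> real"
    and psi :: "(real^'n \<Rightarrow> ereal) \<Rightarrow> ('v, 'e) tpt \<Rightarrow> ereal"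
    and theta :: "('v, 'e) tpt \<Rightarrow> real^'n"
    and V :: "(real^'n) set"
  assumes curve: "tropical_curve G"
    and rat: "\<forall>i. rat_real_fun G (fs i)"
    and hom: "induced_hom G fs psi"
    and theta_def: "theta = (\<lambda>x. \<chi> i. fs i x)"
    and V_def: "V = Vcong (kerpsi G psi)"
  shows "(\<forall>f \<in> TRat. \<forall>x \<in> pts_fin G. psi f x = f (theta x))
       \<and> theta ` pts_fin G \<subseteq> V
       \<and> (\<forall>x \<in> pts_fin G. \<forall>\<epsilon>>0. \<exists>\<delta>>0. \<forall>y \<in> pts_fin G. gdist G x y < \<delta> \<longrightarrow> dist (theta y) (theta x) < \<epsilon>)
       \<and> kerpsi G psi = Econg V
       \<and> (hom_surj G psi \<longrightarrow>
            V \<subseteq> theta ` pts_fin G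
          \<and> inj_on theta (pts_fin G)
          \<and> (\<forall>x \<in> pts_fin G. \<exists>\<epsilon>>0. \<forall>y \<in> pts_fin G. \<forall>z \<in> pts_fin G.
                gdist G x y < \<epsilon> \<longrightarrow> gdist G x z < \<epsilon> \<longrightarrow>
                latdist (theta ` pts_fin G) (theta y) (theta z) = gdist G y z))"
proof -
  interpret setting G fs psi theta using curve rat hom theta_def by unfold_locales
  have p1: "\<forall>f \<in> TRat. \<forall>x \<in> pts_fin G. psi f x = f (theta x)" using part1 by blast
  have p2: "theta ` pts_fin G \<subseteq> V"
  proof
    fix y assume "y \<in> theta ` pts_fin G"
    then obtain w where w: "w \<in> pts_fin G" "y = theta w" by blast
    show "y \<in> V" unfolding V_def Vcong_def kerpsi_def
    proof (clarify)
      fix f g assume "f \<in> TRat" "g \<in> TRat" "\<forall>x\<in>pts_fin G. psi f x = psi g x"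
      then show "f y = g y" using w part1 by metis
    qed
  qed
  have p3: "\<forall>x \<in> pts_fin G. \<forall>\<epsilon>>0. \<exists>\<delta>>0. \<forall>y \<in> pts_fin G. gdist G x y < \<delta> \<longrightarrow> dist (theta y) (theta x) < \<epsilon>"
    using part3 by blast
  have p4: "kerpsi G psi = Econg V"
  proof
    show "kerpsi G psi \<subseteq> Econg V" unfolding Econg_def V_def Vcong_def by (auto simp: kerpsi_def)
    show "Econg V \<subseteq> kerpsi G psi"
    proof
      fix fg assume "fg \<in> Econg V"
      then obtain f g where fg: "fg = (f, g)" "f \<in> TRat" "g \<in> TRat" "\<forall>x\<in>V. f x = g x" unfolding Econg_def by blast
      have "\<forall>w\<in>pts_fin G. psi f w = psi g w" using fg p2 part1 by auto
      then show "fg \<in> kerpsi G psi" unfolding kerpsi_def using fg by simp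
    qed
  qed
  have p5: "hom_surj G psi \<longrightarrow> V \<subseteq> theta ` pts_fin G \<and> inj_on theta (pts_fin G)
          \<and> (\<forall>x \<in> pts_fin G. \<exists>\<epsilon>>0. \<forall>y \<in> pts_fin G. \<forall>z \<in> pts_fin G.
                gdist G x y < \<epsilon> \<longrightarrow> gdist G x z < \<epsilon> \<longrightarrow>
                latdist (theta ` pts_fin G) (theta y) (theta z) = gdist G y z)"
  proof
    assume surj: "hom_surj G psi"
    have "V \<subseteq> theta ` pts_fin G"
    proof
      fix y assume yV: "y \<in> V"
      show "y \<in> theta ` pts_fin G"
      proof (rule ccontr)
        assume "y \<notin> theta ` pts_fin G"
        then obtain f g where "(f, g) \<in> kerpsi G psi" "f y \<noteq> g y" using sep by blast
        then show False using yV unfolding V_def Vcong_def by auto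
      qed
    qed
    then show "V \<subseteq> theta ` pts_fin G \<and> inj_on theta (pts_fin G)
          \<and> (\<forall>x \<in> pts_fin G. \<exists>\<epsilon>>0. \<forall>y \<in> pts_fin G. \<forall>z \<in> pts_fin G.
                gdist G x y < \<epsilon> \<longrightarrow> gdist G x z < \<epsilon> \<longrightarrow>
                latdist (theta ` pts_fin G) (theta y) (theta z) = gdist G y z)"
      using injective[OF surj] local_iso[OF surj] by blast
  qed
  show ?thesis using p1 p2 p3 p4 p5 by blast
qed


end
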